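(* Let $\mathcal{C}$ be a Grothendieck site with enough points, let $X,Y$ be presheaves of groupoids on $\mathcal{C}$ with $\Gamma=\mathbb{Z}/2\mathbb{Z}$-actions, and let $f\colon X\to Y$ be a $\Gamma$-equivariant morphism. If $f$ is a local weak equivalence, then $f^{h\Gamma}\colon X^{h\Gamma}\to Y^{h\Gamma}$ is a local weak equivalence.
   Context: A groupoid is a small category with all morphisms invertible; a map of groupoids is a weak equivalence if it is an equivalence of categories. A presheaf of groupoids is a strict contravariant functor from $\mathcal{C}$ to groupoids; stalks at points are defined by the same colimit formula as for presheaves of sets. A morphism of presheaves of groupoids is a local weak equivalence if it induces a weak equivalence of groupoids on all stalks at points of $\mathcal{C}$. A $\Gamma$-action on a presheaf of groupoids is a $\Gamma$-action on each $X(U)$ (on objects and morphisms, compatible with structure maps; nontrivial element $x\mapsto\bar x$) compatible with restrictions; a $\Gamma$-equivariant morphism commutes with the actions on sections. For a groupoid $X$ with $\Gamma$-action, $X^{h\Gamma}$ has objects $(x,\phi)$ with $\phi\in\mathrm{Hom}(x,\bar x)$, $\bar\phi=\phi^{-1}$, and arrows $(x,\phi)\to(x_1,\phi_1)$ the $\alpha\colon x\to x_1$ with $\phi_1\alpha=\bar\alpha\phi$; for presheaves $X^{h\Gamma}(U)=X(U)^{h\Gamma}$, and $f^{h\Gamma}$ is given on sections by $(x,\phi)\mapsto(f(x),f(\phi))$, $\alpha\mapsto f(\alpha)$. *)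

theory Defs
  imports Main
begin

record ('a,'b) gcat =
  gobs  :: "'a set"
  garrs :: "'b set"
  gdom  :: "'b \<Rightarrow> 'a"
  gcod  :: "'b \<Rightarrow> 'a"
  gcomp :: "'b \<Rightarrow> 'b \<Rightarrow> 'b"   (* gcomp C g f = g \<circ> f, defined when gcod f = gdom g *)
  gide  :: "'a \<Rightarrow> 'b"

definition ghom :: "('a,'b) gcat \<Rightarrow> 'a \<Rightarrow> 'a \<Rightarrow> 'b set" where
  "ghom C a b = {f \<in> garrs C. gdom C f = a \<and> gcod C f = b}"

definition category :: "('a,'b) gcat \<Rightarrow> bool" where
  "category C \<longleftrightarrow>
     (\<forall>f\<in>garrs C. gdom C f \<in> gobs C \<and> gcod C f \<in> gobs C) \<and>
     (\<forall>a\<in>gobs C. gide C a \<in> ghom C a a) \<and>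
     (\<forall>f\<in>garrs C. \<forall>g\<in>garrs C. gcod C f = gdom C g \<longrightarrow>
        gcomp C g f \<in> ghom C (gdom C f) (gcod C g)) \<and>
     (\<forall>f\<in>garrs C. gcomp C (gide C (gcod C f)) f = f \<and> gcomp C f (gide C (gdom C f)) = f) \<and>
     (\<forall>f\<in>garrs C. \<forall>g\<in>garrs C. \<forall>h\<in>garrs C. gcod C f = gdom C g \<longrightarrow> gcod C g = gdom C h \<longrightarrow>
        gcomp C h (gcomp C g f) = gcomp C (gcomp C h g) f)"

definition is_iso :: "('a,'b) gcat \<Rightarrow> 'b \<Rightarrow> bool" where
  "is_iso C f \<longleftrightarrow> (\<exists>g\<in>ghom C (gcod C f) (gdom C f).
      gcomp C g f = gide C (gdom C f) \<and> gcomp C f g = gide C (gcod C f))"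

definition groupoid :: "('a,'b) gcat \<Rightarrow> bool" where
  "groupoid G \<longleftrightarrow> category G \<and> (\<forall>f\<in>garrs G. is_iso G f)"

definition is_functor :: "('a,'b) gcat \<Rightarrow> ('c,'d) gcat \<Rightarrow> ('a \<Rightarrow> 'c) \<Rightarrow> ('b \<Rightarrow> 'd) \<Rightarrow> bool" where
  "is_functor C D Fo Fa \<longleftrightarrow>
     (\<forall>a\<in>gobs C. Fo a \<in> gobs D) \<and>
     (\<forall>f\<in>garrs C. Fa f \<in> ghom D (Fo (gdom C f)) (Fo (gcod C f))) \<and>
     (\<forall>a\<in>gobs C. Fa (gide C a) = gide D (Fo a)) \<and>
     (\<forall>f\<in>garrs C. \<forall>g\<in>garrs C. gcod C f = gdom C g \<longrightarrow> Fa (gcomp C g f) = gcomp D (Fa g) (Fa f))"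

text \<open>Weak equivalence of groupoids = equivalence of categories: a functor admitting a
  quasi-inverse functor together with natural isomorphisms to the identities.\<close>
definition grpd_weq :: "('a,'b) gcat \<Rightarrow> ('c,'d) gcat \<Rightarrow> ('a \<Rightarrow> 'c) \<Rightarrow> ('b \<Rightarrow> 'd) \<Rightarrow> bool" where
  "grpd_weq G H Fo Fa \<longleftrightarrow> is_functor G H Fo Fa \<and>
     (\<exists>Go Ga \<eta> \<epsilon>. is_functor H G Go Ga \<and>
        (\<forall>a\<in>gobs G. \<eta> a \<in> ghom G a (Go (Fo a)) \<and> is_iso G (\<eta> a)) \<and>
        (\<forall>f\<in>garrs G. gcomp G (\<eta> (gcod G f)) f = gcomp G (Ga (Fa f)) (\<eta> (gdom G f))) \<and>
        (\<forall>b\<in>gobs H. \<epsilon> b \<in> ghom H (Fo (Go b)) b \<and> is_iso H (\<epsilon> b)) \<and>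
        (\<forall>g\<in>garrs H. gcomp H (\<epsilon> (gcod H g)) (Fa (Ga g)) = gcomp H g (\<epsilon> (gdom H g))))"

definition sieve :: "('o,'m) gcat \<Rightarrow> 'o \<Rightarrow> 'm set \<Rightarrow> bool" where
  "sieve C U S \<longleftrightarrow> S \<subseteq> {f \<in> garrs C. gcod C f = U} \<and>
     (\<forall>f\<in>S. \<forall>g\<in>garrs C. gcod C g = gdom C f \<longrightarrow> gcomp C f g \<in> S)"

definition max_sieve :: "('o,'m) gcat \<Rightarrow> 'o \<Rightarrow> 'm set" where
  "max_sieve C U = {f \<in> garrs C. gcod C f = U}"

definition pullback_sieve :: "('o,'m) gcat \<Rightarrow> 'm \<Rightarrow> 'm set \<Rightarrow> 'm set" where
  "pullback_sieve C f S = {g \<in> garrs C. gcod C g = gdom C f \<and> gcomp C f g \<in> S}"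

definition grothendieck_topology :: "('o,'m) gcat \<Rightarrow> ('o \<Rightarrow> 'm set set) \<Rightarrow> bool" where
  "grothendieck_topology C J \<longleftrightarrow>
     (\<forall>U\<in>gobs C. \<forall>S\<in>J U. sieve C U S) \<and>
     (\<forall>U\<in>gobs C. max_sieve C U \<in> J U) \<and>
     (\<forall>f\<in>garrs C. \<forall>S\<in>J (gcod C f). pullback_sieve C f S \<in> J (gdom C f)) \<and>
     (\<forall>U\<in>gobs C. \<forall>S\<in>J U. \<forall>R. sieve C U R \<and> (\<forall>f\<in>S. pullback_sieve C f R \<in> J (gdom C f))
        \<longrightarrow> R \<in> J U)"

definition site :: "('o,'m) gcat \<Rightarrow> ('o \<Rightarrow> 'm set set) \<Rightarrow> bool" where
  "site C J \<longleftrightarrow> category C \<and> grothendieck_topology C J"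

record ('o,'m,'x) setfunctor =
  sob :: "'o \<Rightarrow> 'x set"
  sar :: "'m \<Rightarrow> 'x \<Rightarrow> 'x"

definition set_functor :: "('o,'m) gcat \<Rightarrow> ('o,'m,'x) setfunctor \<Rightarrow> bool" where
  "set_functor C u \<longleftrightarrow>
     (\<forall>f\<in>garrs C. \<forall>y\<in>sob u (gdom C f). sar u f y \<in> sob u (gcod C f)) \<and>
     (\<forall>U\<in>gobs C. \<forall>y\<in>sob u U. sar u (gide C U) y = y) \<and>
     (\<forall>f\<in>garrs C. \<forall>g\<in>garrs C. gcod C f = gdom C g \<longrightarrow>
        (\<forall>y\<in>sob u (gdom C f). sar u (gcomp C g f) y = sar u g (sar u f y)))"

text \<open>Flat: the category of elements of u is cofiltered.\<close>
definition flat :: "('o,'m) gcat \<Rightarrow> ('o,'m,'x) setfunctor \<Rightarrow> bool" where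
  "flat C u \<longleftrightarrow> set_functor C u \<and>
     (\<exists>U\<in>gobs C. sob u U \<noteq> {}) \<and>
     (\<forall>U\<in>gobs C. \<forall>V\<in>gobs C. \<forall>x\<in>sob u U. \<forall>y\<in>sob u V.
        \<exists>W z g h. W \<in> gobs C \<and> z \<in> sob u W \<and> g \<in> ghom C W U \<and> h \<in> ghom C W V \<and>
                  sar u g z = x \<and> sar u h z = y) \<and>
     (\<forall>U V y f g. f \<in> ghom C V U \<and> g \<in> ghom C V U \<and> y \<in> sob u V \<and> sar u f y = sar u g y \<longrightarrow>
        (\<exists>W z h. W \<in> gobs C \<and> z \<in> sob u W \<and> h \<in> ghom C W V \<and> sar u h z = y \<and>
                 gcomp C f h = gcomp C g h))"

definition continuous_pt :: "('o,'m) gcat \<Rightarrow> ('o \<Rightarrow> 'm set set) \<Rightarrow> ('o,'m,'x) setfunctor \<Rightarrow> bool" where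
  "continuous_pt C J u \<longleftrightarrow>
     (\<forall>U\<in>gobs C. \<forall>S\<in>J U. \<forall>x\<in>sob u U. \<exists>f\<in>S. \<exists>y\<in>sob u (gdom C f). sar u f y = x)"

definition site_point :: "('o,'m) gcat \<Rightarrow> ('o \<Rightarrow> 'm set set) \<Rightarrow> ('o,'m,'x) setfunctor \<Rightarrow> bool" where
  "site_point C J u \<longleftrightarrow> flat C u \<and> continuous_pt C J u"

section \<open>Stalks: colim over the category of elements of a point\<close>

definition colim_carrier :: "('o,'m) gcat \<Rightarrow> ('o,'m,'x) setfunctor \<Rightarrow> ('o \<Rightarrow> 'v set) \<Rightarrow> ('o \<times> 'x \<times> 'v) set" where
  "colim_carrier C u A = {(U,x,a). U \<in> gobs C \<and> x \<in> sob u U \<and> a \<in> A U}"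

definition colim_step :: "('o,'m) gcat \<Rightarrow> ('o,'m,'x) setfunctor \<Rightarrow> ('o \<Rightarrow> 'v set) \<Rightarrow> ('m \<Rightarrow> 'v \<Rightarrow> 'v)
    \<Rightarrow> ('o \<times> 'x \<times> 'v) \<Rightarrow> ('o \<times> 'x \<times> 'v) \<Rightarrow> bool" where
  "colim_step C u A r p q \<longleftrightarrow> (\<exists>U x a V y g. p = (U,x,a) \<and> q = (V,y,r g a) \<and>
      U \<in> gobs C \<and> x \<in> sob u U \<and> a \<in> A U \<and> g \<in> ghom C V U \<and> y \<in> sob u V \<and> sar u g y = x)"

definition colim_eq :: "('o,'m) gcat \<Rightarrow> ('o,'m,'x) setfunctor \<Rightarrow> ('o \<Rightarrow> 'v set) \<Rightarrow> ('m \<Rightarrow> 'v \<Rightarrow> 'v)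
    \<Rightarrow> ('o \<times> 'x \<times> 'v) \<Rightarrow> ('o \<times> 'x \<times> 'v) \<Rightarrow> bool" where
  "colim_eq C u A r = (\<lambda>p q. colim_step C u A r p q \<or> colim_step C u A r q p)\<^sup>*\<^sup>*"

definition colim_class :: "('o,'m) gcat \<Rightarrow> ('o,'m,'x) setfunctor \<Rightarrow> ('o \<Rightarrow> 'v set) \<Rightarrow> ('m \<Rightarrow> 'v \<Rightarrow> 'v)
    \<Rightarrow> ('o \<times> 'x \<times> 'v) \<Rightarrow> ('o \<times> 'x \<times> 'v) set" where
  "colim_class C u A r p = {q \<in> colim_carrier C u A. colim_eq C u A r p q}"

definition colim_set :: "('o,'m) gcat \<Rightarrow> ('o,'m,'x) setfunctor \<Rightarrow> ('o \<Rightarrow> 'v set) \<Rightarrow> ('m \<Rightarrow> 'v \<Rightarrow> 'v)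
    \<Rightarrow> ('o \<times> 'x \<times> 'v) set set" where
  "colim_set C u A r = colim_class C u A r ` colim_carrier C u A"

record ('o,'m,'a,'b) pgrpd =
  psec :: "'o \<Rightarrow> ('a,'b) gcat"
  prob :: "'m \<Rightarrow> 'a \<Rightarrow> 'a"
  prar :: "'m \<Rightarrow> 'b \<Rightarrow> 'b"

definition presheaf_of_groupoids :: "('o,'m) gcat \<Rightarrow> ('o,'m,'a,'b) pgrpd \<Rightarrow> bool" where
  "presheaf_of_groupoids C X \<longleftrightarrow>
     (\<forall>U\<in>gobs C. groupoid (psec X U)) \<and>
     (\<forall>f\<in>garrs C. is_functor (psec X (gcod C f)) (psec X (gdom C f)) (prob X f) (prar X f)) \<and>
     (\<forall>U\<in>gobs C. (\<forall>a\<in>gobs (psec X U). prob X (gide C U) a = a) \<and>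
                  (\<forall>\<alpha>\<in>garrs (psec X U). prar X (gide C U) \<alpha> = \<alpha>)) \<and>
     (\<forall>f\<in>garrs C. \<forall>g\<in>garrs C. gcod C f = gdom C g \<longrightarrow>
        (\<forall>a\<in>gobs (psec X (gcod C g)). prob X (gcomp C g f) a = prob X f (prob X g a)) \<and>
        (\<forall>\<alpha>\<in>garrs (psec X (gcod C g)). prar X (gcomp C g f) \<alpha> = prar X f (prar X g \<alpha>)))"

record ('o,'a,'b,'c,'d) pmor =
  mob :: "'o \<Rightarrow> 'a \<Rightarrow> 'c"
  mar :: "'o \<Rightarrow> 'b \<Rightarrow> 'd"

definition presheaf_morphism :: "('o,'m) gcat \<Rightarrow> ('o,'m,'a,'b) pgrpd \<Rightarrow> ('o,'m,'c,'d) pgrpd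
    \<Rightarrow> ('o,'a,'b,'c,'d) pmor \<Rightarrow> bool" where
  "presheaf_morphism C X Y F \<longleftrightarrow>
     (\<forall>U\<in>gobs C. is_functor (psec X U) (psec Y U) (mob F U) (mar F U)) \<and>
     (\<forall>f\<in>garrs C.
        (\<forall>a\<in>gobs (psec X (gcod C f)). mob F (gdom C f) (prob X f a) = prob Y f (mob F (gcod C f) a)) \<and>
        (\<forall>\<alpha>\<in>garrs (psec X (gcod C f)). mar F (gdom C f) (prar X f \<alpha>) = prar Y f (mar F (gcod C f) \<alpha>)))"

definition stalk_ob_cls where
  "stalk_ob_cls C u X = colim_class C u (\<lambda>U. gobs (psec X U)) (prob X)"

definition stalk_ar_cls where
  "stalk_ar_cls C u X = colim_class C u (\<lambda>U. garrs (psec X U)) (prar X)"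

definition stalk :: "('o,'m) gcat \<Rightarrow> ('o,'m,'x) setfunctor \<Rightarrow> ('o,'m,'a,'b) pgrpd
    \<Rightarrow> (('o \<times> 'x \<times> 'a) set, ('o \<times> 'x \<times> 'b) set) gcat" where
  "stalk C u X = \<lparr>
     gobs = colim_set C u (\<lambda>U. gobs (psec X U)) (prob X),
     garrs = colim_set C u (\<lambda>U. garrs (psec X U)) (prar X),
     gdom = (\<lambda>A. case (SOME t. t \<in> A) of (U,x,\<alpha>) \<Rightarrow> stalk_ob_cls C u X (U, x, gdom (psec X U) \<alpha>)),
     gcod = (\<lambda>A. case (SOME t. t \<in> A) of (U,x,\<alpha>) \<Rightarrow> stalk_ob_cls C u X (U, x, gcod (psec X U) \<alpha>)),
     gcomp = (\<lambda>B A. case (SOME t. case t of (U,x,\<alpha>,\<beta>) \<Rightarrow>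
                          (U,x,\<alpha>) \<in> A \<and> (U,x,\<beta>) \<in> B \<and> gcod (psec X U) \<alpha> = gdom (psec X U) \<beta>)
                 of (U,x,\<alpha>,\<beta>) \<Rightarrow> stalk_ar_cls C u X (U, x, gcomp (psec X U) \<beta> \<alpha>)),
     gide = (\<lambda>P. case (SOME t. t \<in> P) of (U,x,a) \<Rightarrow> stalk_ar_cls C u X (U, x, gide (psec X U) a)) \<rparr>"

definition stalk_mob :: "('o,'m) gcat \<Rightarrow> ('o,'m,'x) setfunctor \<Rightarrow> ('o,'m,'c,'d) pgrpd
    \<Rightarrow> ('o,'a,'b,'c,'d) pmor \<Rightarrow> ('o \<times> 'x \<times> 'a) set \<Rightarrow> ('o \<times> 'x \<times> 'c) set" where
  "stalk_mob C u Y F = (\<lambda>P. case (SOME t. t \<in> P) of (U,x,a) \<Rightarrow> stalk_ob_cls C u Y (U, x, mob F U a))"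

definition stalk_mar :: "('o,'m) gcat \<Rightarrow> ('o,'m,'x) setfunctor \<Rightarrow> ('o,'m,'c,'d) pgrpd
    \<Rightarrow> ('o,'a,'b,'c,'d) pmor \<Rightarrow> ('o \<times> 'x \<times> 'b) set \<Rightarrow> ('o \<times> 'x \<times> 'd) set" where
  "stalk_mar C u Y F = (\<lambda>A. case (SOME t. t \<in> A) of (U,x,\<alpha>) \<Rightarrow> stalk_ar_cls C u Y (U, x, mar F U \<alpha>))"

text \<open>Local weak equivalence: weak equivalence on the stalks at all points of the site
  (points with values in the type 'x).\<close>
definition local_weq :: "('o,'m) gcat \<Rightarrow> ('o \<Rightarrow> 'm set set) \<Rightarrow> 'x itself
    \<Rightarrow> ('o,'m,'a,'b) pgrpd \<Rightarrow> ('o,'m,'c,'d) pgrpd \<Rightarrow> ('o,'a,'b,'c,'d) pmor \<Rightarrow> bool" where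
  "local_weq C J tx X Y F \<longleftrightarrow>
     (\<forall>u :: ('o,'m,'x) setfunctor. site_point C J u \<longrightarrow>
        grpd_weq (stalk C u X) (stalk C u Y) (stalk_mob C u Y F) (stalk_mar C u Y F))"

record ('o,'m,'v) psh =
  pshob :: "'o \<Rightarrow> 'v set"
  pshar :: "'m \<Rightarrow> 'v \<Rightarrow> 'v"

definition presheaf_of_sets :: "('o,'m) gcat \<Rightarrow> ('o,'m,'v) psh \<Rightarrow> bool" where
  "presheaf_of_sets C F \<longleftrightarrow>
     (\<forall>f\<in>garrs C. \<forall>s\<in>pshob F (gcod C f). pshar F f s \<in> pshob F (gdom C f)) \<and>
     (\<forall>U\<in>gobs C. \<forall>s\<in>pshob F U. pshar F (gide C U) s = s) \<and>
     (\<forall>f\<in>garrs C. \<forall>g\<in>garrs C. gcod C f = gdom C g \<longrightarrow>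
        (\<forall>s\<in>pshob F (gcod C g). pshar F (gcomp C g f) s = pshar F f (pshar F g s)))"

definition is_sheaf :: "('o,'m) gcat \<Rightarrow> ('o \<Rightarrow> 'm set set) \<Rightarrow> ('o,'m,'v) psh \<Rightarrow> bool" where
  "is_sheaf C J F \<longleftrightarrow> presheaf_of_sets C F \<and>
     (\<forall>U\<in>gobs C. \<forall>S\<in>J U. \<forall>s.
        (\<forall>f\<in>S. s f \<in> pshob F (gdom C f)) \<and>
        (\<forall>f\<in>S. \<forall>g\<in>garrs C. gcod C g = gdom C f \<longrightarrow> pshar F g (s f) = s (gcomp C f g))
        \<longrightarrow> (\<exists>!t. t \<in> pshob F U \<and> (\<forall>f\<in>S. pshar F f t = s f)))"

definition psh_morphism :: "('o,'m) gcat \<Rightarrow> ('o,'m,'v) psh \<Rightarrow> ('o,'m,'w) psh \<Rightarrow> ('o \<Rightarrow> 'v \<Rightarrow> 'w) \<Rightarrow> bool" where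
  "psh_morphism C F G \<phi> \<longleftrightarrow>
     (\<forall>U\<in>gobs C. \<forall>s\<in>pshob F U. \<phi> U s \<in> pshob G U) \<and>
     (\<forall>f\<in>garrs C. \<forall>s\<in>pshob F (gcod C f). \<phi> (gdom C f) (pshar F f s) = pshar G f (\<phi> (gcod C f) s))"

definition stalk_map_set :: "('o,'m) gcat \<Rightarrow> ('o,'m,'x) setfunctor \<Rightarrow> ('o,'m,'w) psh
    \<Rightarrow> ('o \<Rightarrow> 'v \<Rightarrow> 'w) \<Rightarrow> ('o \<times> 'x \<times> 'v) set \<Rightarrow> ('o \<times> 'x \<times> 'w) set" where
  "stalk_map_set C u G \<phi> = (\<lambda>P. case (SOME t. t \<in> P) of (U,x,s) \<Rightarrow>
       colim_class C u (pshob G) (pshar G) (U, x, \<phi> U s))"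

text \<open>Enough points: the points (with values in type 'x) jointly detect isomorphisms of
  sheaves of sets (with values in type 'v).\<close>
definition enough_points :: "('o,'m) gcat \<Rightarrow> ('o \<Rightarrow> 'm set set) \<Rightarrow> 'x itself \<Rightarrow> 'v itself \<Rightarrow> bool" where
  "enough_points C J tx tv \<longleftrightarrow>
     (\<forall>(F :: ('o,'m,'v) psh) (G :: ('o,'m,'v) psh) \<phi>.
        is_sheaf C J F \<and> is_sheaf C J G \<and> psh_morphism C F G \<phi> \<and>
        (\<forall>u :: ('o,'m,'x) setfunctor. site_point C J u \<longrightarrow>
           bij_betw (stalk_map_set C u G \<phi>) (colim_set C u (pshob F) (pshar F))
                                             (colim_set C u (pshob G) (pshar G)))
        \<longrightarrow> (\<forall>U\<in>gobs C. bij_betw (\<phi> U) (pshob F U) (pshob G U)))"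

text \<open>A Z/2-action is given by the action of the nontrivial element x \<mapsto> x-bar,
  an involutive automorphism of each X(U), compatible with restrictions.\<close>
record ('o,'a,'b) z2act =
  aob :: "'o \<Rightarrow> 'a \<Rightarrow> 'a"
  aar :: "'o \<Rightarrow> 'b \<Rightarrow> 'b"

definition z2_action :: "('o,'m) gcat \<Rightarrow> ('o,'m,'a,'b) pgrpd \<Rightarrow> ('o,'a,'b) z2act \<Rightarrow> bool" where
  "z2_action C X T \<longleftrightarrow>
     (\<forall>U\<in>gobs C. is_functor (psec X U) (psec X U) (aob T U) (aar T U) \<and>
        (\<forall>a\<in>gobs (psec X U). aob T U (aob T U a) = a) \<and>
        (\<forall>\<alpha>\<in>garrs (psec X U). aar T U (aar T U \<alpha>) = \<alpha>)) \<and>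
     (\<forall>f\<in>garrs C.
        (\<forall>a\<in>gobs (psec X (gcod C f)). prob X f (aob T (gcod C f) a) = aob T (gdom C f) (prob X f a)) \<and>
        (\<forall>\<alpha>\<in>garrs (psec X (gcod C f)). prar X f (aar T (gcod C f) \<alpha>) = aar T (gdom C f) (prar X f \<alpha>)))"

definition equivariant :: "('o,'m) gcat \<Rightarrow> ('o,'m,'a,'b) pgrpd \<Rightarrow> ('o,'a,'b) z2act
    \<Rightarrow> ('o,'c,'d) z2act \<Rightarrow> ('o,'a,'b,'c,'d) pmor \<Rightarrow> bool" where
  "equivariant C X TX TY F \<longleftrightarrow>
     (\<forall>U\<in>gobs C.
        (\<forall>a\<in>gobs (psec X U). mob F U (aob TX U a) = aob TY U (mob F U a)) \<and>
        (\<forall>\<alpha>\<in>garrs (psec X U). mar F U (aar TX U \<alpha>) = aar TY U (mar F U \<alpha>)))"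

definition hfp_obs :: "('a,'b) gcat \<Rightarrow> ('a \<Rightarrow> 'a) \<Rightarrow> ('b \<Rightarrow> 'b) \<Rightarrow> ('a \<times> 'b) set" where
  "hfp_obs G tob tar = {(x,\<phi>). x \<in> gobs G \<and> \<phi> \<in> ghom G x (tob x) \<and>
      gcomp G (tar \<phi>) \<phi> = gide G x \<and> gcomp G \<phi> (tar \<phi>) = gide G (tob x)}"

text \<open>X^{h\<Gamma>}: objects (x,\<phi>) with \<phi> : x \<rightarrow> x-bar and \<phi>-bar = \<phi>^{-1}; an arrow
  (x,\<phi>) \<rightarrow> (x1,\<phi>1) is \<alpha> : x \<rightarrow> x1 with \<phi>1 \<alpha> = \<alpha>-bar \<phi>, recorded together with its
  source and target.\<close>
definition hfp_grpd :: "('a,'b) gcat \<Rightarrow> ('a \<Rightarrow> 'a) \<Rightarrow> ('b \<Rightarrow> 'b)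
    \<Rightarrow> ('a \<times> 'b, ('a \<times> 'b) \<times> 'b \<times> ('a \<times> 'b)) gcat" where
  "hfp_grpd G tob tar = \<lparr>
     gobs = hfp_obs G tob tar,
     garrs = {(p,\<alpha>,q). p \<in> hfp_obs G tob tar \<and> q \<in> hfp_obs G tob tar \<and>
                 \<alpha> \<in> ghom G (fst p) (fst q) \<and> gcomp G (snd q) \<alpha> = gcomp G (tar \<alpha>) (snd p)},
     gdom = (\<lambda>(p,\<alpha>,q). p),
     gcod = (\<lambda>(p,\<alpha>,q). q),
     gcomp = (\<lambda>(p2,\<beta>,q2) (p1,\<alpha>,q1). (p1, gcomp G \<beta> \<alpha>, q2)),
     gide = (\<lambda>p. (p, gide G (fst p), p)) \<rparr>"

definition hfp_psh :: "('o,'m,'a,'b) pgrpd \<Rightarrow> ('o,'a,'b) z2act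
    \<Rightarrow> ('o,'m,'a \<times> 'b, ('a \<times> 'b) \<times> 'b \<times> ('a \<times> 'b)) pgrpd" where
  "hfp_psh X T = \<lparr>
     psec = (\<lambda>U. hfp_grpd (psec X U) (aob T U) (aar T U)),
     prob = (\<lambda>f (x,\<phi>). (prob X f x, prar X f \<phi>)),
     prar = (\<lambda>f ((x,\<phi>),\<alpha>,(y,\<psi>)). ((prob X f x, prar X f \<phi>), prar X f \<alpha>, (prob X f y, prar X f \<psi>))) \<rparr>"

definition hfp_mor :: "('o,'a,'b,'c,'d) pmor
    \<Rightarrow> ('o, 'a \<times> 'b, ('a \<times> 'b) \<times> 'b \<times> ('a \<times> 'b), 'c \<times> 'd, ('c \<times> 'd) \<times> 'd \<times> ('c \<times> 'd)) pmor" where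
  "hfp_mor F = \<lparr>
     mob = (\<lambda>U (x,\<phi>). (mob F U x, mar F U \<phi>)),
     mar = (\<lambda>U ((x,\<phi>),\<alpha>,(y,\<psi>)). ((mob F U x, mar F U \<phi>), mar F U \<alpha>, (mob F U y, mar F U \<psi>))) \<rparr>"

end

theory Submission
  imports Defs
begin

lemma ghomI: "f \<in> garrs C \<Longrightarrow> gdom C f = a \<Longrightarrow> gcod C f = b \<Longrightarrow> f \<in> ghom C a b"
  by (simp add: ghom_def)
lemma ghomD: "f \<in> ghom C a b \<Longrightarrow> f \<in> garrs C \<and> gdom C f = a \<and> gcod C f = b"
  by (simp add: ghom_def)

lemma isoI: "f \<in> ghom G a b \<Longrightarrow> g \<in> ghom G b a \<Longrightarrow> gcomp G g f = gide G a \<Longrightarrow> gcomp G f g = gide G b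
   \<Longrightarrow> is_iso G f"
  unfolding is_iso_def ghom_def by auto

context fixes G :: "('a,'b) gcat" assumes G: "category G"
begin

lemma c_dom: "f \<in> ghom G a b \<Longrightarrow> a \<in> gobs G"
  using G unfolding category_def ghom_def by auto
lemma c_cod: "f \<in> ghom G a b \<Longrightarrow> b \<in> gobs G"
  using G unfolding category_def ghom_def by auto
lemma c_arr: "f \<in> garrs G \<Longrightarrow> f \<in> ghom G (gdom G f) (gcod G f)"
  by (simp add: ghom_def)
lemma c_id: "a \<in> gobs G \<Longrightarrow> gide G a \<in> ghom G a a"
  using G unfolding category_def by auto
lemma c_comp: "f \<in> ghom G a b \<Longrightarrow> g \<in> ghom G b c \<Longrightarrow> gcomp G g f \<in> ghom G a c"
  using G unfolding category_def ghom_def by auto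
lemma c_idl: "f \<in> ghom G a b \<Longrightarrow> gcomp G (gide G b) f = f"
  using G unfolding category_def ghom_def by auto
lemma c_idr: "f \<in> ghom G a b \<Longrightarrow> gcomp G f (gide G a) = f"
  using G unfolding category_def ghom_def by auto
lemma c_assoc: "f \<in> ghom G a b \<Longrightarrow> g \<in> ghom G b c \<Longrightarrow> h \<in> ghom G c d \<Longrightarrow>
    gcomp G h (gcomp G g f) = gcomp G (gcomp G h g) f"
  using G unfolding category_def ghom_def by auto

definition ginv where
  "ginv f = (SOME g. g \<in> ghom G (gcod G f) (gdom G f) \<and>
      gcomp G g f = gide G (gdom G f) \<and> gcomp G f g = gide G (gcod G f))"

lemma ginv: assumes "f \<in> ghom G a b" "is_iso G f"
  shows "ginv f \<in> ghom G b a" "gcomp G (ginv f) f = gide G a" "gcomp G f (ginv f) = gide G b"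
proof -
  have "\<exists>g. g \<in> ghom G (gcod G f) (gdom G f) \<and>
      gcomp G g f = gide G (gdom G f) \<and> gcomp G f g = gide G (gcod G f)"
    using assms(2) unfolding is_iso_def by blast
  from someI_ex[OF this] assms(1) show "ginv f \<in> ghom G b a" "gcomp G (ginv f) f = gide G a" "gcomp G f (ginv f) = gide G b"
    unfolding ginv_def ghom_def by auto
qed


lemma ginv_iso: "f \<in> ghom G a b \<Longrightarrow> is_iso G f \<Longrightarrow> is_iso G (ginv f)"
  using ginv isoI by metis

lemma iso_cancel_l: assumes "f \<in> ghom G b c" "is_iso G f" "g1 \<in> ghom G a b" "g2 \<in> ghom G a b"
  "gcomp G f g1 = gcomp G f g2" shows "g1 = g2"
proof -
  have "g1 = gcomp G (gcomp G (ginv f) f) g1" using ginv[OF assms(1,2)] c_idl[OF assms(3)] by simp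
  also have "\<dots> = gcomp G (ginv f) (gcomp G f g1)" using c_assoc[OF assms(3,1) ginv(1)[OF assms(1,2)]] by simp
  also have "\<dots> = gcomp G (gcomp G (ginv f) f) g2" using c_assoc[OF assms(4,1) ginv(1)[OF assms(1,2)]] assms(5) by simp
  also have "\<dots> = g2" using ginv[OF assms(1,2)] c_idl[OF assms(4)] by simp
  finally show ?thesis .
qed

lemma iso_cancel_r: assumes "f \<in> ghom G a b" "is_iso G f" "g1 \<in> ghom G b c" "g2 \<in> ghom G b c"
  "gcomp G g1 f = gcomp G g2 f" shows "g1 = g2"
proof -
  have "g1 = gcomp G g1 (gcomp G f (ginv f))" using ginv[OF assms(1,2)] c_idr[OF assms(3)] by simp
  also have "\<dots> = gcomp G (gcomp G g1 f) (ginv f)" using c_assoc[OF ginv(1)[OF assms(1,2)] assms(1,3)] by simp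
  also have "\<dots> = gcomp G g2 (gcomp G f (ginv f))" using c_assoc[OF ginv(1)[OF assms(1,2)] assms(1,4)] assms(5) by simp
  also have "\<dots> = g2" using ginv[OF assms(1,2)] c_idr[OF assms(4)] by simp
  finally show ?thesis .
qed

end

lemma fun_ob: "is_functor G H Fo Fa \<Longrightarrow> a \<in> gobs G \<Longrightarrow> Fo a \<in> gobs H"
  unfolding is_functor_def by auto
lemma fun_ar: "is_functor G H Fo Fa \<Longrightarrow> f \<in> ghom G a b \<Longrightarrow> Fa f \<in> ghom H (Fo a) (Fo b)"
  unfolding is_functor_def ghom_def by auto
lemma fun_id: "is_functor G H Fo Fa \<Longrightarrow> a \<in> gobs G \<Longrightarrow> Fa (gide G a) = gide H (Fo a)"
  unfolding is_functor_def by auto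
lemma fun_comp: "is_functor G H Fo Fa \<Longrightarrow> f \<in> ghom G a b \<Longrightarrow> g \<in> ghom G b c \<Longrightarrow>
   Fa (gcomp G g f) = gcomp H (Fa g) (Fa f)"
  unfolding is_functor_def ghom_def by auto
lemma fun_iso: assumes "category G" "is_functor G H Fo Fa" "f \<in> ghom G a b" "is_iso G f"
  shows "is_iso H (Fa f)"
proof -
  have a: "a \<in> gobs G" "b \<in> gobs G" using c_dom c_cod assms by metis+
  note i = ginv[OF assms(1,3,4)]
  show ?thesis
    apply (rule isoI[where a="Fo a" and b="Fo b" and g="Fa (ginv G f)"])
    using fun_ar[OF assms(2)] assms(3) i
       apply blast
    using fun_ar[OF assms(2)] assms(3) i
      apply blast
    using fun_comp[OF assms(2) assms(3) i(1)] fun_id[OF assms(2) a(1)] i(2) apply simp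
    using fun_comp[OF assms(2) i(1) assms(3)] fun_id[OF assms(2) a(2)] i(3) apply simp
    done
qed

lemma functorI:
  assumes "\<And>a. a \<in> gobs G \<Longrightarrow> Fo a \<in> gobs H"
    "\<And>f a b. f \<in> ghom G a b \<Longrightarrow> Fa f \<in> ghom H (Fo a) (Fo b)"
    "\<And>a. a \<in> gobs G \<Longrightarrow> Fa (gide G a) = gide H (Fo a)"
    "\<And>f g a b c. f \<in> ghom G a b \<Longrightarrow> g \<in> ghom G b c \<Longrightarrow> Fa (gcomp G g f) = gcomp H (Fa g) (Fa f)"
  shows "is_functor G H Fo Fa"
  unfolding is_functor_def using assms by (auto simp: ghom_def)


lemma weq_ff_es:
  assumes G: "category G" and H: "category H" and W: "grpd_weq G H Fo Fa"
  shows "\<forall>a\<in>gobs G. \<forall>a'\<in>gobs G. \<forall>f\<in>ghom G a a'. \<forall>g\<in>ghom G a a'. Fa f = Fa g \<longrightarrow> f = g"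
    and "\<forall>a\<in>gobs G. \<forall>a'\<in>gobs G. \<forall>h\<in>ghom H (Fo a) (Fo a'). \<exists>f\<in>ghom G a a'. Fa f = h"
    and "\<forall>b\<in>gobs H. \<exists>a\<in>gobs G. \<exists>e\<in>ghom H (Fo a) b. is_iso H e"
proof -
  have F: "is_functor G H Fo Fa" using W unfolding grpd_weq_def by blast
  from W obtain Go Ga \<eta> \<epsilon> where Gf: "is_functor H G Go Ga"
    and eta: "\<And>a. a\<in>gobs G \<Longrightarrow> \<eta> a \<in> ghom G a (Go (Fo a)) \<and> is_iso G (\<eta> a)"
    and etan: "\<And>f. f\<in>garrs G \<Longrightarrow> gcomp G (\<eta> (gcod G f)) f = gcomp G (Ga (Fa f)) (\<eta> (gdom G f))"
    and eps: "\<And>b. b\<in>gobs H \<Longrightarrow> \<epsilon> b \<in> ghom H (Fo (Go b)) b \<and> is_iso H (\<epsilon> b)"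
    and epsn: "\<And>g. g\<in>garrs H \<Longrightarrow> gcomp H (\<epsilon> (gcod H g)) (Fa (Ga g)) = gcomp H g (\<epsilon> (gdom H g))"
    unfolding grpd_weq_def by blast
  have etan': "gcomp G (\<eta> a') f = gcomp G (Ga (Fa f)) (\<eta> a)" if "f \<in> ghom G a a'" for f a a'
    using etan[of f] that by (auto simp: ghom_def)
  have epsn': "gcomp H (\<epsilon> b') (Fa (Ga g)) = gcomp H g (\<epsilon> b)" if "g \<in> ghom H b b'" for g b b'
    using epsn[of g] that by (auto simp: ghom_def)
  show faith: "\<forall>a\<in>gobs G. \<forall>a'\<in>gobs G. \<forall>f\<in>ghom G a a'. \<forall>g\<in>ghom G a a'. Fa f = Fa g \<longrightarrow> f = g"
  proof (intro ballI impI)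
    fix a a' f g assume a: "a \<in> gobs G" "a' \<in> gobs G" and fg: "f \<in> ghom G a a'" "g \<in> ghom G a a'" "Fa f = Fa g"
    have "gcomp G (\<eta> a') f = gcomp G (\<eta> a') g" using etan'[OF fg(1)] etan'[OF fg(2)] fg(3) by simp
    then show "f = g" using iso_cancel_l[OF G _ _ fg(1,2)] eta[OF a(2)] by blast
  qed
  have gfaith: "g1 = g2" if "g1 \<in> ghom H b b'" "g2 \<in> ghom H b b'" "Ga g1 = Ga g2" "b \<in> gobs H" "b' \<in> gobs H" for g1 g2 b b'
  proof -
    have "gcomp H g1 (\<epsilon> b) = gcomp H g2 (\<epsilon> b)" using epsn'[OF that(1)] epsn'[OF that(2)] that(3) by simp
    then show ?thesis using iso_cancel_r[OF H _ _ that(1,2)] eps[OF that(4)] by blast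
  qed
  show "\<forall>a\<in>gobs G. \<forall>a'\<in>gobs G. \<forall>h\<in>ghom H (Fo a) (Fo a'). \<exists>f\<in>ghom G a a'. Fa f = h"
  proof (intro ballI)
    fix a a' h assume a: "a \<in> gobs G" "a' \<in> gobs G" and h: "h \<in> ghom H (Fo a) (Fo a')"
    note e1 = eta[OF a(1)] and e2 = eta[OF a(2)]
    define i2 where "i2 = ginv G (\<eta> a')"
    note i2 = ginv[OF G conjunct1[OF e2] conjunct2[OF e2], folded i2_def]
    have Gh: "Ga h \<in> ghom G (Go (Fo a)) (Go (Fo a'))" using fun_ar[OF Gf h] .
    define f where "f = gcomp G i2 (gcomp G (Ga h) (\<eta> a))"
    have f: "f \<in> ghom G a a'" unfolding f_def using c_comp[OF G] e1 Gh i2 by blast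
    have Ff: "Fa f \<in> ghom H (Fo a) (Fo a')" using fun_ar[OF F f] .
    have "gcomp G (Ga (Fa f)) (\<eta> a) = gcomp G (\<eta> a') f" using etan'[OF f] by simp
    also have "\<dots> = gcomp G (gcomp G (\<eta> a') i2) (gcomp G (Ga h) (\<eta> a))"
      unfolding f_def using c_assoc[OF G _ i2(1), of _ a] c_comp[OF G] e1 e2 Gh by blast
    also have "\<dots> = gcomp G (Ga h) (\<eta> a)" using i2(3) c_idl[OF G] c_comp[OF G] e1 Gh by metis
    finally have "gcomp G (Ga (Fa f)) (\<eta> a) = gcomp G (Ga h) (\<eta> a)" .
    then have "Ga (Fa f) = Ga h" using iso_cancel_r[OF G conjunct1[OF e1] conjunct2[OF e1] fun_ar[OF Gf Ff] Gh] by blast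
    then have "Fa f = h" using gfaith[OF Ff h] fun_ob[OF F] a by blast
    then show "\<exists>f\<in>ghom G a a'. Fa f = h" using f by blast
  qed
  show "\<forall>b\<in>gobs H. \<exists>a\<in>gobs G. \<exists>e\<in>ghom H (Fo a) b. is_iso H e"
    using eps fun_ob[OF Gf] by blast
qed


lemma ff_es_weq:
  assumes G: "category G" and H: "category H" and F: "is_functor G H Fo Fa"
   and faith: "\<forall>a\<in>gobs G. \<forall>a'\<in>gobs G. \<forall>f\<in>ghom G a a'. \<forall>g\<in>ghom G a a'. Fa f = Fa g \<longrightarrow> f = g"
   and full: "\<forall>a\<in>gobs G. \<forall>a'\<in>gobs G. \<forall>h\<in>ghom H (Fo a) (Fo a'). \<exists>f\<in>ghom G a a'. Fa f = h"
   and es: "\<forall>b\<in>gobs H. \<exists>a\<in>gobs G. \<exists>e\<in>ghom H (Fo a) b. is_iso H e"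
  shows "grpd_weq G H Fo Fa"
proof -
  define Go where "Go b = (SOME a. a\<in>gobs G \<and> (\<exists>e\<in>ghom H (Fo a) b. is_iso H e))" for b
  define \<epsilon> where "\<epsilon> b = (SOME e. e \<in> ghom H (Fo (Go b)) b \<and> is_iso H e)" for b
  have Go: "Go b \<in> gobs G \<and> \<epsilon> b \<in> ghom H (Fo (Go b)) b \<and> is_iso H (\<epsilon> b)" if "b \<in> gobs H" for b
  proof -
    have 1: "Go b\<in>gobs G \<and> (\<exists>e\<in>ghom H (Fo (Go b)) b. is_iso H e)"
      unfolding Go_def by (rule someI_ex) (use es that in blast)
    then have "\<epsilon> b \<in> ghom H (Fo (Go b)) b \<and> is_iso H (\<epsilon> b)"
      unfolding \<epsilon>_def by (metis (mono_tags, lifting) someI_ex)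
    then show ?thesis using 1 by blast
  qed
  have Goo: "Go b \<in> gobs G" and eph: "\<epsilon> b \<in> ghom H (Fo (Go b)) b" if "b \<in> gobs H" for b
    using Go[OF that] by blast+
  define \<epsilon>i where "\<epsilon>i b = ginv H (\<epsilon> b)" for b
  have ei: "\<epsilon>i b \<in> ghom H b (Fo (Go b))" "gcomp H (\<epsilon>i b) (\<epsilon> b) = gide H (Fo (Go b))"
     "gcomp H (\<epsilon> b) (\<epsilon>i b) = gide H b" if "b \<in> gobs H" for b
    using ginv[OF H, of "\<epsilon> b"] Go[OF that] unfolding \<epsilon>i_def by blast+
  define Ga where "Ga g = (SOME f. f \<in> ghom G (Go (gdom H g)) (Go (gcod H g)) \<and>
     Fa f = gcomp H (\<epsilon>i (gcod H g)) (gcomp H g (\<epsilon> (gdom H g))))" for g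
  have Ga: "Ga g \<in> ghom G (Go b) (Go b') \<and> Fa (Ga g) = gcomp H (\<epsilon>i b') (gcomp H g (\<epsilon> b))"
    if g: "g \<in> ghom H b b'" for g b b'
  proof -
    have b: "b \<in> gobs H" "b' \<in> gobs H" using c_dom[OF H g] c_cod[OF H g] by auto
    have "gcomp H (\<epsilon>i b') (gcomp H g (\<epsilon> b)) \<in> ghom H (Fo (Go b)) (Fo (Go b'))"
      using c_comp[OF H c_comp[OF H eph[OF b(1)] g] ei(1)[OF b(2)]] .
    then have "\<exists>f. f \<in> ghom G (Go b) (Go b') \<and> Fa f = gcomp H (\<epsilon>i b') (gcomp H g (\<epsilon> b))"
      using full Go b by blast
    then show ?thesis unfolding Ga_def using g[unfolded ghom_def] by (simp add: someI_ex[of "\<lambda>f. f \<in> ghom G (Go b) (Go b') \<and> Fa f = gcomp H (\<epsilon>i b') (gcomp H g (\<epsilon> b))"])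
  qed
  define \<eta> where "\<eta> a = (SOME f. f \<in> ghom G a (Go (Fo a)) \<and> Fa f = \<epsilon>i (Fo a))" for a
  have eta: "\<eta> a \<in> ghom G a (Go (Fo a)) \<and> Fa (\<eta> a) = \<epsilon>i (Fo a)" if a: "a \<in> gobs G" for a
  proof -
    have "\<exists>f. f \<in> ghom G a (Go (Fo a)) \<and> Fa f = \<epsilon>i (Fo a)"
      using full a Go ei fun_ob[OF F a] by blast
    then show ?thesis unfolding \<eta>_def by (rule someI_ex)
  qed
  have faith': "f = g" if "f \<in> ghom G a a'" "g \<in> ghom G a a'" "Fa f = Fa g" for f g a a'
    using faith that c_dom[OF G that(1)] c_cod[OF G that(1)] by blast
  have GF: "is_functor H G Go Ga"
  proof (rule functorI)
    show "Go a \<in> gobs G" if "a \<in> gobs H" for a using Go that by blast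
    show "Ga f \<in> ghom G (Go a) (Go b)" if "f \<in> ghom H a b" for f a b using Ga that by blast
    show "Ga (gide H b) = gide G (Go b)" if b: "b \<in> gobs H" for b
    proof (rule faith')
      show "Ga (gide H b) \<in> ghom G (Go b) (Go b)" using Ga c_id[OF H b] by blast
      show "gide G (Go b) \<in> ghom G (Go b) (Go b)" using c_id[OF G] Go b by blast
      have "Fa (Ga (gide H b)) = gcomp H (\<epsilon>i b) (gcomp H (gide H b) (\<epsilon> b))" using Ga c_id[OF H b] by blast
      also have "\<dots> = gide H (Fo (Go b))" using c_idl[OF H eph[OF b]] ei(2)[OF b] by simp
      also have "\<dots> = Fa (gide G (Go b))" using fun_id[OF F Goo[OF b]] by simp
      finally show "Fa (Ga (gide H b)) = Fa (gide G (Go b))" .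
    qed
    show "Ga (gcomp H g f) = gcomp G (Ga g) (Ga f)" if fg: "f \<in> ghom H a b" "g \<in> ghom H b c" for f g a b c
    proof (rule faith')
      have abc: "a \<in> gobs H" "b \<in> gobs H" "c \<in> gobs H" using c_dom[OF H fg(1)] c_cod[OF H fg(1)] c_cod[OF H fg(2)] by auto
      have gf: "gcomp H g f \<in> ghom H a c" using c_comp[OF H fg] .
      show "Ga (gcomp H g f) \<in> ghom G (Go a) (Go c)" using Ga gf by blast
      show "gcomp G (Ga g) (Ga f) \<in> ghom G (Go a) (Go c)" using c_comp[OF G] Ga fg by blast
      note e = Go[OF abc(1)] Go[OF abc(2)] Go[OF abc(3)] ei[OF abc(1)] ei[OF abc(2)] ei[OF abc(3)]
      have "Fa (gcomp G (Ga g) (Ga f)) = gcomp H (Fa (Ga g)) (Fa (Ga f))"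
        using fun_comp[OF F] Ga fg by blast
      also have "\<dots> = gcomp H (gcomp H (\<epsilon>i c) (gcomp H g (\<epsilon> b))) (gcomp H (\<epsilon>i b) (gcomp H f (\<epsilon> a)))"
        using Ga[OF fg(1)] Ga[OF fg(2)] by simp
      also have "\<dots> = gcomp H (\<epsilon>i c) (gcomp H g (gcomp H (gcomp H (\<epsilon> b) (\<epsilon>i b)) (gcomp H f (\<epsilon> a))))"
      proof -
        have x1: "gcomp H f (\<epsilon> a) \<in> ghom H (Fo (Go a)) b" using c_comp[OF H] e fg by blast
        have x2: "gcomp H (\<epsilon>i b) (gcomp H f (\<epsilon> a)) \<in> ghom H (Fo (Go a)) (Fo (Go b))" using c_comp[OF H] x1 e by blast
        have "gcomp H (gcomp H (\<epsilon>i c) (gcomp H g (\<epsilon> b))) (gcomp H (\<epsilon>i b) (gcomp H f (\<epsilon> a)))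
           = gcomp H (\<epsilon>i c) (gcomp H (gcomp H g (\<epsilon> b)) (gcomp H (\<epsilon>i b) (gcomp H f (\<epsilon> a))))"
          using c_assoc[OF H x2 c_comp[OF H eph[OF abc(2)] fg(2)] ei(1)[OF abc(3)]] by simp
        also have "gcomp H (gcomp H g (\<epsilon> b)) (gcomp H (\<epsilon>i b) (gcomp H f (\<epsilon> a)))
            = gcomp H g (gcomp H (\<epsilon> b) (gcomp H (\<epsilon>i b) (gcomp H f (\<epsilon> a))))"
          using c_assoc[OF H x2 eph[OF abc(2)] fg(2)] by simp
        also have "gcomp H (\<epsilon> b) (gcomp H (\<epsilon>i b) (gcomp H f (\<epsilon> a))) = gcomp H (gcomp H (\<epsilon> b) (\<epsilon>i b)) (gcomp H f (\<epsilon> a))"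
          using c_assoc[OF H x1 ei(1)[OF abc(2)] eph[OF abc(2)]] by simp
        finally show ?thesis .
      qed
      also have "\<dots> = gcomp H (\<epsilon>i c) (gcomp H g (gcomp H f (\<epsilon> a)))"
        using ei(3)[OF abc(2)] c_idl[OF H c_comp[OF H eph[OF abc(1)] fg(1)]] by simp
      also have "\<dots> = gcomp H (\<epsilon>i c) (gcomp H (gcomp H g f) (\<epsilon> a))"
        using c_assoc[OF H eph[OF abc(1)] fg] by simp
      also have "\<dots> = Fa (Ga (gcomp H g f))" using Ga[OF gf] by simp
      finally show "Fa (Ga (gcomp H g f)) = Fa (gcomp G (Ga g) (Ga f))" by simp
    qed
  qed
  have etaiso: "is_iso G (\<eta> a)" if a: "a \<in> gobs G" for a
  proof -
    have Fa: "Fo a \<in> gobs H" using fun_ob[OF F a] .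
    obtain f' where f': "f' \<in> ghom G (Go (Fo a)) a" "Fa f' = \<epsilon> (Fo a)" using full Go[OF Fa] a by blast
    have ga: "Go (Fo a) \<in> gobs G" using Go[OF Fa] by blast
    show ?thesis
    proof (rule isoI[where g=f'])
      show "\<eta> a \<in> ghom G a (Go (Fo a))" using eta[OF a] by blast
      show "f' \<in> ghom G (Go (Fo a)) a" using f'(1) .
      show "gcomp G f' (\<eta> a) = gide G a"
      proof (rule faith')
        show "gcomp G f' (\<eta> a) \<in> ghom G a a" using c_comp[OF G conjunct1[OF eta[OF a]] f'(1)] .
        show "gide G a \<in> ghom G a a" using c_id[OF G a] .
        have "Fa (gcomp G f' (\<eta> a)) = gcomp H (\<epsilon> (Fo a)) (\<epsilon>i (Fo a))"
          using fun_comp[OF F conjunct1[OF eta[OF a]] f'(1)] f'(2) eta[OF a] by simp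
        also have "\<dots> = Fa (gide G a)" using ei(3)[OF Fa] fun_id[OF F a] by simp
        finally show "Fa (gcomp G f' (\<eta> a)) = Fa (gide G a)" .
      qed
      show "gcomp G (\<eta> a) f' = gide G (Go (Fo a))"
      proof (rule faith')
        show "gcomp G (\<eta> a) f' \<in> ghom G (Go (Fo a)) (Go (Fo a))" using c_comp[OF G f'(1) conjunct1[OF eta[OF a]]] .
        show "gide G (Go (Fo a)) \<in> ghom G (Go (Fo a)) (Go (Fo a))" using c_id[OF G ga] .
        have "Fa (gcomp G (\<eta> a) f') = gcomp H (\<epsilon>i (Fo a)) (\<epsilon> (Fo a))"
          using fun_comp[OF F f'(1) conjunct1[OF eta[OF a]]] f'(2) eta[OF a] by simp
        also have "\<dots> = Fa (gide G (Go (Fo a)))" using ei(2)[OF Fa] fun_id[OF F ga] by simp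
        finally show "Fa (gcomp G (\<eta> a) f') = Fa (gide G (Go (Fo a)))" .
      qed
    qed
  qed
  show ?thesis unfolding grpd_weq_def
  proof (intro conjI exI[of _ Go] exI[of _ Ga] exI[of _ \<eta>] exI[of _ \<epsilon>])
    show "is_functor G H Fo Fa" by fact
    show "is_functor H G Go Ga" by fact
    show "\<forall>a\<in>gobs G. \<eta> a \<in> ghom G a (Go (Fo a)) \<and> is_iso G (\<eta> a)" using eta etaiso by blast
    show "\<forall>b\<in>gobs H. \<epsilon> b \<in> ghom H (Fo (Go b)) b \<and> is_iso H (\<epsilon> b)" using Go by blast
    show "\<forall>f\<in>garrs G. gcomp G (\<eta> (gcod G f)) f = gcomp G (Ga (Fa f)) (\<eta> (gdom G f))"
    proof
      fix f assume "f \<in> garrs G"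
      then obtain a a' where f: "f \<in> ghom G a a'" and fd: "gdom G f = a" "gcod G f = a'" by (auto simp: ghom_def)
      have a: "a \<in> gobs G" "a' \<in> gobs G" using c_dom[OF G f] c_cod[OF G f] by auto
      have Fa: "Fo a \<in> gobs H" "Fo a' \<in> gobs H" using fun_ob[OF F] a by blast+
      note e = eta[OF a(1)] eta[OF a(2)] ei[OF Fa(1)] ei[OF Fa(2)] Go[OF Fa(1)] Go[OF Fa(2)]
      have Ff: "Fa f \<in> ghom H (Fo a) (Fo a')" using fun_ar[OF F f] .
      note GFf = Ga[OF Ff]
      have "gcomp G (\<eta> a') f = gcomp G (Ga (Fa f)) (\<eta> a)"
      proof (rule faith')
        show "gcomp G (\<eta> a') f \<in> ghom G a (Go (Fo a'))" using c_comp[OF G] f e by blast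
        show "gcomp G (Ga (Fa f)) (\<eta> a) \<in> ghom G a (Go (Fo a'))" using c_comp[OF G] GFf e by blast
        have "Fa (gcomp G (Ga (Fa f)) (\<eta> a)) = gcomp H (gcomp H (\<epsilon>i (Fo a')) (gcomp H (Fa f) (\<epsilon> (Fo a)))) (\<epsilon>i (Fo a))"
          using fun_comp[OF F conjunct1[OF eta[OF a(1)]] conjunct1[OF GFf]] GFf eta[OF a(1)] by simp
        also have "\<dots> = gcomp H (\<epsilon>i (Fo a')) (gcomp H (gcomp H (Fa f) (\<epsilon> (Fo a))) (\<epsilon>i (Fo a)))"
          using c_assoc[OF H ei(1)[OF Fa(1)] c_comp[OF H eph[OF Fa(1)] Ff] ei(1)[OF Fa(2)]] by simp
        also have "gcomp H (gcomp H (Fa f) (\<epsilon> (Fo a))) (\<epsilon>i (Fo a)) = gcomp H (Fa f) (gcomp H (\<epsilon> (Fo a)) (\<epsilon>i (Fo a)))"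
          using c_assoc[OF H ei(1)[OF Fa(1)] eph[OF Fa(1)] Ff] by simp
        also have "\<dots> = Fa f" using ei(3)[OF Fa(1)] c_idr[OF H Ff] by simp
        also have "gcomp H (\<epsilon>i (Fo a')) (Fa f) = Fa (gcomp G (\<eta> a') f)"
          using fun_comp[OF F f conjunct1[OF eta[OF a(2)]]] eta[OF a(2)] by simp
        finally show "Fa (gcomp G (\<eta> a') f) = Fa (gcomp G (Ga (Fa f)) (\<eta> a))" by simp
      qed
      then show "gcomp G (\<eta> (gcod G f)) f = gcomp G (Ga (Fa f)) (\<eta> (gdom G f))" using fd by simp
    qed
    show "\<forall>g\<in>garrs H. gcomp H (\<epsilon> (gcod H g)) (Fa (Ga g)) = gcomp H g (\<epsilon> (gdom H g))"
    proof
      fix g assume "g \<in> garrs H"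
      then obtain b b' where g: "g \<in> ghom H b b'" and gd: "gdom H g = b" "gcod H g = b'" by (auto simp: ghom_def)
      have b: "b \<in> gobs H" "b' \<in> gobs H" using c_dom[OF H g] c_cod[OF H g] by auto
      note e = ei[OF b(1)] ei[OF b(2)] Go[OF b(1)] Go[OF b(2)]
      have x: "gcomp H g (\<epsilon> b) \<in> ghom H (Fo (Go b)) b'" using c_comp[OF H] g e by blast
      have "gcomp H (\<epsilon> b') (Fa (Ga g)) = gcomp H (\<epsilon> b') (gcomp H (\<epsilon>i b') (gcomp H g (\<epsilon> b)))"
        using Ga[OF g] by simp
      also have "\<dots> = gcomp H (gcomp H (\<epsilon> b') (\<epsilon>i b')) (gcomp H g (\<epsilon> b))"
        using c_assoc[OF H x ei(1)[OF b(2)] eph[OF b(2)]] by simp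
      also have "\<dots> = gcomp H g (\<epsilon> b)" using ei(3)[OF b(2)] c_idl[OF H x] by simp
      finally show "gcomp H (\<epsilon> (gcod H g)) (Fa (Ga g)) = gcomp H g (\<epsilon> (gdom H g))" using gd by simp
    qed
  qed
qed


definition psets :: "('o,'m) gcat \<Rightarrow> ('o \<Rightarrow> 'v set) \<Rightarrow> ('m \<Rightarrow> 'v \<Rightarrow> 'v) \<Rightarrow> bool" where
  "psets C A r \<longleftrightarrow> (\<forall>f\<in>garrs C. \<forall>s\<in>A (gcod C f). r f s \<in> A (gdom C f)) \<and>
     (\<forall>U\<in>gobs C. \<forall>s\<in>A U. r (gide C U) s = s) \<and>
     (\<forall>f\<in>garrs C. \<forall>g\<in>garrs C. gcod C f = gdom C g \<longrightarrow> (\<forall>s\<in>A (gcod C g). r (gcomp C g f) s = r f (r g s)))"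

lemma ps_res: "psets C A r \<Longrightarrow> g \<in> ghom C W U \<Longrightarrow> a \<in> A U \<Longrightarrow> r g a \<in> A W"
  unfolding psets_def ghom_def by auto
lemma ps_id: "psets C A r \<Longrightarrow> U \<in> gobs C \<Longrightarrow> a \<in> A U \<Longrightarrow> r (gide C U) a = a"
  unfolding psets_def by auto
lemma ps_comp: "psets C A r \<Longrightarrow> k \<in> ghom C W' W \<Longrightarrow> g \<in> ghom C W U \<Longrightarrow> a \<in> A U \<Longrightarrow>
   r (gcomp C g k) a = r k (r g a)"
  unfolding psets_def ghom_def by auto

locale flatpt =
  fixes C :: "('o,'m) gcat" and u :: "('o,'m,'x) setfunctor"
  assumes cat: "category C" and fl: "flat C u"
begin

definition rf where
  "rf W z g U x \<longleftrightarrow> W \<in> gobs C \<and> z \<in> sob u W \<and> g \<in> ghom C W U \<and> sar u g z = x"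

lemma sf: "set_functor C u" using fl unfolding flat_def by blast

lemma sf_res: "g \<in> ghom C W U \<Longrightarrow> z \<in> sob u W \<Longrightarrow> sar u g z \<in> sob u U"
  using sf unfolding set_functor_def ghom_def by auto

lemma rf_el: "rf W z g U x \<Longrightarrow> U \<in> gobs C \<and> x \<in> sob u U \<and> W \<in> gobs C \<and> z \<in> sob u W \<and> g \<in> ghom C W U"
  unfolding rf_def using sf_res c_cod[OF cat] by blast

lemma rf_id: "U \<in> gobs C \<Longrightarrow> x \<in> sob u U \<Longrightarrow> rf U x (gide C U) U x"
  unfolding rf_def using c_id[OF cat] sf unfolding set_functor_def by auto

lemma rf_trans: "rf W z g U x \<Longrightarrow> rf W' z' k W z \<Longrightarrow> rf W' z' (gcomp C g k) U x"
  unfolding rf_def using c_comp[OF cat] sf unfolding set_functor_def ghom_def by auto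

lemma common: "U \<in> gobs C \<Longrightarrow> V \<in> gobs C \<Longrightarrow> x \<in> sob u U \<Longrightarrow> y \<in> sob u V \<Longrightarrow>
   \<exists>W z g h. rf W z g U x \<and> rf W z h V y"
  using fl unfolding flat_def rf_def by blast

lemma equalize: "rf W z g U x \<Longrightarrow> rf W z h U x \<Longrightarrow> \<exists>W' z' k. rf W' z' k W z \<and> gcomp C g k = gcomp C h k"
  using fl unfolding flat_def rf_def by metis

context fixes A :: "'o \<Rightarrow> 'v set" and r :: "'m \<Rightarrow> 'v \<Rightarrow> 'v" assumes P: "psets C A r"
begin

abbreviation "ceq \<equiv> colim_eq C u A r"
abbreviation "cl \<equiv> colim_class C u A r"
abbreviation "car \<equiv> colim_carrier C u A"

lemma car_iff: "(U,x,a) \<in> car \<longleftrightarrow> U \<in> gobs C \<and> x \<in> sob u U \<and> a \<in> A U"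
  unfolding colim_carrier_def by simp

lemma ceq_refl: "ceq p p" unfolding colim_eq_def by simp
lemma ceq_sym: "ceq p q \<Longrightarrow> ceq q p"
  unfolding colim_eq_def
proof (induction rule: rtranclp_induct)
  case base then show ?case by simp
next
  case (step y z) then show ?case by (metis (mono_tags, lifting) converse_rtranclp_into_rtranclp)
qed
lemma ceq_trans: "ceq p q \<Longrightarrow> ceq q s \<Longrightarrow> ceq p s"
  unfolding colim_eq_def by (rule rtranclp_trans)

lemma cl_eq_iff: "q \<in> car \<Longrightarrow> cl p = cl q \<longleftrightarrow> ceq p q"
proof
  assume "q \<in> car" "cl p = cl q"
  then have "q \<in> cl p" unfolding colim_class_def using ceq_refl by auto
  then show "ceq p q" unfolding colim_class_def by auto
next
  assume "ceq p q"
  then show "cl p = cl q" unfolding colim_class_def using ceq_sym ceq_trans by blast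
qed

lemma cl_res: assumes "rf W z g U x" "a \<in> A U" shows "cl (U,x,a) = cl (W,z,r g a)"
proof -
  have "colim_step C u A r (U,x,a) (W,z,r g a)"
    unfolding colim_step_def using assms rf_el[OF assms(1)] unfolding rf_def by blast
  then have "ceq (U,x,a) (W,z,r g a)" unfolding colim_eq_def by auto
  moreover have "(W,z,r g a) \<in> car" using car_iff rf_el[OF assms(1)] ps_res[OF P _ assms(2)] by blast
  ultimately show ?thesis using cl_eq_iff by blast
qed

definition R where "R p q \<longleftrightarrow> (case p of (U,x,a) \<Rightarrow> case q of (V,y,b) \<Rightarrow>
   (\<exists>W z g h. rf W z g U x \<and> rf W z h V y \<and> a \<in> A U \<and> b \<in> A V \<and> r g a = r h b))"

lemma R_sym: "R p q \<Longrightarrow> R q p" unfolding R_def by (auto split: prod.splits) metis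

lemma R_refl: "p \<in> car \<Longrightarrow> R p p"
proof -
  assume "p \<in> car"
  then obtain U x a where p: "p = (U,x,a)" "U \<in> gobs C" "x \<in> sob u U" "a \<in> A U"
    unfolding colim_carrier_def by auto
  show ?thesis unfolding R_def p using rf_id[OF p(2,3)] p by blast
qed

lemma R_trans: assumes "R p q" "R q s" shows "R p s"
proof -
  obtain U x a where p: "p = (U,x,a)" by (cases p) auto
  obtain V y b where q: "q = (V,y,b)" by (cases q) auto
  obtain S t c where s: "s = (S,t,c)" by (cases s) auto
  from assms(1) obtain W1 z1 g1 h1 where 1: "rf W1 z1 g1 U x" "rf W1 z1 h1 V y" "a \<in> A U" "b \<in> A V" "r g1 a = r h1 b"
    unfolding R_def p q by auto
  from assms(2) obtain W2 z2 g2 h2 where 2: "rf W2 z2 g2 V y" "rf W2 z2 h2 S t" "b \<in> A V" "c \<in> A S" "r g2 b = r h2 c"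
    unfolding R_def s q by auto
  obtain W3 z3 k1 k2 where 3: "rf W3 z3 k1 W1 z1" "rf W3 z3 k2 W2 z2"
    using common rf_el[OF 1(1)] rf_el[OF 2(1)] by blast
  have "rf W3 z3 (gcomp C h1 k1) V y" "rf W3 z3 (gcomp C g2 k2) V y"
    using rf_trans 1 2 3 by blast+
  then obtain W4 z4 m where 4: "rf W4 z4 m W3 z3" "gcomp C (gcomp C h1 k1) m = gcomp C (gcomp C g2 k2) m"
    using equalize by blast
  have e: "g1 \<in> ghom C W1 U" "h1 \<in> ghom C W1 V" "g2 \<in> ghom C W2 V" "h2 \<in> ghom C W2 S"
      "k1 \<in> ghom C W3 W1" "k2 \<in> ghom C W3 W2" "m \<in> ghom C W4 W3"
    using rf_el 1 2 3 4 by blast+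
  have k1m: "gcomp C k1 m \<in> ghom C W4 W1" and k2m: "gcomp C k2 m \<in> ghom C W4 W2" using c_comp[OF cat] e by blast+
  have "r (gcomp C g1 (gcomp C k1 m)) a = r (gcomp C k1 m) (r g1 a)" using ps_comp[OF P k1m e(1) 1(3)] .
  also have "\<dots> = r (gcomp C h1 (gcomp C k1 m)) b" using ps_comp[OF P k1m e(2) 1(4)] 1(5) by simp
  also have "gcomp C h1 (gcomp C k1 m) = gcomp C g2 (gcomp C k2 m)"
    using c_assoc[OF cat e(7) e(5) e(2)] c_assoc[OF cat e(7) e(6) e(3)] 4(2) by simp
  also have "r (gcomp C g2 (gcomp C k2 m)) b = r (gcomp C k2 m) (r g2 b)" using ps_comp[OF P k2m e(3) 1(4)] .
  also have "\<dots> = r (gcomp C h2 (gcomp C k2 m)) c" using ps_comp[OF P k2m e(4) 2(4)] 2(5) by simp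
  finally have eq: "r (gcomp C g1 (gcomp C k1 m)) a = r (gcomp C h2 (gcomp C k2 m)) c" .
  have "rf W4 z4 (gcomp C g1 (gcomp C k1 m)) U x" using rf_trans 1(1) 3(1) 4(1) by blast
  moreover have "rf W4 z4 (gcomp C h2 (gcomp C k2 m)) S t" using rf_trans 2(2) 3(2) 4(1) by blast
  ultimately show ?thesis unfolding R_def p s using eq 1(3) 2(4) by auto
qed

lemma step_R: "colim_step C u A r p q \<Longrightarrow> R p q"
proof -
  assume "colim_step C u A r p q"
  then obtain U x a V y g where pq: "p = (U,x,a)" "q = (V,y,r g a)" "U \<in> gobs C" "x \<in> sob u U" "a \<in> A U"
    "g \<in> ghom C V U" "y \<in> sob u V" "sar u g y = x" unfolding colim_step_def by blast
  have V: "V \<in> gobs C" using c_dom[OF cat pq(6)] .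
  have "rf V y g U x" unfolding rf_def using pq V by blast
  moreover have "rf V y (gide C V) V y" using rf_id V pq by blast
  moreover have "r g a \<in> A V" using ps_res[OF P pq(6,5)] .
  ultimately show ?thesis unfolding R_def pq using ps_id[OF P V] pq(5)
    apply simp apply (rule exI[of _ V], rule exI[of _ y], rule exI[of _ g], rule conjI, assumption, rule exI[of _ "gide C V"]) by simp
qed

lemma ceq_R: "ceq p q \<Longrightarrow> p \<in> car \<Longrightarrow> R p q"
  unfolding colim_eq_def
proof (induction rule: rtranclp_induct)
  case base then show ?case using R_refl by blast
next
  case (step y z) then show ?case using R_trans R_sym step_R by blast
qed

lemma same_stage: assumes "cl (U,x,a) = cl (U,x,b)" "U \<in> gobs C" "x \<in> sob u U" "a \<in> A U" "b \<in> A U"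
  shows "\<exists>W z k. rf W z k U x \<and> r k a = r k b"
proof -
  have "ceq (U,x,a) (U,x,b)" using assms cl_eq_iff car_iff by blast
  then have "R (U,x,a) (U,x,b)" using ceq_R car_iff assms by blast
  then obtain W z g h where 1: "rf W z g U x" "rf W z h U x" "r g a = r h b" unfolding R_def by auto
  obtain W' z' m where 2: "rf W' z' m W z" "gcomp C g m = gcomp C h m" using equalize[OF 1(1,2)] by blast
  have e: "g \<in> ghom C W U" "h \<in> ghom C W U" "m \<in> ghom C W' W" using rf_el 1 2 by blast+
  have "r (gcomp C g m) a = r (gcomp C g m) b"
    using ps_comp[OF P e(3) e(1) assms(4)] ps_comp[OF P e(3) e(2) assms(5)] 1(3) 2(2) by simp
  then show ?thesis using rf_trans[OF 1(1) 2(1)] by blast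
qed

lemma two_eq: assumes "cl (U,x,a) = cl (V,y,a')" "cl (U,x,b) = cl (V,y,b')"
    "U \<in> gobs C" "x \<in> sob u U" "V \<in> gobs C" "y \<in> sob u V" "a \<in> A U" "b \<in> A U" "a' \<in> A V" "b' \<in> A V"
  shows "\<exists>W z g h. rf W z g U x \<and> rf W z h V y \<and> r g a = r h a' \<and> r g b = r h b'"
proof -
  obtain W0 z0 g0 h0 where 0: "rf W0 z0 g0 U x" "rf W0 z0 h0 V y" using common assms(3-6) by blast
  have e0: "g0 \<in> ghom C W0 U" "h0 \<in> ghom C W0 V" "W0 \<in> gobs C" "z0 \<in> sob u W0" using rf_el 0 by blast+
  have "cl (W0,z0,r g0 a) = cl (W0,z0,r h0 a')" using cl_res[OF 0(1) assms(7)] cl_res[OF 0(2) assms(9)] assms(1) by simp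
  then obtain W1 z1 k where 1: "rf W1 z1 k W0 z0" "r k (r g0 a) = r k (r h0 a')"
    using same_stage[OF _ e0(3,4) ps_res[OF P e0(1) assms(7)] ps_res[OF P e0(2) assms(9)]] by blast
  have e1: "k \<in> ghom C W1 W0" "W1 \<in> gobs C" "z1 \<in> sob u W1" using rf_el 1 by blast+
  have "cl (W1,z1,r k (r g0 b)) = cl (W1,z1,r k (r h0 b'))"
    using cl_res[OF 0(1) assms(8)] cl_res[OF 0(2) assms(10)] assms(2)
      cl_res[OF 1(1) ps_res[OF P e0(1) assms(8)]] cl_res[OF 1(1) ps_res[OF P e0(2) assms(10)]] by simp
  then obtain W2 z2 m where 2: "rf W2 z2 m W1 z1" "r m (r k (r g0 b)) = r m (r k (r h0 b'))"
    using same_stage[OF _ e1(2,3) ps_res[OF P e1(1) ps_res[OF P e0(1) assms(8)]] ps_res[OF P e1(1) ps_res[OF P e0(2) assms(10)]]] by blast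
  have e2: "m \<in> ghom C W2 W1" using rf_el 2 by blast
  have km: "gcomp C k m \<in> ghom C W2 W0" using c_comp[OF cat e2 e1(1)] .
  have "r (gcomp C g0 (gcomp C k m)) a = r (gcomp C h0 (gcomp C k m)) a'"
    using ps_comp[OF P km e0(1) assms(7)] ps_comp[OF P km e0(2) assms(9)]
      ps_comp[OF P e2 e1(1) ps_res[OF P e0(1) assms(7)]] ps_comp[OF P e2 e1(1) ps_res[OF P e0(2) assms(9)]] 1(2) by simp
  moreover have "r (gcomp C g0 (gcomp C k m)) b = r (gcomp C h0 (gcomp C k m)) b'"
    using ps_comp[OF P km e0(1) assms(8)] ps_comp[OF P km e0(2) assms(10)]
      ps_comp[OF P e2 e1(1) ps_res[OF P e0(1) assms(8)]] ps_comp[OF P e2 e1(1) ps_res[OF P e0(2) assms(10)]] 2(2) by simp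
  moreover have "rf W2 z2 (gcomp C g0 (gcomp C k m)) U x" "rf W2 z2 (gcomp C h0 (gcomp C k m)) V y"
    using rf_trans 0 rf_trans[OF 1(1) 2(1)] by blast+
  ultimately show ?thesis by blast
qed

lemma rf_res_comp: "rf W z g U x \<Longrightarrow> rf W' z' k W z \<Longrightarrow> a \<in> A U \<Longrightarrow> r (gcomp C g k) a = r k (r g a)"
  using ps_comp[OF P] rf_el by blast

lemma some_rep: assumes "p \<in> car" shows "(SOME t. t \<in> cl p) \<in> car" "cl (SOME t. t \<in> cl p) = cl p"
proof -
  have "p \<in> cl p" unfolding colim_class_def using assms ceq_refl by blast
  then have "(SOME t. t \<in> cl p) \<in> cl p" by (rule someI)
  then show "(SOME t. t \<in> cl p) \<in> car" "cl (SOME t. t \<in> cl p) = cl p"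
    unfolding colim_class_def using cl_eq_iff ceq_sym unfolding colim_class_def by blast+
qed

end

lemma ceq_nat:
  assumes "colim_eq C u A r p q"
    and \<phi>A: "\<And>U a. U \<in> gobs C \<Longrightarrow> a \<in> A U \<Longrightarrow> \<phi> U a \<in> B U"
    and nat: "\<And>g a V U. g \<in> ghom C V U \<Longrightarrow> a \<in> A U \<Longrightarrow> \<phi> V (r g a) = r' g (\<phi> U a)"
  shows "colim_eq C u B r' (case p of (U,x,a) \<Rightarrow> (U,x,\<phi> U a)) (case q of (U,x,a) \<Rightarrow> (U,x,\<phi> U a))"
proof -
  let ?m = "\<lambda>p. case p of (U,x,a) \<Rightarrow> (U,x,\<phi> U a)"
  have st: "colim_step C u B r' (?m p) (?m q)" if "colim_step C u A r p q" for p q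
  proof -
    from that obtain U x a V y g where pq: "p = (U,x,a)" "q = (V,y,r g a)" "U \<in> gobs C" "x \<in> sob u U" "a \<in> A U"
      "g \<in> ghom C V U" "y \<in> sob u V" "sar u g y = x" unfolding colim_step_def by blast
    show ?thesis unfolding colim_step_def pq using pq \<phi>A nat by auto
  qed
  from assms(1) show ?thesis unfolding colim_eq_def
  proof (induction rule: rtranclp_induct)
    case base then show ?case by simp
  next
    case (step y z)
    from step.hyps(2) have "colim_step C u B r' (?m y) (?m z) \<or> colim_step C u B r' (?m z) (?m y)"
      using st by blast
    then show ?case using rtranclp.rtrancl_into_rtrancl[OF step.IH] by blast
  qed
qed

end


definition pcat :: "('o,'m) gcat \<Rightarrow> ('o,'m,'a,'b) pgrpd \<Rightarrow> bool" where
  "pcat C X \<longleftrightarrow>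
     (\<forall>U\<in>gobs C. category (psec X U)) \<and>
     (\<forall>f\<in>garrs C. is_functor (psec X (gcod C f)) (psec X (gdom C f)) (prob X f) (prar X f)) \<and>
     (\<forall>U\<in>gobs C. (\<forall>a\<in>gobs (psec X U). prob X (gide C U) a = a) \<and>
                  (\<forall>\<alpha>\<in>garrs (psec X U). prar X (gide C U) \<alpha> = \<alpha>)) \<and>
     (\<forall>f\<in>garrs C. \<forall>g\<in>garrs C. gcod C f = gdom C g \<longrightarrow>
        (\<forall>a\<in>gobs (psec X (gcod C g)). prob X (gcomp C g f) a = prob X f (prob X g a)) \<and>
        (\<forall>\<alpha>\<in>garrs (psec X (gcod C g)). prar X (gcomp C g f) \<alpha> = prar X f (prar X g \<alpha>)))"

lemma pg_pcat: "presheaf_of_groupoids C X \<Longrightarrow> pcat C X"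
  unfolding presheaf_of_groupoids_def pcat_def groupoid_def by blast

context flatpt begin

context fixes X :: "('o,'m,'a,'b) pgrpd" assumes X: "pcat C X"
begin

lemma Xcat: "U \<in> gobs C \<Longrightarrow> category (psec X U)"
  using X unfolding pcat_def by blast
lemma Xfun: "g \<in> ghom C W U \<Longrightarrow> is_functor (psec X U) (psec X W) (prob X g) (prar X g)"
  using X unfolding pcat_def ghom_def by blast

lemma Pob: "psets C (\<lambda>U. gobs (psec X U)) (prob X)"
  unfolding psets_def using X unfolding pcat_def is_functor_def by blast
lemma Par: "psets C (\<lambda>U. garrs (psec X U)) (prar X)"
  unfolding psets_def using X unfolding pcat_def is_functor_def ghom_def by blast

abbreviation "oc U x a \<equiv> stalk_ob_cls C u X (U,x,a)"
abbreviation "ac U x a \<equiv> stalk_ar_cls C u X (U,x,a)"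
abbreviation "SX \<equiv> stalk C u X"

lemma st_ob: "P \<in> gobs SX \<longleftrightarrow> (\<exists>U x a. U \<in> gobs C \<and> x \<in> sob u U \<and> a \<in> gobs (psec X U) \<and> P = oc U x a)"
  unfolding stalk_def stalk_ob_cls_def colim_set_def colim_carrier_def by auto
lemma st_ar: "A \<in> garrs SX \<longleftrightarrow> (\<exists>U x a. U \<in> gobs C \<and> x \<in> sob u U \<and> a \<in> garrs (psec X U) \<and> A = ac U x a)"
  unfolding stalk_def stalk_ar_cls_def colim_set_def colim_carrier_def by auto

lemma oc_res: "rf W z g U x \<Longrightarrow> a \<in> gobs (psec X U) \<Longrightarrow> oc U x a = oc W z (prob X g a)"
  unfolding stalk_ob_cls_def using cl_res[OF Pob] by blast
lemma ac_res: "rf W z g U x \<Longrightarrow> a \<in> garrs (psec X U) \<Longrightarrow> ac U x a = ac W z (prar X g a)"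
  unfolding stalk_ar_cls_def using cl_res[OF Par] by blast

lemma oc_same: "oc U x a = oc U x b \<Longrightarrow> U \<in> gobs C \<Longrightarrow> x \<in> sob u U \<Longrightarrow> a \<in> gobs (psec X U) \<Longrightarrow> b \<in> gobs (psec X U)
  \<Longrightarrow> \<exists>W z k. rf W z k U x \<and> prob X k a = prob X k b"
  unfolding stalk_ob_cls_def using same_stage[OF Pob] by blast
lemma ac_same: "ac U x a = ac U x b \<Longrightarrow> U \<in> gobs C \<Longrightarrow> x \<in> sob u U \<Longrightarrow> a \<in> garrs (psec X U) \<Longrightarrow> b \<in> garrs (psec X U)
  \<Longrightarrow> \<exists>W z k. rf W z k U x \<and> prar X k a = prar X k b"
  unfolding stalk_ar_cls_def using same_stage[OF Par] by blast

lemma res_hom: "rf W z k U x \<Longrightarrow> \<alpha> \<in> ghom (psec X U) a b \<Longrightarrow> prar X k \<alpha> \<in> ghom (psec X W) (prob X k a) (prob X k b)"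
  using fun_ar[OF Xfun] rf_el by blast
lemma res_ob: "rf W z k U x \<Longrightarrow> a \<in> gobs (psec X U) \<Longrightarrow> prob X k a \<in> gobs (psec X W)"
  using fun_ob[OF Xfun] rf_el by blast
lemma res_ar: "rf W z k U x \<Longrightarrow> a \<in> garrs (psec X U) \<Longrightarrow> prar X k a \<in> garrs (psec X W)"
  using res_hom[of W z k U x a "gdom (psec X U) a" "gcod (psec X U) a"] by (simp add: ghom_def)
lemma res_comp: "rf W z k U x \<Longrightarrow> \<alpha> \<in> ghom (psec X U) a b \<Longrightarrow> \<beta> \<in> ghom (psec X U) b c \<Longrightarrow>
   prar X k (gcomp (psec X U) \<beta> \<alpha>) = gcomp (psec X W) (prar X k \<beta>) (prar X k \<alpha>)"
  using fun_comp[OF Xfun] rf_el by blast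
lemma res_id: "rf W z k U x \<Longrightarrow> a \<in> gobs (psec X U) \<Longrightarrow> prar X k (gide (psec X U) a) = gide (psec X W) (prob X k a)"
  using fun_id[OF Xfun] rf_el by blast

lemma ar_hom: "U \<in> gobs C \<Longrightarrow> \<alpha> \<in> garrs (psec X U) \<Longrightarrow> \<alpha> \<in> ghom (psec X U) (gdom (psec X U) \<alpha>) (gcod (psec X U) \<alpha>)"
  by (simp add: ghom_def)
lemma ar_dom: "U \<in> gobs C \<Longrightarrow> \<alpha> \<in> garrs (psec X U) \<Longrightarrow> gdom (psec X U) \<alpha> \<in> gobs (psec X U)"
  using c_dom[OF Xcat ar_hom] by blast
lemma ar_cod: "U \<in> gobs C \<Longrightarrow> \<alpha> \<in> garrs (psec X U) \<Longrightarrow> gcod (psec X U) \<alpha> \<in> gobs (psec X U)"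
  using c_cod[OF Xcat ar_hom] by blast
lemma nat_dom: "g \<in> ghom C V U \<Longrightarrow> \<alpha> \<in> garrs (psec X U) \<Longrightarrow> gdom (psec X V) (prar X g \<alpha>) = prob X g (gdom (psec X U) \<alpha>)"
  using fun_ar[OF Xfun, of g V U \<alpha>] by (simp add: ghom_def)
lemma nat_cod: "g \<in> ghom C V U \<Longrightarrow> \<alpha> \<in> garrs (psec X U) \<Longrightarrow> gcod (psec X V) (prar X g \<alpha>) = prob X g (gcod (psec X U) \<alpha>)"
  using fun_ar[OF Xfun, of g V U \<alpha>] by (simp add: ghom_def)

lemma ceq_ar_iff: "(V,y,\<beta>) \<in> colim_carrier C u (\<lambda>U. garrs (psec X U)) \<Longrightarrow>
   ac U x \<alpha> = ac V y \<beta> \<longleftrightarrow> colim_eq C u (\<lambda>U. garrs (psec X U)) (prar X) (U,x,\<alpha>) (V,y,\<beta>)"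
  unfolding stalk_ar_cls_def using cl_eq_iff[OF Par] by blast

lemma st_dom: assumes "U \<in> gobs C" "x \<in> sob u U" "\<alpha> \<in> garrs (psec X U)"
  shows "gdom SX (ac U x \<alpha>) = oc U x (gdom (psec X U) \<alpha>)"
    and "gcod SX (ac U x \<alpha>) = oc U x (gcod (psec X U) \<alpha>)"
proof -
  let ?t = "SOME t. t \<in> ac U x \<alpha>"
  have car: "(U,x,\<alpha>) \<in> colim_carrier C u (\<lambda>U. garrs (psec X U))" using car_iff[OF Par] assms by blast
  obtain V y \<beta> where t: "?t = (V,y,\<beta>)" by (cases ?t) auto
  have tc: "(V,y,\<beta>) \<in> colim_carrier C u (\<lambda>U. garrs (psec X U))" "ac V y \<beta> = ac U x \<alpha>"
    using some_rep[OF Par car] t unfolding stalk_ar_cls_def by auto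
  then have ce: "colim_eq C u (\<lambda>U. garrs (psec X U)) (prar X) (U,x,\<alpha>) (V,y,\<beta>)" using ceq_ar_iff[OF tc(1), of U x \<alpha>] tc(2)[symmetric] by blast
  have V: "V \<in> gobs C" "y \<in> sob u V" "\<beta> \<in> garrs (psec X V)" using tc(1) car_iff[OF Par] by auto
  have "colim_eq C u (\<lambda>U. gobs (psec X U)) (prob X) (U,x,gdom (psec X U) \<alpha>) (V,y,gdom (psec X V) \<beta>)"
    using ceq_nat[OF ce, of "\<lambda>U a. gdom (psec X U) a" "\<lambda>U. gobs (psec X U)" "prob X"]
      ar_dom nat_dom by simp
  moreover have "(V,y,gdom (psec X V) \<beta>) \<in> colim_carrier C u (\<lambda>U. gobs (psec X U))"
    using car_iff[OF Pob] V ar_dom by blast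
  ultimately have "oc U x (gdom (psec X U) \<alpha>) = oc V y (gdom (psec X V) \<beta>)"
    unfolding stalk_ob_cls_def using cl_eq_iff[OF Pob, of "(V,y,gdom (psec X V) \<beta>)" "(U,x,gdom (psec X U) \<alpha>)"] by blast
  then show "gdom SX (ac U x \<alpha>) = oc U x (gdom (psec X U) \<alpha>)" unfolding stalk_def using t by simp
  have "colim_eq C u (\<lambda>U. gobs (psec X U)) (prob X) (U,x,gcod (psec X U) \<alpha>) (V,y,gcod (psec X V) \<beta>)"
    using ceq_nat[OF ce, of "\<lambda>U a. gcod (psec X U) a" "\<lambda>U. gobs (psec X U)" "prob X"]
      ar_cod nat_cod by simp
  moreover have "(V,y,gcod (psec X V) \<beta>) \<in> colim_carrier C u (\<lambda>U. gobs (psec X U))"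
    using car_iff[OF Pob] V ar_cod by blast
  ultimately have "oc U x (gcod (psec X U) \<alpha>) = oc V y (gcod (psec X V) \<beta>)"
    unfolding stalk_ob_cls_def using cl_eq_iff[OF Pob, of "(V,y,gcod (psec X V) \<beta>)" "(U,x,gcod (psec X U) \<alpha>)"] by blast
  then show "gcod SX (ac U x \<alpha>) = oc U x (gcod (psec X U) \<alpha>)" unfolding stalk_def using t by simp
qed

lemma ob_mem: "U \<in> gobs C \<Longrightarrow> x \<in> sob u U \<Longrightarrow> a \<in> gobs (psec X U) \<Longrightarrow> oc U x a \<in> gobs SX"
  using st_ob by blast
lemma ar_mem: "U \<in> gobs C \<Longrightarrow> x \<in> sob u U \<Longrightarrow> a \<in> garrs (psec X U) \<Longrightarrow> ac U x a \<in> garrs SX"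
  using st_ar by blast

lemma st_id: assumes "U \<in> gobs C" "x \<in> sob u U" "a \<in> gobs (psec X U)"
  shows "gide SX (oc U x a) = ac U x (gide (psec X U) a)"
proof -
  let ?t = "SOME t. t \<in> oc U x a"
  have car: "(U,x,a) \<in> colim_carrier C u (\<lambda>U. gobs (psec X U))" using car_iff[OF Pob] assms by blast
  obtain V y b where t: "?t = (V,y,b)" by (cases ?t) auto
  have tc: "(V,y,b) \<in> colim_carrier C u (\<lambda>U. gobs (psec X U))" "oc V y b = oc U x a"
    using some_rep[OF Pob car] t unfolding stalk_ob_cls_def by auto
  then have ce: "colim_eq C u (\<lambda>U. gobs (psec X U)) (prob X) (U,x,a) (V,y,b)"
    using cl_eq_iff[OF Pob tc(1), of "(U,x,a)"] tc(2)[symmetric] unfolding stalk_ob_cls_def by blast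
  have V: "V \<in> gobs C" "y \<in> sob u V" "b \<in> gobs (psec X V)" using tc(1) car_iff[OF Pob] by auto
  have "colim_eq C u (\<lambda>U. garrs (psec X U)) (prar X) (U,x,gide (psec X U) a) (V,y,gide (psec X V) b)"
    using ceq_nat[OF ce, of "\<lambda>U a. gide (psec X U) a" "\<lambda>U. garrs (psec X U)" "prar X"]
      c_id[OF Xcat] fun_id[OF Xfun] c_dom[OF cat] by (simp add: ghom_def)
  moreover have "(V,y,gide (psec X V) b) \<in> colim_carrier C u (\<lambda>U. garrs (psec X U))"
    using car_iff[OF Par] V c_id[OF Xcat] by (auto simp: ghom_def)
  ultimately have "ac U x (gide (psec X U) a) = ac V y (gide (psec X V) b)"
    using ceq_ar_iff by blast
  then show ?thesis unfolding stalk_def using t by simp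
qed

lemma self_mem: "U \<in> gobs C \<Longrightarrow> x \<in> sob u U \<Longrightarrow> a \<in> garrs (psec X U) \<Longrightarrow> (U,x,a) \<in> ac U x a"
  unfolding stalk_ar_cls_def colim_class_def using car_iff[OF Par] ceq_refl[OF Par] by blast

lemma mem_ac: "(V,y,b) \<in> ac U x a \<Longrightarrow> (V,y,b) \<in> colim_carrier C u (\<lambda>U. garrs (psec X U)) \<and> ac U x a = ac V y b"
  unfolding stalk_ar_cls_def colim_class_def using cl_eq_iff[OF Par] by blast

lemma st_comp: assumes U: "U \<in> gobs C" "x \<in> sob u U" and ab: "\<alpha> \<in> ghom (psec X U) a b" "\<beta> \<in> ghom (psec X U) b c"
  shows "gcomp SX (ac U x \<beta>) (ac U x \<alpha>) = ac U x (gcomp (psec X U) \<beta> \<alpha>)"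
proof -
  let ?Q = "\<lambda>t. case t of (V,y,\<alpha>',\<beta>') \<Rightarrow> (V,y,\<alpha>') \<in> ac U x \<alpha> \<and> (V,y,\<beta>') \<in> ac U x \<beta> \<and>
      gcod (psec X V) \<alpha>' = gdom (psec X V) \<beta>'"
  have "?Q (U,x,\<alpha>,\<beta>)" using self_mem U ab by (auto simp: ghom_def)
  then have q: "?Q (SOME t. ?Q t)" by (rule someI)
  obtain V y \<alpha>' \<beta>' where t: "(SOME t. ?Q t) = (V,y,\<alpha>',\<beta>')" by (cases "SOME t. ?Q t") auto
  from q t have m: "(V,y,\<alpha>') \<in> ac U x \<alpha>" "(V,y,\<beta>') \<in> ac U x \<beta>" "gcod (psec X V) \<alpha>' = gdom (psec X V) \<beta>'" by auto
  note m1 = mem_ac[OF m(1)] and m2 = mem_ac[OF m(2)]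
  have V: "V \<in> gobs C" "y \<in> sob u V" "\<alpha>' \<in> garrs (psec X V)" "\<beta>' \<in> garrs (psec X V)"
    using m1 m2 car_iff[OF Par] by auto
  have abar: "\<alpha> \<in> garrs (psec X U)" "\<beta> \<in> garrs (psec X U)" using ab by (auto simp: ghom_def)
  obtain W z g h where w: "rf W z g U x" "rf W z h V y" "prar X g \<alpha> = prar X h \<alpha>'" "prar X g \<beta> = prar X h \<beta>'"
    using two_eq[OF Par m1[THEN conjunct2, unfolded stalk_ar_cls_def] m2[THEN conjunct2, unfolded stalk_ar_cls_def] U V(1,2) abar V(3,4)] by blast
  have ab': "\<alpha>' \<in> ghom (psec X V) (gdom (psec X V) \<alpha>') (gdom (psec X V) \<beta>')"
     "\<beta>' \<in> ghom (psec X V) (gdom (psec X V) \<beta>') (gcod (psec X V) \<beta>')" using V m(3) by (auto simp: ghom_def)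
  have cm: "gcomp (psec X U) \<beta> \<alpha> \<in> garrs (psec X U)" using c_comp[OF Xcat[OF U(1)] ab] by (simp add: ghom_def)
  have cm': "gcomp (psec X V) \<beta>' \<alpha>' \<in> garrs (psec X V)" using c_comp[OF Xcat[OF V(1)] ab'] by (simp add: ghom_def)
  have "ac U x (gcomp (psec X U) \<beta> \<alpha>) = ac W z (prar X g (gcomp (psec X U) \<beta> \<alpha>))" using ac_res[OF w(1) cm] .
  also have "\<dots> = ac W z (prar X h (gcomp (psec X V) \<beta>' \<alpha>'))"
    using res_comp[OF w(1) ab] res_comp[OF w(2) ab'] w(3,4) by simp
  also have "\<dots> = ac V y (gcomp (psec X V) \<beta>' \<alpha>')" using ac_res[OF w(2) cm'] by simp
  finally have "ac V y (gcomp (psec X V) \<beta>' \<alpha>') = ac U x (gcomp (psec X U) \<beta> \<alpha>)" by simp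
  then show ?thesis unfolding stalk_def using t by simp
qed

lemma common_stage: assumes "U1 \<in> gobs C" "x1 \<in> sob u U1" "U2 \<in> gobs C" "x2 \<in> sob u U2"
  obtains W z g h where "rf W z g U1 x1" "rf W z h U2 x2"
  using common assms by blast

lemma match: assumes "oc W z a = oc W z b" "W \<in> gobs C" "z \<in> sob u W" "a \<in> gobs (psec X W)" "b \<in> gobs (psec X W)"
  obtains W' z' k where "rf W' z' k W z" "prob X k a = prob X k b"
  using oc_same assms by blast

lemma composable: assumes "A \<in> garrs SX" "B \<in> garrs SX" "gcod SX A = gdom SX B"
  shows "\<exists>U x a b c \<alpha> \<beta>. U \<in> gobs C \<and> x \<in> sob u U \<and> \<alpha> \<in> ghom (psec X U) a b \<and> \<beta> \<in> ghom (psec X U) b c \<and>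
     A = ac U x \<alpha> \<and> B = ac U x \<beta>"
proof -
  obtain U1 x1 \<alpha>1 where 1: "U1 \<in> gobs C" "x1 \<in> sob u U1" "\<alpha>1 \<in> garrs (psec X U1)" "A = ac U1 x1 \<alpha>1" using st_ar[THEN iffD1, OF assms(1)] by blast
  obtain U2 x2 \<beta>1 where 2: "U2 \<in> gobs C" "x2 \<in> sob u U2" "\<beta>1 \<in> garrs (psec X U2)" "B = ac U2 x2 \<beta>1" using st_ar[THEN iffD1, OF assms(2)] by blast
  obtain W z g h where w: "rf W z g U1 x1" "rf W z h U2 x2" using common[OF 1(1) 2(1) 1(2) 2(2)] by blast
  have W: "W \<in> gobs C" "z \<in> sob u W" using rf_el w by blast+
  define \<alpha>0 where "\<alpha>0 = prar X g \<alpha>1"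
  define \<beta>0 where "\<beta>0 = prar X h \<beta>1"
  have a0: "\<alpha>0 \<in> garrs (psec X W)" "\<beta>0 \<in> garrs (psec X W)"
    using res_ar[OF w(1) 1(3)] res_ar[OF w(2) 2(3)] unfolding \<alpha>0_def \<beta>0_def by auto
  have AB: "A = ac W z \<alpha>0" "B = ac W z \<beta>0"
    using ac_res[OF w(1) 1(3)] ac_res[OF w(2) 2(3)] 1(4) 2(4) unfolding \<alpha>0_def \<beta>0_def by auto
  have "oc W z (gcod (psec X W) \<alpha>0) = oc W z (gdom (psec X W) \<beta>0)"
    using assms(3) st_dom[OF W a0(1)] st_dom[OF W a0(2)] AB by simp
  then obtain W' z' k where k: "rf W' z' k W z" "prob X k (gcod (psec X W) \<alpha>0) = prob X k (gdom (psec X W) \<beta>0)"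
    using oc_same[OF _ W ar_cod[OF W(1) a0(1)] ar_dom[OF W(1) a0(2)]] by blast
  have W': "W' \<in> gobs C" "z' \<in> sob u W'" using rf_el k by blast+
  have "prar X k \<alpha>0 \<in> ghom (psec X W') (prob X k (gdom (psec X W) \<alpha>0)) (prob X k (gcod (psec X W) \<alpha>0))"
    using res_hom[OF k(1) ar_hom[OF W(1) a0(1)]] .
  moreover have "prar X k \<beta>0 \<in> ghom (psec X W') (prob X k (gcod (psec X W) \<alpha>0)) (prob X k (gcod (psec X W) \<beta>0))"
    using res_hom[OF k(1) ar_hom[OF W(1) a0(2)]] k(2) by simp
  moreover have "A = ac W' z' (prar X k \<alpha>0)" "B = ac W' z' (prar X k \<beta>0)"
    using ac_res[OF k(1) a0(1)] ac_res[OF k(1) a0(2)] AB by auto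
  ultimately show ?thesis using W'
    by (intro exI[of _ W'] exI[of _ z'] exI[of _ "prob X k (gdom (psec X W) \<alpha>0)"] exI[of _ "prob X k (gcod (psec X W) \<alpha>0)"]
       exI[of _ "prob X k (gcod (psec X W) \<beta>0)"] exI[of _ "prar X k \<alpha>0"] exI[of _ "prar X k \<beta>0"]) auto
qed

lemma ac_hom: assumes "U \<in> gobs C" "x \<in> sob u U" "\<alpha> \<in> ghom (psec X U) a b"
  shows "ac U x \<alpha> \<in> ghom SX (oc U x a) (oc U x b)"
  using st_dom[OF assms(1,2)] ar_mem[OF assms(1,2)] assms(3) by (auto simp: ghom_def)

lemma composable3: assumes "A \<in> garrs SX" "B \<in> garrs SX" "D \<in> garrs SX"
   "gcod SX A = gdom SX B" "gcod SX B = gdom SX D"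
  shows "\<exists>U x a b c d \<alpha> \<beta> \<delta>. U \<in> gobs C \<and> x \<in> sob u U \<and> \<alpha> \<in> ghom (psec X U) a b \<and> \<beta> \<in> ghom (psec X U) b c \<and>
     \<delta> \<in> ghom (psec X U) c d \<and> A = ac U x \<alpha> \<and> B = ac U x \<beta> \<and> D = ac U x \<delta>"
proof -
  obtain U0 x0 a0 b0 c0 \<alpha>0 \<beta>0 where 0: "U0 \<in> gobs C" "x0 \<in> sob u U0" "\<alpha>0 \<in> ghom (psec X U0) a0 b0"
    "\<beta>0 \<in> ghom (psec X U0) b0 c0" "A = ac U0 x0 \<alpha>0" "B = ac U0 x0 \<beta>0"
    using composable[OF assms(1,2,4)] by blast
  obtain U2 x2 \<delta>1 where 2: "U2 \<in> gobs C" "x2 \<in> sob u U2" "\<delta>1 \<in> garrs (psec X U2)" "D = ac U2 x2 \<delta>1"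
    using st_ar[THEN iffD1, OF assms(3)] by blast
  obtain W z g h where w: "rf W z g U0 x0" "rf W z h U2 x2" using common[OF 0(1) 2(1) 0(2) 2(2)] by blast
  have W: "W \<in> gobs C" "z \<in> sob u W" using rf_el w by blast+
  note a1 = res_hom[OF w(1) 0(3)] and b1 = res_hom[OF w(1) 0(4)]
  have d1: "prar X h \<delta>1 \<in> garrs (psec X W)" using res_ar[OF w(2) 2(3)] .
  have AB: "A = ac W z (prar X g \<alpha>0)" "B = ac W z (prar X g \<beta>0)" "D = ac W z (prar X h \<delta>1)"
    using ac_res[OF w(1)] ac_res[OF w(2) 2(3)] 0 2(4) by (auto simp: ghom_def)
  have "gcod SX B = oc W z (prob X g c0)" using AB(2) ac_hom[OF W b1] by (simp add: ghom_def)
  moreover have "gdom SX D = oc W z (gdom (psec X W) (prar X h \<delta>1))" using AB(3) st_dom[OF W d1] by simp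
  ultimately have "oc W z (prob X g c0) = oc W z (gdom (psec X W) (prar X h \<delta>1))" using assms(5) by simp
  moreover have "prob X g c0 \<in> gobs (psec X W)" using c_cod[OF Xcat[OF W(1)] b1] .
  ultimately obtain W' z' k where k: "rf W' z' k W z" "prob X k (prob X g c0) = prob X k (gdom (psec X W) (prar X h \<delta>1))"
    using oc_same[OF _ W _ ar_dom[OF W(1) d1]] by blast
  have W': "W' \<in> gobs C" "z' \<in> sob u W'" using rf_el k by blast+
  note a2 = res_hom[OF k(1) a1] and b2 = res_hom[OF k(1) b1]
  have d2: "prar X k (prar X h \<delta>1) \<in> ghom (psec X W') (prob X k (prob X g c0)) (prob X k (gcod (psec X W) (prar X h \<delta>1)))"
    using res_hom[OF k(1) ar_hom[OF W(1) d1]] k(2) by simp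
  have AB2: "A = ac W' z' (prar X k (prar X g \<alpha>0))" "B = ac W' z' (prar X k (prar X g \<beta>0))"
     "D = ac W' z' (prar X k (prar X h \<delta>1))"
    using ac_res[OF k(1)] AB a1 b1 d1 by (auto simp: ghom_def)
  show ?thesis using W' a2 b2 d2 AB2 by blast
qed

lemma stalk_cat: "category SX"
  unfolding category_def
proof (intro conjI ballI impI)
  fix f assume "f \<in> garrs SX"
  then obtain U x \<alpha> where 1: "U \<in> gobs C" "x \<in> sob u U" "\<alpha> \<in> garrs (psec X U)" "f = ac U x \<alpha>"
    using st_ar[THEN iffD1] by blast
  show "gdom SX f \<in> gobs SX" "gcod SX f \<in> gobs SX"
    using st_dom[OF 1(1-3)] ob_mem[OF 1(1,2)] ar_dom[OF 1(1,3)] ar_cod[OF 1(1,3)] 1(4) by auto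
  have h: "\<alpha> \<in> ghom (psec X U) (gdom (psec X U) \<alpha>) (gcod (psec X U) \<alpha>)" by (simp add: ghom_def 1)
  have cU: "category (psec X U)" using Xcat[OF 1(1)] .
  show "gcomp SX (gide SX (gcod SX f)) f = f" "gcomp SX f (gide SX (gdom SX f)) = f"
    using st_dom[OF 1(1-3)] st_id[OF 1(1,2)] ar_dom[OF 1(1,3)] ar_cod[OF 1(1,3)] 1(4)
      st_comp[OF 1(1,2) h c_id[OF cU ar_cod[OF 1(1,3)]]] st_comp[OF 1(1,2) c_id[OF cU ar_dom[OF 1(1,3)]] h]
      c_idl[OF cU h] c_idr[OF cU h] by simp_all
next
  fix a assume "a \<in> gobs SX"
  then obtain U x b where 1: "U \<in> gobs C" "x \<in> sob u U" "b \<in> gobs (psec X U)" "a = oc U x b"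
    using st_ob[THEN iffD1] by blast
  show "gide SX a \<in> ghom SX a a"
    using st_id[OF 1(1-3)] ac_hom[OF 1(1,2) c_id[OF Xcat[OF 1(1)] 1(3)]] 1(4) by simp
next
  fix f g assume fg: "f \<in> garrs SX" "g \<in> garrs SX" "gcod SX f = gdom SX g"
  then obtain U x a b c \<alpha> \<beta> where 1: "U \<in> gobs C" "x \<in> sob u U" "\<alpha> \<in> ghom (psec X U) a b" "\<beta> \<in> ghom (psec X U) b c"
    "f = ac U x \<alpha>" "g = ac U x \<beta>" using composable[OF fg] by blast
  show "gcomp SX g f \<in> ghom SX (gdom SX f) (gcod SX g)"
    using st_comp[OF 1(1-4)] ac_hom[OF 1(1,2) c_comp[OF Xcat[OF 1(1)] 1(3,4)]] ac_hom[OF 1(1,2,3)] ac_hom[OF 1(1,2,4)] 1(5,6)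
    by (simp add: ghom_def)
next
  fix f g h assume fgh: "f \<in> garrs SX" "g \<in> garrs SX" "h \<in> garrs SX"
    "gcod SX f = gdom SX g" "gcod SX g = gdom SX h"
  then obtain U x a b c d \<alpha> \<beta> \<delta> where 1: "U \<in> gobs C" "x \<in> sob u U" "\<alpha> \<in> ghom (psec X U) a b" "\<beta> \<in> ghom (psec X U) b c"
     "\<delta> \<in> ghom (psec X U) c d" "f = ac U x \<alpha>" "g = ac U x \<beta>" "h = ac U x \<delta>"
    using composable3[OF fgh] by blast
  have cU: "category (psec X U)" using Xcat[OF 1(1)] .
  show "gcomp SX h (gcomp SX g f) = gcomp SX (gcomp SX h g) f"
    using st_comp[OF 1(1-4)] st_comp[OF 1(1,2,4,5)] st_comp[OF 1(1,2) c_comp[OF cU 1(3,4)] 1(5)]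
      st_comp[OF 1(1,2,3) c_comp[OF cU 1(4,5)]] c_assoc[OF cU 1(3-5)] 1(6-8) by simp
qed


lemma H1: assumes "A \<in> garrs SX" "U \<in> gobs C" "x \<in> sob u U"
  shows "\<exists>W z g \<alpha>. rf W z g U x \<and> \<alpha> \<in> garrs (psec X W) \<and> A = ac W z \<alpha>"
proof -
  obtain V y \<alpha> where 1: "V \<in> gobs C" "y \<in> sob u V" "\<alpha> \<in> garrs (psec X V)" "A = ac V y \<alpha>"
    using st_ar[THEN iffD1, OF assms(1)] by blast
  obtain W z g h where w: "rf W z g U x" "rf W z h V y" using common[OF assms(2) 1(1) assms(3) 1(2)] by blast
  show ?thesis using w ac_res[OF w(2) 1(3)] res_ar[OF w(2) 1(3)] 1(4) by blast
qed

lemma H1o: assumes "P \<in> gobs SX" "U \<in> gobs C" "x \<in> sob u U"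
  shows "\<exists>W z g a. rf W z g U x \<and> a \<in> gobs (psec X W) \<and> P = oc W z a"
proof -
  obtain V y a where 1: "V \<in> gobs C" "y \<in> sob u V" "a \<in> gobs (psec X V)" "P = oc V y a"
    using st_ob[THEN iffD1, OF assms(1)] by blast
  obtain W z g h where w: "rf W z g U x" "rf W z h V y" using common[OF assms(2) 1(1) assms(3) 1(2)] by blast
  show ?thesis using w oc_res[OF w(2) 1(3)] res_ob[OF w(2) 1(3)] 1(4) by blast
qed

lemma refine_dom: assumes "W \<in> gobs C" "z \<in> sob u W" "\<alpha> \<in> garrs (psec X W)" "a \<in> gobs (psec X W)"
   "gdom SX (ac W z \<alpha>) = oc W z a"
  shows "\<exists>W' z' k. rf W' z' k W z \<and> gdom (psec X W') (prar X k \<alpha>) = prob X k a"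
proof -
  have "oc W z (gdom (psec X W) \<alpha>) = oc W z a" using assms(5) st_dom[OF assms(1-3)] by simp
  then obtain W' z' k where "rf W' z' k W z" "prob X k (gdom (psec X W) \<alpha>) = prob X k a"
    using oc_same[OF _ assms(1,2) ar_dom[OF assms(1,3)] assms(4)] by blast
  then show ?thesis using nat_dom[OF _ assms(3)] rf_el by metis
qed

lemma refine_cod: assumes "W \<in> gobs C" "z \<in> sob u W" "\<alpha> \<in> garrs (psec X W)" "a \<in> gobs (psec X W)"
   "gcod SX (ac W z \<alpha>) = oc W z a"
  shows "\<exists>W' z' k. rf W' z' k W z \<and> gcod (psec X W') (prar X k \<alpha>) = prob X k a"
proof -
  have "oc W z (gcod (psec X W) \<alpha>) = oc W z a" using assms(5) st_dom[OF assms(1-3)] by simp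
  then obtain W' z' k where "rf W' z' k W z" "prob X k (gcod (psec X W) \<alpha>) = prob X k a"
    using oc_same[OF _ assms(1,2) ar_cod[OF assms(1,3)] assms(4)] by blast
  then show ?thesis using nat_cod[OF _ assms(3)] rf_el by metis
qed

lemma prob_comp: "rf W z g U x \<Longrightarrow> rf W' z' k W z \<Longrightarrow> a \<in> gobs (psec X U) \<Longrightarrow> prob X (gcomp C g k) a = prob X k (prob X g a)"
  using rf_res_comp[OF Pob] by blast
lemma prar_comp: "rf W z g U x \<Longrightarrow> rf W' z' k W z \<Longrightarrow> a \<in> garrs (psec X U) \<Longrightarrow> prar X (gcomp C g k) a = prar X k (prar X g a)"
  using rf_res_comp[OF Par] by blast

end
end


abbreviation "OC C u X U x a \<equiv> stalk_ob_cls C u X (U,x,a)"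
abbreviation "AC C u X U x a \<equiv> stalk_ar_cls C u X (U,x,a)"

lemma pm_fun: "presheaf_morphism C X Y F \<Longrightarrow> U \<in> gobs C \<Longrightarrow> is_functor (psec X U) (psec Y U) (mob F U) (mar F U)"
  unfolding presheaf_morphism_def by blast
lemma pm_nat_ob: "presheaf_morphism C X Y F \<Longrightarrow> g \<in> ghom C V U \<Longrightarrow> a \<in> gobs (psec X U) \<Longrightarrow>
   mob F V (prob X g a) = prob Y g (mob F U a)"
  unfolding presheaf_morphism_def ghom_def by auto
lemma pm_nat_ar: "presheaf_morphism C X Y F \<Longrightarrow> g \<in> ghom C V U \<Longrightarrow> a \<in> garrs (psec X U) \<Longrightarrow>
   mar F V (prar X g a) = prar Y g (mar F U a)"
  unfolding presheaf_morphism_def ghom_def by auto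

context flatpt begin

lemma iota_fun: assumes X: "pcat C X" and U: "U \<in> gobs C" "x \<in> sob u U"
  shows "is_functor (psec X U) (stalk C u X) (\<lambda>a. OC C u X U x a) (\<lambda>a. AC C u X U x a)"
  apply (rule functorI)
  using ob_mem[OF X U] ac_hom[OF X U] st_id[OF X U] st_comp[OF X U] by auto

context fixes X :: "('o,'m,'a,'b) pgrpd" and Y :: "('o,'m,'c,'d) pgrpd" and F :: "('o,'a,'b,'c,'d) pmor"
  assumes X: "pcat C X" and Y: "pcat C Y" and F: "presheaf_morphism C X Y F"
begin

lemma smob: assumes "U \<in> gobs C" "x \<in> sob u U" "a \<in> gobs (psec X U)"
  shows "stalk_mob C u Y F (OC C u X U x a) = OC C u Y U x (mob F U a)"
proof -
  let ?t = "SOME t. t \<in> OC C u X U x a"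
  have car: "(U,x,a) \<in> colim_carrier C u (\<lambda>U. gobs (psec X U))" using car_iff[OF Pob[OF X]] assms by blast
  obtain V y b where t: "?t = (V,y,b)" by (cases ?t) auto
  have tc: "(V,y,b) \<in> colim_carrier C u (\<lambda>U. gobs (psec X U))" "OC C u X V y b = OC C u X U x a"
    using some_rep[OF Pob[OF X] car] t unfolding stalk_ob_cls_def by auto
  then have ce: "colim_eq C u (\<lambda>U. gobs (psec X U)) (prob X) (U,x,a) (V,y,b)"
    using cl_eq_iff[OF Pob[OF X] tc(1), of "(U,x,a)"] tc(2)[symmetric] unfolding stalk_ob_cls_def by blast
  have V: "V \<in> gobs C" "y \<in> sob u V" "b \<in> gobs (psec X V)" using tc(1) car_iff[OF Pob[OF X]] by auto
  have "colim_eq C u (\<lambda>U. gobs (psec Y U)) (prob Y) (U,x,mob F U a) (V,y,mob F V b)"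
    using ceq_nat[OF ce, of "mob F" "\<lambda>U. gobs (psec Y U)" "prob Y"]
      fun_ob[OF pm_fun[OF F]] pm_nat_ob[OF F] by simp
  moreover have "(V,y,mob F V b) \<in> colim_carrier C u (\<lambda>U. gobs (psec Y U))"
    using car_iff[OF Pob[OF Y]] V fun_ob[OF pm_fun[OF F]] by blast
  ultimately have "OC C u Y U x (mob F U a) = OC C u Y V y (mob F V b)"
    unfolding stalk_ob_cls_def using cl_eq_iff[OF Pob[OF Y]] by blast
  then show ?thesis unfolding stalk_mob_def using t by simp
qed

lemma smar: assumes "U \<in> gobs C" "x \<in> sob u U" "a \<in> garrs (psec X U)"
  shows "stalk_mar C u Y F (AC C u X U x a) = AC C u Y U x (mar F U a)"
proof -
  let ?t = "SOME t. t \<in> AC C u X U x a"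
  have car: "(U,x,a) \<in> colim_carrier C u (\<lambda>U. garrs (psec X U))" using car_iff[OF Par[OF X]] assms by blast
  obtain V y b where t: "?t = (V,y,b)" by (cases ?t) auto
  have tc: "(V,y,b) \<in> colim_carrier C u (\<lambda>U. garrs (psec X U))" "AC C u X V y b = AC C u X U x a"
    using some_rep[OF Par[OF X] car] t unfolding stalk_ar_cls_def by auto
  then have ce: "colim_eq C u (\<lambda>U. garrs (psec X U)) (prar X) (U,x,a) (V,y,b)"
    using cl_eq_iff[OF Par[OF X] tc(1), of "(U,x,a)"] tc(2)[symmetric] unfolding stalk_ar_cls_def by blast
  have V: "V \<in> gobs C" "y \<in> sob u V" "b \<in> garrs (psec X V)" using tc(1) car_iff[OF Par[OF X]] by auto
  have mf: "mar F U a \<in> garrs (psec Y U)" if "U \<in> gobs C" "a \<in> garrs (psec X U)" for U a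
    using fun_ar[OF pm_fun[OF F that(1)] ar_hom[OF X that]] by (simp add: ghom_def)
  have "colim_eq C u (\<lambda>U. garrs (psec Y U)) (prar Y) (U,x,mar F U a) (V,y,mar F V b)"
    using ceq_nat[OF ce, of "mar F" "\<lambda>U. garrs (psec Y U)" "prar Y"]
      mf pm_nat_ar[OF F] by simp
  moreover have "(V,y,mar F V b) \<in> colim_carrier C u (\<lambda>U. garrs (psec Y U))"
    using car_iff[OF Par[OF Y]] V mf by blast
  ultimately have "AC C u Y U x (mar F U a) = AC C u Y V y (mar F V b)"
    unfolding stalk_ar_cls_def using cl_eq_iff[OF Par[OF Y]] by blast
  then show ?thesis unfolding stalk_mar_def using t by simp
qed

lemma stalk_fun: "is_functor (stalk C u X) (stalk C u Y) (stalk_mob C u Y F) (stalk_mar C u Y F)"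
proof (rule functorI)
  fix P assume "P \<in> gobs (stalk C u X)"
  then obtain U x a where 1: "U \<in> gobs C" "x \<in> sob u U" "a \<in> gobs (psec X U)" "P = OC C u X U x a"
    using st_ob[OF X, THEN iffD1] by blast
  show "stalk_mob C u Y F P \<in> gobs (stalk C u Y)"
    using smob[OF 1(1-3)] ob_mem[OF Y 1(1,2) fun_ob[OF pm_fun[OF F 1(1)] 1(3)]] 1(4) by simp
  show "stalk_mar C u Y F (gide (stalk C u X) P) = gide (stalk C u Y) (stalk_mob C u Y F P)"
    using st_id[OF X 1(1-3)] smob[OF 1(1-3)] smar[OF 1(1,2)] c_id[OF Xcat[OF X 1(1)] 1(3)]
      st_id[OF Y 1(1,2) fun_ob[OF pm_fun[OF F 1(1)] 1(3)]] fun_id[OF pm_fun[OF F 1(1)] 1(3)] 1(4)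
    by (simp add: ghom_def)
next
  fix A P Q assume A: "A \<in> ghom (stalk C u X) P Q"
  then obtain U x \<alpha> where 1: "U \<in> gobs C" "x \<in> sob u U" "\<alpha> \<in> garrs (psec X U)" "A = AC C u X U x \<alpha>"
    using st_ar[OF X, THEN iffD1, OF conjunct1[OF ghomD[OF A]]] by blast
  have PQ: "P = OC C u X U x (gdom (psec X U) \<alpha>)" "Q = OC C u X U x (gcod (psec X U) \<alpha>)"
    using A st_dom[OF X 1(1-3)] 1(4) by (auto simp: ghom_def)
  have "mar F U \<alpha> \<in> ghom (psec Y U) (mob F U (gdom (psec X U) \<alpha>)) (mob F U (gcod (psec X U) \<alpha>))"
    using fun_ar[OF pm_fun[OF F 1(1)] ar_hom[OF X 1(1,3)]] .
  then show "stalk_mar C u Y F A \<in> ghom (stalk C u Y) (stalk_mob C u Y F P) (stalk_mob C u Y F Q)"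
    using ac_hom[OF Y 1(1,2)] smar[OF 1(1-3)] smob[OF 1(1,2)] ar_dom[OF X 1(1,3)] ar_cod[OF X 1(1,3)] PQ 1(4) by simp
next
  fix A B P Q R assume AB: "A \<in> ghom (stalk C u X) P Q" "B \<in> ghom (stalk C u X) Q R"
  then obtain U x a b c \<alpha> \<beta> where 1: "U \<in> gobs C" "x \<in> sob u U" "\<alpha> \<in> ghom (psec X U) a b" "\<beta> \<in> ghom (psec X U) b c"
     "A = AC C u X U x \<alpha>" "B = AC C u X U x \<beta>" using composable[OF X, of A B] by (auto simp: ghom_def)
  note Fu = pm_fun[OF F 1(1)]
  show "stalk_mar C u Y F (gcomp (stalk C u X) B A) = gcomp (stalk C u Y) (stalk_mar C u Y F B) (stalk_mar C u Y F A)"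
    using st_comp[OF X 1(1-4)] smar[OF 1(1,2)] 1(3,4,5,6) c_comp[OF Xcat[OF X 1(1)] 1(3,4)]
      fun_comp[OF Fu 1(3,4)] st_comp[OF Y 1(1,2) fun_ar[OF Fu 1(3)] fun_ar[OF Fu 1(4)]]
    by (simp add: ghom_def)
qed

end
end


context flatpt begin

definition LF :: "('o,'m,'a,'b) pgrpd \<Rightarrow> ('o,'a,'b,'c,'d) pmor \<Rightarrow> bool" where
  "LF X F \<longleftrightarrow> (\<forall>U x a a' \<alpha> \<beta>. U \<in> gobs C \<and> x \<in> sob u U \<and> \<alpha> \<in> ghom (psec X U) a a' \<and> \<beta> \<in> ghom (psec X U) a a'
     \<and> mar F U \<alpha> = mar F U \<beta> \<longrightarrow> (\<exists>W z k. rf W z k U x \<and> prar X k \<alpha> = prar X k \<beta>))"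

definition LFull :: "('o,'m,'a,'b) pgrpd \<Rightarrow> ('o,'m,'c,'d) pgrpd \<Rightarrow> ('o,'a,'b,'c,'d) pmor \<Rightarrow> bool" where
  "LFull X Y F \<longleftrightarrow> (\<forall>U x a a' \<gamma>. U \<in> gobs C \<and> x \<in> sob u U \<and> a \<in> gobs (psec X U) \<and> a' \<in> gobs (psec X U) \<and>
     \<gamma> \<in> ghom (psec Y U) (mob F U a) (mob F U a') \<longrightarrow>
     (\<exists>W z k \<alpha>. rf W z k U x \<and> \<alpha> \<in> ghom (psec X W) (prob X k a) (prob X k a') \<and> mar F W \<alpha> = prar Y k \<gamma>))"

definition LES :: "('o,'m,'a,'b) pgrpd \<Rightarrow> ('o,'m,'c,'d) pgrpd \<Rightarrow> ('o,'a,'b,'c,'d) pmor \<Rightarrow> bool" where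
  "LES X Y F \<longleftrightarrow> (\<forall>U x b. U \<in> gobs C \<and> x \<in> sob u U \<and> b \<in> gobs (psec Y U) \<longrightarrow>
     (\<exists>W z k a e. rf W z k U x \<and> a \<in> gobs (psec X W) \<and> e \<in> ghom (psec Y W) (mob F W a) (prob Y k b)))"

definition LESi :: "('o,'m,'a,'b) pgrpd \<Rightarrow> ('o,'m,'c,'d) pgrpd \<Rightarrow> ('o,'a,'b,'c,'d) pmor \<Rightarrow> bool" where
  "LESi X Y F \<longleftrightarrow> (\<forall>U x b. U \<in> gobs C \<and> x \<in> sob u U \<and> b \<in> gobs (psec Y U) \<longrightarrow>
     (\<exists>W z k a e. rf W z k U x \<and> a \<in> gobs (psec X W) \<and> e \<in> ghom (psec Y W) (mob F W a) (prob Y k b) \<and>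
        is_iso (psec Y W) e))"

context fixes X :: "('o,'m,'a,'b) pgrpd" and Y :: "('o,'m,'c,'d) pgrpd" and F :: "('o,'a,'b,'c,'d) pmor"
  assumes X: "pcat C X" and Y: "pcat C Y" and F: "presheaf_morphism C X Y F"
begin

abbreviation "Fo \<equiv> stalk_mob C u Y F"
abbreviation "Fa \<equiv> stalk_mar C u Y F"

lemma Fob: "U \<in> gobs C \<Longrightarrow> a \<in> gobs (psec X U) \<Longrightarrow> mob F U a \<in> gobs (psec Y U)"
  using fun_ob[OF pm_fun[OF F]] by blast
lemma Fhom: "U \<in> gobs C \<Longrightarrow> \<alpha> \<in> ghom (psec X U) a b \<Longrightarrow> mar F U \<alpha> \<in> ghom (psec Y U) (mob F U a) (mob F U b)"
  using fun_ar[OF pm_fun[OF F]] by blast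
lemma Far: "U \<in> gobs C \<Longrightarrow> \<alpha> \<in> garrs (psec X U) \<Longrightarrow> mar F U \<alpha> \<in> garrs (psec Y U)"
  using Fhom ar_hom[OF X] ghomD by metis

lemma g2l_faith:
  assumes G: "\<forall>a\<in>gobs (stalk C u X). \<forall>a'\<in>gobs (stalk C u X). \<forall>f\<in>ghom (stalk C u X) a a'.
      \<forall>g\<in>ghom (stalk C u X) a a'. Fa f = Fa g \<longrightarrow> f = g"
  shows "LF X F"
  unfolding LF_def
proof (intro allI impI, elim conjE)
  fix U x a a' \<alpha> \<beta> assume U: "U \<in> gobs C" "x \<in> sob u U" and ab: "\<alpha> \<in> ghom (psec X U) a a'" "\<beta> \<in> ghom (psec X U) a a'"
    and e: "mar F U \<alpha> = mar F U \<beta>"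
  have o: "a \<in> gobs (psec X U)" "a' \<in> gobs (psec X U)" using c_dom c_cod Xcat[OF X U(1)] ab(1) by metis+
  have "AC C u X U x \<alpha> = AC C u X U x \<beta>"
    using G ob_mem[OF X U o(1)] ob_mem[OF X U o(2)] ac_hom[OF X U ab(1)] ac_hom[OF X U ab(2)]
      smar[OF X Y F U] ab e by (auto simp: ghom_def)
  then show "\<exists>W z k. rf W z k U x \<and> prar X k \<alpha> = prar X k \<beta>"
    using ac_same[OF X _ U] ab by (auto simp: ghom_def)
qed


lemma g2l_full:
  assumes G: "\<forall>P\<in>gobs (stalk C u X). \<forall>P'\<in>gobs (stalk C u X). \<forall>h\<in>ghom (stalk C u Y) (Fo P) (Fo P').
      \<exists>f\<in>ghom (stalk C u X) P P'. Fa f = h"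
  shows "LFull X Y F"
  unfolding LFull_def
proof (intro allI impI, elim conjE)
  fix U x a a' \<gamma> assume U: "U \<in> gobs C" "x \<in> sob u U" and o: "a \<in> gobs (psec X U)" "a' \<in> gobs (psec X U)"
    and \<gamma>: "\<gamma> \<in> ghom (psec Y U) (mob F U a) (mob F U a')"
  have "AC C u Y U x \<gamma> \<in> ghom (stalk C u Y) (Fo (OC C u X U x a)) (Fo (OC C u X U x a'))"
    using ac_hom[OF Y U \<gamma>] smob[OF X Y F U] o by simp
  then obtain A where A: "A \<in> ghom (stalk C u X) (OC C u X U x a) (OC C u X U x a')" "Fa A = AC C u Y U x \<gamma>"
    using G ob_mem[OF X U] o by blast
  obtain W z g \<alpha>0 where w: "rf W z g U x" "\<alpha>0 \<in> garrs (psec X W)" "A = AC C u X W z \<alpha>0"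
    using H1[OF X conjunct1[OF ghomD[OF A(1)]] U] by blast
  have W: "W \<in> gobs C" "z \<in> sob u W" using rf_el w(1) by blast+
  have o0: "prob X g a \<in> gobs (psec X W)" "prob X g a' \<in> gobs (psec X W)" using res_ob[OF X w(1)] o by blast+
  have "gdom (stalk C u X) (AC C u X W z \<alpha>0) = OC C u X W z (prob X g a)"
    using A(1) w(3) oc_res[OF X w(1) o(1)] by (simp add: ghom_def)
  then obtain W1 z1 k1 where k1: "rf W1 z1 k1 W z" "gdom (psec X W1) (prar X k1 \<alpha>0) = prob X k1 (prob X g a)"
    using refine_dom[OF X W w(2) o0(1)] by blast
  have W1: "W1 \<in> gobs C" "z1 \<in> sob u W1" using rf_el k1(1) by blast+
  have a1: "prar X k1 \<alpha>0 \<in> garrs (psec X W1)" using res_ar[OF X k1(1) w(2)] .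
  have o1: "prob X k1 (prob X g a') \<in> gobs (psec X W1)" using res_ob[OF X k1(1) o0(2)] .
  have A1: "A = AC C u X W1 z1 (prar X k1 \<alpha>0)" using w(3) ac_res[OF X k1(1) w(2)] by simp
  have "gcod (stalk C u X) (AC C u X W1 z1 (prar X k1 \<alpha>0)) = OC C u X W1 z1 (prob X k1 (prob X g a'))"
    using A(1) A1 oc_res[OF X w(1) o(2)] oc_res[OF X k1(1) o0(2)] by (simp add: ghom_def)
  then obtain W2 z2 k2 where k2: "rf W2 z2 k2 W1 z1"
     "gcod (psec X W2) (prar X k2 (prar X k1 \<alpha>0)) = prob X k2 (prob X k1 (prob X g a'))"
    using refine_cod[OF X W1 a1 o1] by blast
  have W2: "W2 \<in> gobs C" "z2 \<in> sob u W2" using rf_el k2(1) by blast+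
  have a2: "prar X k2 (prar X k1 \<alpha>0) \<in> garrs (psec X W2)" using res_ar[OF X k2(1) a1] .
  have d2: "gdom (psec X W2) (prar X k2 (prar X k1 \<alpha>0)) = prob X k2 (prob X k1 (prob X g a))"
    using nat_dom[OF X _ a1] rf_el[OF k2(1)] k1(2) by simp
  have A2: "A = AC C u X W2 z2 (prar X k2 (prar X k1 \<alpha>0))" using A1 ac_res[OF X k2(1) a1] by simp
  have g0: "\<gamma> \<in> garrs (psec Y U)" using \<gamma> by (simp add: ghom_def)
  have g1: "prar Y g \<gamma> \<in> garrs (psec Y W)" using res_ar[OF Y w(1) g0] .
  have g2: "prar Y k1 (prar Y g \<gamma>) \<in> garrs (psec Y W1)" using res_ar[OF Y k1(1) g1] .
  have "AC C u Y W2 z2 (mar F W2 (prar X k2 (prar X k1 \<alpha>0))) = AC C u Y W2 z2 (prar Y k2 (prar Y k1 (prar Y g \<gamma>)))"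
    using A(2) A2 smar[OF X Y F W2 a2] ac_res[OF Y w(1) g0] ac_res[OF Y k1(1) g1] ac_res[OF Y k2(1) g2] by simp
  then obtain W3 z3 k3 where k3: "rf W3 z3 k3 W2 z2"
    "prar Y k3 (mar F W2 (prar X k2 (prar X k1 \<alpha>0))) = prar Y k3 (prar Y k2 (prar Y k1 (prar Y g \<gamma>)))"
    using ac_same[OF Y _ W2 Far[OF W2(1) a2] res_ar[OF Y k2(1) g2]] by blast
  define K where "K = gcomp C (gcomp C (gcomp C g k1) k2) k3"
  have rK: "rf W3 z3 K U x" unfolding K_def using rf_trans w(1) k1(1) k2(1) k3(1) by blast
  have h3: "prar X k3 (prar X k2 (prar X k1 \<alpha>0)) \<in> ghom (psec X W3) (prob X k3 (prob X k2 (prob X k1 (prob X g a))))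
      (prob X k3 (prob X k2 (prob X k1 (prob X g a'))))"
    using res_hom[OF X k3(1) ar_hom[OF X W2(1) a2]] d2 k2(2) by simp
  have r1: "rf W1 z1 (gcomp C g k1) U x" using rf_trans w(1) k1(1) by blast
  have r2: "rf W2 z2 (gcomp C (gcomp C g k1) k2) U x" using rf_trans r1 k2(1) by blast
  have pK: "prob X K b = prob X k3 (prob X k2 (prob X k1 (prob X g b)))" if "b \<in> gobs (psec X U)" for b
    unfolding K_def using prob_comp[OF X r2 k3(1) that] prob_comp[OF X r1 k2(1) that] prob_comp[OF X w(1) k1(1) that] by simp
  have gK: "prar Y K \<gamma> = prar Y k3 (prar Y k2 (prar Y k1 (prar Y g \<gamma>)))"
    unfolding K_def using prar_comp[OF Y r2 k3(1) g0] prar_comp[OF Y r1 k2(1) g0] prar_comp[OF Y w(1) k1(1) g0] by simp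
  have mF: "mar F W3 (prar X k3 (prar X k2 (prar X k1 \<alpha>0))) = prar Y K \<gamma>"
    using pm_nat_ar[OF F _ a2] rf_el[OF k3(1)] k3(2) gK by simp
  show "\<exists>W z k \<alpha>. rf W z k U x \<and> \<alpha> \<in> ghom (psec X W) (prob X k a) (prob X k a') \<and> mar F W \<alpha> = prar Y k \<gamma>"
    apply (rule exI[of _ W3], rule exI[of _ z3], rule exI[of _ K], rule exI[of _ "prar X k3 (prar X k2 (prar X k1 \<alpha>0))"])
    using rK h3 pK[OF o(1)] pK[OF o(2)] mF by simp
qed


lemma g2l_es:
  assumes G: "\<forall>Q\<in>gobs (stalk C u Y). \<exists>P\<in>gobs (stalk C u X). \<exists>E\<in>ghom (stalk C u Y) (Fo P) Q. is_iso (stalk C u Y) E"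
  shows "LES X Y F"
  unfolding LES_def
proof (intro allI impI, elim conjE)
  fix U x b assume U: "U \<in> gobs C" "x \<in> sob u U" and b: "b \<in> gobs (psec Y U)"
  obtain P E where PE: "P \<in> gobs (stalk C u X)" "E \<in> ghom (stalk C u Y) (Fo P) (OC C u Y U x b)"
    using G ob_mem[OF Y U b] by blast
  obtain W z g a1 where w: "rf W z g U x" "a1 \<in> gobs (psec X W)" "P = OC C u X W z a1"
    using H1o[OF X PE(1) U] by blast
  have W: "W \<in> gobs C" "z \<in> sob u W" using rf_el w(1) by blast+
  obtain W1 z1 k1 e1 where k1: "rf W1 z1 k1 W z" "e1 \<in> garrs (psec Y W1)" "E = AC C u Y W1 z1 e1"
    using H1[OF Y conjunct1[OF ghomD[OF PE(2)]] W] by blast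
  have W1: "W1 \<in> gobs C" "z1 \<in> sob u W1" using rf_el k1(1) by blast+
  have Fa1: "mob F W a1 \<in> gobs (psec Y W)" using Fob[OF W(1) w(2)] .
  have "gdom (stalk C u Y) (AC C u Y W1 z1 e1) = OC C u Y W1 z1 (prob Y k1 (mob F W a1))"
    using PE(2) k1(3) w(3) smob[OF X Y F W w(2)] oc_res[OF Y k1(1) Fa1] by (simp add: ghom_def)
  then obtain W2 z2 k2 where k2: "rf W2 z2 k2 W1 z1" "gdom (psec Y W2) (prar Y k2 e1) = prob Y k2 (prob Y k1 (mob F W a1))"
    using refine_dom[OF Y W1 k1(2) res_ob[OF Y k1(1) Fa1]] by blast
  have W2: "W2 \<in> gobs C" "z2 \<in> sob u W2" using rf_el k2(1) by blast+
  have e2: "prar Y k2 e1 \<in> garrs (psec Y W2)" using res_ar[OF Y k2(1) k1(2)] .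
  have b2: "prob Y k2 (prob Y k1 (prob Y g b)) \<in> gobs (psec Y W2)"
    using res_ob[OF Y k2(1) res_ob[OF Y k1(1) res_ob[OF Y w(1) b]]] .
  have "gcod (stalk C u Y) (AC C u Y W2 z2 (prar Y k2 e1)) = OC C u Y W2 z2 (prob Y k2 (prob Y k1 (prob Y g b)))"
    using PE(2) k1(3) ac_res[OF Y k2(1) k1(2)] oc_res[OF Y w(1) b] oc_res[OF Y k1(1) res_ob[OF Y w(1) b]]
      oc_res[OF Y k2(1) res_ob[OF Y k1(1) res_ob[OF Y w(1) b]]] by (simp add: ghom_def)
  then obtain W3 z3 k3 where k3: "rf W3 z3 k3 W2 z2"
     "gcod (psec Y W3) (prar Y k3 (prar Y k2 e1)) = prob Y k3 (prob Y k2 (prob Y k1 (prob Y g b)))"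
    using refine_cod[OF Y W2 e2 b2] by blast
  have W3: "W3 \<in> gobs C" "z3 \<in> sob u W3" using rf_el k3(1) by blast+
  define a3 where "a3 = prob X k3 (prob X k2 (prob X k1 a1))"
  have a3: "a3 \<in> gobs (psec X W3)" unfolding a3_def using res_ob[OF X] k1(1) k2(1) k3(1) w(2) by blast
  have "mob F W3 a3 = prob Y k3 (prob Y k2 (prob Y k1 (mob F W a1)))"
    unfolding a3_def using pm_nat_ob[OF F] rf_el k1(1) k2(1) k3(1) res_ob[OF X] w(2) by metis
  also have "\<dots> = gdom (psec Y W3) (prar Y k3 (prar Y k2 e1))"
    using nat_dom[OF Y _ e2] rf_el[OF k3(1)] k2(2) by simp
  finally have d3: "gdom (psec Y W3) (prar Y k3 (prar Y k2 e1)) = mob F W3 a3" by simp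
  define K where "K = gcomp C (gcomp C (gcomp C g k1) k2) k3"
  have r1: "rf W1 z1 (gcomp C g k1) U x" using rf_trans w(1) k1(1) by blast
  have r2: "rf W2 z2 (gcomp C (gcomp C g k1) k2) U x" using rf_trans r1 k2(1) by blast
  have rK: "rf W3 z3 K U x" unfolding K_def using rf_trans r2 k3(1) by blast
  have pK: "prob Y K b = prob Y k3 (prob Y k2 (prob Y k1 (prob Y g b)))"
    unfolding K_def using prob_comp[OF Y r2 k3(1) b] prob_comp[OF Y r1 k2(1) b] prob_comp[OF Y w(1) k1(1) b] by simp
  have eh: "prar Y k3 (prar Y k2 e1) \<in> ghom (psec Y W3) (mob F W3 a3) (prob Y K b)"
    using res_ar[OF Y k3(1) e2] d3 k3(2) pK by (simp add: ghom_def)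
  show "\<exists>W z k a e. rf W z k U x \<and> a \<in> gobs (psec X W) \<and> e \<in> ghom (psec Y W) (mob F W a) (prob Y k b)"
    using rK a3 eh by blast
qed


lemma l2g_faith:
  assumes L: "LF X F"
  shows "\<forall>P\<in>gobs (stalk C u X). \<forall>P'\<in>gobs (stalk C u X). \<forall>A\<in>ghom (stalk C u X) P P'.
      \<forall>B\<in>ghom (stalk C u X) P P'. Fa A = Fa B \<longrightarrow> A = B"
proof (intro ballI impI)
  fix P P' A B assume AB: "A \<in> ghom (stalk C u X) P P'" "B \<in> ghom (stalk C u X) P P'" "Fa A = Fa B"
  obtain U x \<alpha> where 1: "U \<in> gobs C" "x \<in> sob u U" "\<alpha> \<in> garrs (psec X U)" "A = AC C u X U x \<alpha>"
    using st_ar[OF X, THEN iffD1, OF conjunct1[OF ghomD[OF AB(1)]]] by blast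
  obtain W z g \<beta>0 where w: "rf W z g U x" "\<beta>0 \<in> garrs (psec X W)" "B = AC C u X W z \<beta>0"
    using H1[OF X conjunct1[OF ghomD[OF AB(2)]] 1(1,2)] by blast
  have W: "W \<in> gobs C" "z \<in> sob u W" using rf_el w(1) by blast+
  define \<alpha>0 where "\<alpha>0 = prar X g \<alpha>"
  have a0: "\<alpha>0 \<in> garrs (psec X W)" "A = AC C u X W z \<alpha>0" unfolding \<alpha>0_def using res_ar[OF X w(1) 1(3)] ac_res[OF X w(1) 1(3)] 1(4) by auto
  have "gdom (stalk C u X) (AC C u X W z \<beta>0) = OC C u X W z (gdom (psec X W) \<alpha>0)"
    using AB(1,2) w(3) a0 st_dom[OF X W a0(1)] by (simp add: ghom_def)
  then obtain W1 z1 k1 where k1: "rf W1 z1 k1 W z" "gdom (psec X W1) (prar X k1 \<beta>0) = prob X k1 (gdom (psec X W) \<alpha>0)"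
    using refine_dom[OF X W w(2) ar_dom[OF X W(1) a0(1)]] by blast
  have W1: "W1 \<in> gobs C" "z1 \<in> sob u W1" using rf_el k1(1) by blast+
  define \<alpha>1 where "\<alpha>1 = prar X k1 \<alpha>0"
  define \<beta>1 where "\<beta>1 = prar X k1 \<beta>0"
  have ab1: "\<alpha>1 \<in> garrs (psec X W1)" "\<beta>1 \<in> garrs (psec X W1)" "A = AC C u X W1 z1 \<alpha>1" "B = AC C u X W1 z1 \<beta>1"
    "gdom (psec X W1) \<beta>1 = gdom (psec X W1) \<alpha>1"
    unfolding \<alpha>1_def \<beta>1_def using res_ar[OF X k1(1)] ac_res[OF X k1(1)] a0 w k1(2) nat_dom[OF X _ a0(1)] rf_el[OF k1(1)] by auto
  have "gcod (stalk C u X) (AC C u X W1 z1 \<beta>1) = OC C u X W1 z1 (gcod (psec X W1) \<alpha>1)"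
    using AB(1,2) ab1 st_dom[OF X W1 ab1(1)] by (simp add: ghom_def)
  then obtain W2 z2 k2 where k2: "rf W2 z2 k2 W1 z1" "gcod (psec X W2) (prar X k2 \<beta>1) = prob X k2 (gcod (psec X W1) \<alpha>1)"
    using refine_cod[OF X W1 ab1(2) ar_cod[OF X W1(1) ab1(1)]] by blast
  have W2: "W2 \<in> gobs C" "z2 \<in> sob u W2" using rf_el k2(1) by blast+
  define \<alpha>2 where "\<alpha>2 = prar X k2 \<alpha>1"
  define \<beta>2 where "\<beta>2 = prar X k2 \<beta>1"
  have ab2: "\<alpha>2 \<in> garrs (psec X W2)" "\<beta>2 \<in> garrs (psec X W2)" "A = AC C u X W2 z2 \<alpha>2" "B = AC C u X W2 z2 \<beta>2"
    unfolding \<alpha>2_def \<beta>2_def using res_ar[OF X k2(1)] ac_res[OF X k2(1)] ab1 by auto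
  have dc2: "\<alpha>2 \<in> ghom (psec X W2) (gdom (psec X W2) \<alpha>2) (gcod (psec X W2) \<alpha>2)"
     "\<beta>2 \<in> ghom (psec X W2) (gdom (psec X W2) \<alpha>2) (gcod (psec X W2) \<alpha>2)"
    using ab2(1,2) k2(2) ab1(5) nat_dom[OF X _ ab1(1)] nat_dom[OF X _ ab1(2)] nat_cod[OF X _ ab1(1)] rf_el[OF k2(1)]
    unfolding \<alpha>2_def \<beta>2_def by (auto simp: ghom_def)
  have "AC C u Y W2 z2 (mar F W2 \<alpha>2) = AC C u Y W2 z2 (mar F W2 \<beta>2)"
    using AB(3) ab2 smar[OF X Y F W2] by simp
  then obtain W3 z3 k3 where k3: "rf W3 z3 k3 W2 z2" "prar Y k3 (mar F W2 \<alpha>2) = prar Y k3 (mar F W2 \<beta>2)"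
    using ac_same[OF Y _ W2 Far[OF W2(1) ab2(1)] Far[OF W2(1) ab2(2)]] by blast
  have W3: "W3 \<in> gobs C" "z3 \<in> sob u W3" using rf_el k3(1) by blast+
  have h3: "prar X k3 \<alpha>2 \<in> ghom (psec X W3) (prob X k3 (gdom (psec X W2) \<alpha>2)) (prob X k3 (gcod (psec X W2) \<alpha>2))"
     "prar X k3 \<beta>2 \<in> ghom (psec X W3) (prob X k3 (gdom (psec X W2) \<alpha>2)) (prob X k3 (gcod (psec X W2) \<alpha>2))"
    using res_hom[OF X k3(1) dc2(1)] res_hom[OF X k3(1) dc2(2)] by blast+
  have "mar F W3 (prar X k3 \<alpha>2) = mar F W3 (prar X k3 \<beta>2)"
    using pm_nat_ar[OF F _ ab2(1)] pm_nat_ar[OF F _ ab2(2)] rf_el[OF k3(1)] k3(2) by simp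
  then obtain W4 z4 k4 where k4: "rf W4 z4 k4 W3 z3" "prar X k4 (prar X k3 \<alpha>2) = prar X k4 (prar X k3 \<beta>2)"
    using L unfolding LF_def using W3 h3 by blast
  have "A = AC C u X W4 z4 (prar X k4 (prar X k3 \<alpha>2))"
    using ab2 ac_res[OF X k3(1) ab2(1)] ac_res[OF X k4(1) res_ar[OF X k3(1) ab2(1)]] by simp
  also have "\<dots> = B"
    using ab2 ac_res[OF X k3(1) ab2(2)] ac_res[OF X k4(1) res_ar[OF X k3(1) ab2(2)]] k4(2) by simp
  finally show "A = B" .
qed

lemma l2g_full:
  assumes L: "LFull X Y F"
  shows "\<forall>P\<in>gobs (stalk C u X). \<forall>P'\<in>gobs (stalk C u X). \<forall>h\<in>ghom (stalk C u Y) (Fo P) (Fo P').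
      \<exists>f\<in>ghom (stalk C u X) P P'. Fa f = h"
proof (intro ballI)
  fix P P' \<Gamma> assume P: "P \<in> gobs (stalk C u X)" "P' \<in> gobs (stalk C u X)" and G: "\<Gamma> \<in> ghom (stalk C u Y) (Fo P) (Fo P')"
  obtain U x a where 1: "U \<in> gobs C" "x \<in> sob u U" "a \<in> gobs (psec X U)" "P = OC C u X U x a"
    using st_ob[OF X, THEN iffD1, OF P(1)] by blast
  obtain W z g a'0 where w: "rf W z g U x" "a'0 \<in> gobs (psec X W)" "P' = OC C u X W z a'0"
    using H1o[OF X P(2) 1(1,2)] by blast
  have W: "W \<in> gobs C" "z \<in> sob u W" using rf_el w(1) by blast+
  define a0 where "a0 = prob X g a"
  have a0: "a0 \<in> gobs (psec X W)" "P = OC C u X W z a0" unfolding a0_def using res_ob[OF X w(1) 1(3)] oc_res[OF X w(1) 1(3)] 1(4) by auto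
  obtain W1 z1 k1 \<gamma>1 where k1: "rf W1 z1 k1 W z" "\<gamma>1 \<in> garrs (psec Y W1)" "\<Gamma> = AC C u Y W1 z1 \<gamma>1"
    using H1[OF Y conjunct1[OF ghomD[OF G]] W] by blast
  have W1: "W1 \<in> gobs C" "z1 \<in> sob u W1" using rf_el k1(1) by blast+
  define a1 where "a1 = prob X k1 a0"
  define a1' where "a1' = prob X k1 a'0"
  have a1: "a1 \<in> gobs (psec X W1)" "a1' \<in> gobs (psec X W1)" "P = OC C u X W1 z1 a1" "P' = OC C u X W1 z1 a1'"
    unfolding a1_def a1'_def using res_ob[OF X k1(1)] oc_res[OF X k1(1)] a0 w by auto
  have "gdom (stalk C u Y) (AC C u Y W1 z1 \<gamma>1) = OC C u Y W1 z1 (mob F W1 a1)"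
    using G k1(3) a1(3) smob[OF X Y F W1 a1(1)] by (simp add: ghom_def)
  then obtain W2 z2 k2 where k2: "rf W2 z2 k2 W1 z1" "gdom (psec Y W2) (prar Y k2 \<gamma>1) = prob Y k2 (mob F W1 a1)"
    using refine_dom[OF Y W1 k1(2) Fob[OF W1(1) a1(1)]] by blast
  have W2: "W2 \<in> gobs C" "z2 \<in> sob u W2" using rf_el k2(1) by blast+
  define \<gamma>2 where "\<gamma>2 = prar Y k2 \<gamma>1"
  define a2 where "a2 = prob X k2 a1"
  define a2' where "a2' = prob X k2 a1'"
  have a2: "a2 \<in> gobs (psec X W2)" "a2' \<in> gobs (psec X W2)" "P = OC C u X W2 z2 a2" "P' = OC C u X W2 z2 a2'"
    "\<gamma>2 \<in> garrs (psec Y W2)" "\<Gamma> = AC C u Y W2 z2 \<gamma>2" "gdom (psec Y W2) \<gamma>2 = mob F W2 a2"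
    unfolding a2_def a2'_def \<gamma>2_def using res_ob[OF X k2(1)] oc_res[OF X k2(1)] a1 res_ar[OF Y k2(1) k1(2)]
      ac_res[OF Y k2(1) k1(2)] k1(3) k2(2) pm_nat_ob[OF F _ a1(1)] rf_el[OF k2(1)] by auto
  have "gcod (stalk C u Y) (AC C u Y W2 z2 \<gamma>2) = OC C u Y W2 z2 (mob F W2 a2')"
    using G a2 smob[OF X Y F W2 a2(2)] by (simp add: ghom_def)
  then obtain W3 z3 k3 where k3: "rf W3 z3 k3 W2 z2" "gcod (psec Y W3) (prar Y k3 \<gamma>2) = prob Y k3 (mob F W2 a2')"
    using refine_cod[OF Y W2 a2(5) Fob[OF W2(1) a2(2)]] by blast
  have W3: "W3 \<in> gobs C" "z3 \<in> sob u W3" using rf_el k3(1) by blast+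
  define \<gamma>3 where "\<gamma>3 = prar Y k3 \<gamma>2"
  define a3 where "a3 = prob X k3 a2"
  define a3' where "a3' = prob X k3 a2'"
  have a3: "a3 \<in> gobs (psec X W3)" "a3' \<in> gobs (psec X W3)" "P = OC C u X W3 z3 a3" "P' = OC C u X W3 z3 a3'"
    "\<Gamma> = AC C u Y W3 z3 \<gamma>3"
    unfolding a3_def a3'_def \<gamma>3_def using res_ob[OF X k3(1)] oc_res[OF X k3(1)] a2 ac_res[OF Y k3(1) a2(5)] by auto
  have g3: "\<gamma>3 \<in> ghom (psec Y W3) (mob F W3 a3) (mob F W3 a3')"
    unfolding \<gamma>3_def a3_def a3'_def using res_ar[OF Y k3(1) a2(5)] k3(2) nat_dom[OF Y _ a2(5)] a2(7)
      pm_nat_ob[OF F _ a2(1)] pm_nat_ob[OF F _ a2(2)] rf_el[OF k3(1)] by (auto simp: ghom_def)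
  obtain W4 z4 k4 \<alpha> where k4: "rf W4 z4 k4 W3 z3" "\<alpha> \<in> ghom (psec X W4) (prob X k4 a3) (prob X k4 a3')"
     "mar F W4 \<alpha> = prar Y k4 \<gamma>3"
    using L unfolding LFull_def using W3 a3(1,2) g3 by blast
  have W4: "W4 \<in> gobs C" "z4 \<in> sob u W4" using rf_el k4(1) by blast+
  have "AC C u X W4 z4 \<alpha> \<in> ghom (stalk C u X) P P'"
    using ac_hom[OF X W4 k4(2)] oc_res[OF X k4(1)] a3 by simp
  moreover have "Fa (AC C u X W4 z4 \<alpha>) = \<Gamma>"
    using smar[OF X Y F W4] k4(2,3) a3(5) ac_res[OF Y k4(1)] g3 by (simp add: ghom_def)
  ultimately show "\<exists>f\<in>ghom (stalk C u X) P P'. Fa f = \<Gamma>" by blast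
qed

lemma l2g_es:
  assumes L: "LESi X Y F"
  shows "\<forall>Q\<in>gobs (stalk C u Y). \<exists>P\<in>gobs (stalk C u X). \<exists>E\<in>ghom (stalk C u Y) (Fo P) Q. is_iso (stalk C u Y) E"
proof
  fix Q assume Q: "Q \<in> gobs (stalk C u Y)"
  obtain U x b where 1: "U \<in> gobs C" "x \<in> sob u U" "b \<in> gobs (psec Y U)" "Q = OC C u Y U x b"
    using st_ob[OF Y, THEN iffD1, OF Q] by blast
  obtain W z k a e where w: "rf W z k U x" "a \<in> gobs (psec X W)" "e \<in> ghom (psec Y W) (mob F W a) (prob Y k b)"
    "is_iso (psec Y W) e" using L unfolding LESi_def using 1 by blast
  have W: "W \<in> gobs C" "z \<in> sob u W" using rf_el w(1) by blast+
  have "AC C u Y W z e \<in> ghom (stalk C u Y) (Fo (OC C u X W z a)) Q"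
    using ac_hom[OF Y W w(3)] smob[OF X Y F W w(2)] oc_res[OF Y w(1) 1(3)] 1(4) by simp
  moreover have "is_iso (stalk C u Y) (AC C u Y W z e)"
    using fun_iso[OF Xcat[OF Y W(1)] iota_fun[OF Y W] w(3,4)] .
  ultimately show "\<exists>P\<in>gobs (stalk C u X). \<exists>E\<in>ghom (stalk C u Y) (Fo P) Q. is_iso (stalk C u Y) E"
    using ob_mem[OF X W w(2)] by blast
qed

end
end


lemma hfp_obs_iff: "(x,\<phi>) \<in> hfp_obs G t ta \<longleftrightarrow> x \<in> gobs G \<and> \<phi> \<in> ghom G x (t x) \<and>
      gcomp G (ta \<phi>) \<phi> = gide G x \<and> gcomp G \<phi> (ta \<phi>) = gide G (t x)"
  unfolding hfp_obs_def by simp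

lemma hfp_simps:
  "gobs (hfp_grpd G t ta) = hfp_obs G t ta"
  "garrs (hfp_grpd G t ta) = {(p,\<alpha>,q). p \<in> hfp_obs G t ta \<and> q \<in> hfp_obs G t ta \<and>
                 \<alpha> \<in> ghom G (fst p) (fst q) \<and> gcomp G (snd q) \<alpha> = gcomp G (ta \<alpha>) (snd p)}"
  "gdom (hfp_grpd G t ta) (p,\<alpha>,q) = p"
  "gcod (hfp_grpd G t ta) (p,\<alpha>,q) = q"
  "gcomp (hfp_grpd G t ta) (p2,\<beta>,q2) (p1,\<alpha>,q1) = (p1, gcomp G \<beta> \<alpha>, q2)"
  "gide (hfp_grpd G t ta) p = (p, gide G (fst p), p)"
  unfolding hfp_grpd_def by simp_all

lemma hfp_arr_iff: "((x,\<phi>),\<alpha>,(y,\<psi>)) \<in> garrs (hfp_grpd G t ta) \<longleftrightarrow> (x,\<phi>) \<in> hfp_obs G t ta \<and> (y,\<psi>) \<in> hfp_obs G t ta \<and>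
                 \<alpha> \<in> ghom G x y \<and> gcomp G \<psi> \<alpha> = gcomp G (ta \<alpha>) \<phi>"
  unfolding hfp_simps by simp

lemma hfp_hom_iff: "((x,\<phi>),\<alpha>,(y,\<psi>)) \<in> ghom (hfp_grpd G t ta) p q \<longleftrightarrow> (x,\<phi>) \<in> hfp_obs G t ta \<and> (y,\<psi>) \<in> hfp_obs G t ta \<and>
                 \<alpha> \<in> ghom G x y \<and> gcomp G \<psi> \<alpha> = gcomp G (ta \<alpha>) \<phi> \<and> p = (x,\<phi>) \<and> q = (y,\<psi>)"
  unfolding ghom_def[where C="hfp_grpd G t ta"] hfp_arr_iff by (auto simp: hfp_simps)

lemma hfp_cat: assumes G: "category G" and T: "is_functor G G t ta"
  shows "category (hfp_grpd G t ta)"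
  unfolding category_def
proof (intro conjI ballI impI)
  fix f assume "f \<in> garrs (hfp_grpd G t ta)"
  then show "gdom (hfp_grpd G t ta) f \<in> gobs (hfp_grpd G t ta)" "gcod (hfp_grpd G t ta) f \<in> gobs (hfp_grpd G t ta)"
    by (auto simp: hfp_simps)
  from \<open>f \<in> garrs (hfp_grpd G t ta)\<close> obtain x \<phi> \<alpha> y \<psi> where f: "f = ((x,\<phi>),\<alpha>,(y,\<psi>))"
    "(x,\<phi>) \<in> hfp_obs G t ta" "(y,\<psi>) \<in> hfp_obs G t ta" "\<alpha> \<in> ghom G x y" "gcomp G \<psi> \<alpha> = gcomp G (ta \<alpha>) \<phi>"
    by (cases f) (auto simp: hfp_simps)
  show "gcomp (hfp_grpd G t ta) (gide (hfp_grpd G t ta) (gcod (hfp_grpd G t ta) f)) f = f"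
    using f c_idl[OF G f(4)] by (simp add: hfp_simps)
  show "gcomp (hfp_grpd G t ta) f (gide (hfp_grpd G t ta) (gdom (hfp_grpd G t ta) f)) = f"
    using f c_idr[OF G f(4)] by (simp add: hfp_simps)
next
  fix p assume p: "p \<in> gobs (hfp_grpd G t ta)"
  then obtain x \<phi> where px: "p = (x,\<phi>)" "x \<in> gobs G" "\<phi> \<in> ghom G x (t x)" by (cases p) (auto simp: hfp_simps hfp_obs_iff)
  have "ta (gide G x) = gide G (t x)" using fun_id[OF T px(2)] .
  then have "gcomp G \<phi> (gide G x) = gcomp G (ta (gide G x)) \<phi>"
    using c_idl[OF G px(3)] c_idr[OF G px(3)] by simp
  then show "gide (hfp_grpd G t ta) p \<in> ghom (hfp_grpd G t ta) p p"
    using p px c_id[OF G px(2)] by (simp add: hfp_hom_iff hfp_simps)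
next
  fix f g assume fg: "f \<in> garrs (hfp_grpd G t ta)" "g \<in> garrs (hfp_grpd G t ta)"
     "gcod (hfp_grpd G t ta) f = gdom (hfp_grpd G t ta) g"
  obtain x \<phi> \<alpha> y \<psi> where f: "f = ((x,\<phi>),\<alpha>,(y,\<psi>))"
    "(x,\<phi>) \<in> hfp_obs G t ta" "(y,\<psi>) \<in> hfp_obs G t ta" "\<alpha> \<in> ghom G x y" "gcomp G \<psi> \<alpha> = gcomp G (ta \<alpha>) \<phi>"
    using fg(1) by (cases f) (auto simp: hfp_simps)
  obtain w \<chi> \<beta> where g: "g = ((y,\<psi>),\<beta>,(w,\<chi>))"
    "(w,\<chi>) \<in> hfp_obs G t ta" "\<beta> \<in> ghom G y w" "gcomp G \<chi> \<beta> = gcomp G (ta \<beta>) \<psi>"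
    using fg(2,3) f(1) by (cases g) (auto simp: hfp_simps)
  have o: "\<phi> \<in> ghom G x (t x)" "\<psi> \<in> ghom G y (t y)" "\<chi> \<in> ghom G w (t w)" using f g by (auto simp: hfp_obs_iff)
  have ta: "ta \<alpha> \<in> ghom G (t x) (t y)" "ta \<beta> \<in> ghom G (t y) (t w)" using fun_ar[OF T] f g by blast+
  have "gcomp G \<chi> (gcomp G \<beta> \<alpha>) = gcomp G (gcomp G \<chi> \<beta>) \<alpha>" using c_assoc[OF G f(4) g(3) o(3)] .
  also have "\<dots> = gcomp G (ta \<beta>) (gcomp G \<psi> \<alpha>)" using g(4) c_assoc[OF G f(4) o(2) ta(2)] by simp
  also have "\<dots> = gcomp G (gcomp G (ta \<beta>) (ta \<alpha>)) \<phi>" using f(5) c_assoc[OF G o(1) ta(1) ta(2)] by simp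
  also have "\<dots> = gcomp G (ta (gcomp G \<beta> \<alpha>)) \<phi>" using fun_comp[OF T f(4) g(3)] by simp
  finally have "gcomp G \<chi> (gcomp G \<beta> \<alpha>) = gcomp G (ta (gcomp G \<beta> \<alpha>)) \<phi>" .
  then show "gcomp (hfp_grpd G t ta) g f \<in> ghom (hfp_grpd G t ta) (gdom (hfp_grpd G t ta) f) (gcod (hfp_grpd G t ta) g)"
    using f g c_comp[OF G f(4) g(3)] by (simp add: hfp_simps hfp_hom_iff)
next
  fix f g h assume fgh: "f \<in> garrs (hfp_grpd G t ta)" "g \<in> garrs (hfp_grpd G t ta)" "h \<in> garrs (hfp_grpd G t ta)"
     "gcod (hfp_grpd G t ta) f = gdom (hfp_grpd G t ta) g" "gcod (hfp_grpd G t ta) g = gdom (hfp_grpd G t ta) h"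
  obtain p \<alpha> q where f: "f = (p,\<alpha>,q)" "\<alpha> \<in> ghom G (fst p) (fst q)" using fgh(1) by (cases f) (auto simp: hfp_simps)
  obtain \<beta> r where g: "g = (q,\<beta>,r)" "\<beta> \<in> ghom G (fst q) (fst r)" using fgh(2,4) f by (cases g) (auto simp: hfp_simps)
  obtain \<gamma> s where h: "h = (r,\<gamma>,s)" "\<gamma> \<in> ghom G (fst r) (fst s)" using fgh(3,5) g by (cases h) (auto simp: hfp_simps)
  show "gcomp (hfp_grpd G t ta) h (gcomp (hfp_grpd G t ta) g f) = gcomp (hfp_grpd G t ta) (gcomp (hfp_grpd G t ta) h g) f"
    using f g h c_assoc[OF G f(2) g(2) h(2)] by (simp add: hfp_simps)
qed

lemma hfp_fun:
  assumes G: "category G" and G': "category G'" and F: "is_functor G G' Fo Fa" and T: "is_functor G G t ta"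
    and co: "\<And>x. x \<in> gobs G \<Longrightarrow> Fo (t x) = t' (Fo x)"
    and ca: "\<And>\<alpha>. \<alpha> \<in> garrs G \<Longrightarrow> Fa (ta \<alpha>) = ta' (Fa \<alpha>)"
    and tt: "\<And>x. x \<in> gobs G \<Longrightarrow> t (t x) = x"
  shows "is_functor (hfp_grpd G t ta) (hfp_grpd G' t' ta') (\<lambda>(x,\<phi>). (Fo x, Fa \<phi>))
      (\<lambda>((x,\<phi>),\<alpha>,(y,\<psi>)). ((Fo x, Fa \<phi>), Fa \<alpha>, (Fo y, Fa \<psi>)))" (is "is_functor _ _ ?Fo ?Fa")
proof -
  have ob: "(Fo x, Fa \<phi>) \<in> hfp_obs G' t' ta'" if "(x,\<phi>) \<in> hfp_obs G t ta" for x \<phi>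
  proof -
    have x: "x \<in> gobs G" "\<phi> \<in> ghom G x (t x)" "gcomp G (ta \<phi>) \<phi> = gide G x" "gcomp G \<phi> (ta \<phi>) = gide G (t x)"
      using that by (auto simp: hfp_obs_iff)
    have tx: "t x \<in> gobs G" using c_cod[OF G x(2)] .
    have tp: "ta \<phi> \<in> ghom G (t x) x" using fun_ar[OF T x(2)] tt[OF x(1)] by simp
    have pa: "\<phi> \<in> garrs G" using x(2) by (simp add: ghom_def)
    have "Fa \<phi> \<in> ghom G' (Fo x) (t' (Fo x))" using fun_ar[OF F x(2)] co[OF x(1)] by simp
    moreover have "gcomp G' (ta' (Fa \<phi>)) (Fa \<phi>) = gide G' (Fo x)"
      using fun_comp[OF F x(2) tp] ca[OF pa] x(3) fun_id[OF F x(1)] by simp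
    moreover have "gcomp G' (Fa \<phi>) (ta' (Fa \<phi>)) = gide G' (t' (Fo x))"
      using fun_comp[OF F tp x(2)] ca[OF pa] x(4) fun_id[OF F tx] co[OF x(1)] by simp
    ultimately show ?thesis using fun_ob[OF F x(1)] by (simp add: hfp_obs_iff)
  qed
  show ?thesis
  proof (rule functorI)
    fix p assume "p \<in> gobs (hfp_grpd G t ta)"
    then obtain x \<phi> where p: "p = (x,\<phi>)" "(x,\<phi>) \<in> hfp_obs G t ta" by (cases p) (auto simp: hfp_simps)
    show "(case p of (x,\<phi>) \<Rightarrow> (Fo x, Fa \<phi>)) \<in> gobs (hfp_grpd G' t' ta')" using ob p by (simp add: hfp_simps)
  next
    fix f p q assume f: "f \<in> ghom (hfp_grpd G t ta) p q"
    obtain x \<phi> \<alpha> y \<psi> where fx: "f = ((x,\<phi>),\<alpha>,(y,\<psi>))" by (cases f) auto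
    have h: "(x,\<phi>) \<in> hfp_obs G t ta" "(y,\<psi>) \<in> hfp_obs G t ta" "\<alpha> \<in> ghom G x y" "gcomp G \<psi> \<alpha> = gcomp G (ta \<alpha>) \<phi>"
       "p = (x,\<phi>)" "q = (y,\<psi>)"
      using f unfolding fx hfp_hom_iff by blast+
    have o: "\<phi> \<in> ghom G x (t x)" "\<psi> \<in> ghom G y (t y)" using h by (auto simp: hfp_obs_iff)
    have e: "gcomp G' (Fa \<psi>) (Fa \<alpha>) = gcomp G' (ta' (Fa \<alpha>)) (Fa \<phi>)"
      using fun_comp[OF F h(3) o(2)] fun_comp[OF F o(1) fun_ar[OF T h(3)]] h(4) ca[of \<alpha>] h(3) by (simp add: ghom_def)
    show "?Fa f \<in> ghom (hfp_grpd G' t' ta') (?Fo p) (?Fo q)"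
      using fx h ob fun_ar[OF F h(3)] e by (simp add: hfp_hom_iff)
  next
    fix p assume "p \<in> gobs (hfp_grpd G t ta)"
    then obtain x \<phi> where p: "p = (x,\<phi>)" "(x,\<phi>) \<in> hfp_obs G t ta" by (cases p) (auto simp: hfp_simps)
    have x: "x \<in> gobs G" using p by (simp add: hfp_obs_iff)
    show "?Fa (gide (hfp_grpd G t ta) p) = gide (hfp_grpd G' t' ta') (?Fo p)"
      using p fun_id[OF F x] by (simp add: hfp_simps)
  next
    fix f g p q r assume fg: "f \<in> ghom (hfp_grpd G t ta) p q" "g \<in> ghom (hfp_grpd G t ta) q r"
    obtain x \<phi> \<alpha> y \<psi> where fx: "f = ((x,\<phi>),\<alpha>,(y,\<psi>))" by (cases f) auto
    obtain y' \<psi>' \<beta> w \<chi> where gx: "g = ((y',\<psi>'),\<beta>,(w,\<chi>))" by (cases g) auto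
    have h: "\<alpha> \<in> ghom G x y" "\<beta> \<in> ghom G y w" "y' = y" "\<psi>' = \<psi>"
      using fg unfolding fx gx hfp_hom_iff by auto
    show "?Fa (gcomp (hfp_grpd G t ta) g f) = gcomp (hfp_grpd G' t' ta') (?Fa g) (?Fa f)"
      using fx gx h fun_comp[OF F h(1,2)] by (simp add: hfp_simps)
  qed
qed

lemma hfp_psh_simps:
  "psec (hfp_psh X T) U = hfp_grpd (psec X U) (aob T U) (aar T U)"
  "prob (hfp_psh X T) f = (\<lambda>(x,\<phi>). (prob X f x, prar X f \<phi>))"
  "prar (hfp_psh X T) f = (\<lambda>((x,\<phi>),\<alpha>,(y,\<psi>)). ((prob X f x, prar X f \<phi>), prar X f \<alpha>, (prob X f y, prar X f \<psi>)))"
  unfolding hfp_psh_def by simp_all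

lemma hfp_mor_simps:
  "mob (hfp_mor F) U = (\<lambda>(x,\<phi>). (mob F U x, mar F U \<phi>))"
  "mar (hfp_mor F) U = (\<lambda>((x,\<phi>),\<alpha>,(y,\<psi>)). ((mob F U x, mar F U \<phi>), mar F U \<alpha>, (mob F U y, mar F U \<psi>)))"
  unfolding hfp_mor_def by simp_all

lemma z2_fun: "z2_action C X T \<Longrightarrow> U \<in> gobs C \<Longrightarrow> is_functor (psec X U) (psec X U) (aob T U) (aar T U)"
  unfolding z2_action_def by blast
lemma z2_inv_ob: "z2_action C X T \<Longrightarrow> U \<in> gobs C \<Longrightarrow> a \<in> gobs (psec X U) \<Longrightarrow> aob T U (aob T U a) = a"
  unfolding z2_action_def by blast
lemma z2_inv_ar: "z2_action C X T \<Longrightarrow> U \<in> gobs C \<Longrightarrow> a \<in> garrs (psec X U) \<Longrightarrow> aar T U (aar T U a) = a"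
  unfolding z2_action_def by blast
lemma z2_res_ob: "z2_action C X T \<Longrightarrow> f \<in> garrs C \<Longrightarrow> a \<in> gobs (psec X (gcod C f)) \<Longrightarrow>
    prob X f (aob T (gcod C f) a) = aob T (gdom C f) (prob X f a)"
  unfolding z2_action_def by blast
lemma z2_res_ar: "z2_action C X T \<Longrightarrow> f \<in> garrs C \<Longrightarrow> a \<in> garrs (psec X (gcod C f)) \<Longrightarrow>
    prar X f (aar T (gcod C f) a) = aar T (gdom C f) (prar X f a)"
  unfolding z2_action_def by blast

lemma hfp_obs_arr: "(x,\<phi>) \<in> hfp_obs G t ta \<Longrightarrow> x \<in> gobs G \<and> \<phi> \<in> garrs G"
  unfolding hfp_obs_def ghom_def by auto

lemma hfp_ob_cases: "p \<in> gobs (hfp_grpd G t ta) \<Longrightarrow> \<exists>x \<phi>. p = (x,\<phi>) \<and> x \<in> gobs G \<and> \<phi> \<in> garrs G"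
  by (cases p) (auto simp: hfp_simps dest: hfp_obs_arr)
lemma hfp_ar_cases: "f \<in> garrs (hfp_grpd G t ta) \<Longrightarrow> \<exists>x \<phi> \<beta> y \<psi>. f = ((x,\<phi>),\<beta>,(y,\<psi>)) \<and> x \<in> gobs G \<and> \<phi> \<in> garrs G
   \<and> \<beta> \<in> garrs G \<and> y \<in> gobs G \<and> \<psi> \<in> garrs G"
  by (auto simp: hfp_simps ghom_def dest!: hfp_obs_arr)

context flatpt begin

lemma hfp_pcat: assumes X: "pcat C X" and T: "z2_action C X T"
  shows "pcat C (hfp_psh X T)"
  unfolding pcat_def
proof (intro conjI ballI impI)
  fix U assume U: "U \<in> gobs C"
  show "category (psec (hfp_psh X T) U)"
    unfolding hfp_psh_simps using hfp_cat[OF Xcat[OF X U] z2_fun[OF T U]] .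
  show "prob (hfp_psh X T) (gide C U) a = a" if "a \<in> gobs (psec (hfp_psh X T) U)" for a
      using hfp_ob_cases[OF that[unfolded hfp_psh_simps]] ps_id[OF Pob[OF X]] ps_id[OF Par[OF X]]
      by (auto simp: hfp_psh_simps hfp_mor_simps U)
  show "prar (hfp_psh X T) (gide C U) \<alpha> = \<alpha>" if "\<alpha> \<in> garrs (psec (hfp_psh X T) U)" for \<alpha>
      using hfp_ar_cases[OF that[unfolded hfp_psh_simps]] ps_id[OF Pob[OF X]] ps_id[OF Par[OF X]]
      by (auto simp: hfp_psh_simps hfp_mor_simps U)
next
  fix f assume f: "f \<in> garrs C"
  have d: "gdom C f \<in> gobs C" "gcod C f \<in> gobs C" using cat f unfolding category_def by auto
  have fh: "f \<in> ghom C (gdom C f) (gcod C f)" using f by (simp add: ghom_def)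
  show "is_functor (psec (hfp_psh X T) (gcod C f)) (psec (hfp_psh X T) (gdom C f)) (prob (hfp_psh X T) f) (prar (hfp_psh X T) f)"
    unfolding hfp_psh_simps
    by (rule hfp_fun[OF Xcat[OF X d(2)] Xcat[OF X d(1)] Xfun[OF X fh] z2_fun[OF T d(2)] z2_res_ob[OF T f] z2_res_ar[OF T f] z2_inv_ob[OF T d(2)]])
next
  fix f g assume fg: "f \<in> garrs C" "g \<in> garrs C" "gcod C f = gdom C g"
  have h: "f \<in> ghom C (gdom C f) (gdom C g)" "g \<in> ghom C (gdom C g) (gcod C g)" using fg by (auto simp: ghom_def)
  show "prob (hfp_psh X T) (gcomp C g f) a = prob (hfp_psh X T) f (prob (hfp_psh X T) g a)" if "a \<in> gobs (psec (hfp_psh X T) (gcod C g))" for a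
      using hfp_ob_cases[OF that[unfolded hfp_psh_simps]] ps_comp[OF Pob[OF X] h] ps_comp[OF Par[OF X] h]
      by (auto simp: hfp_psh_simps hfp_mor_simps)
  show "prar (hfp_psh X T) (gcomp C g f) \<alpha> = prar (hfp_psh X T) f (prar (hfp_psh X T) g \<alpha>)" if "\<alpha> \<in> garrs (psec (hfp_psh X T) (gcod C g))" for \<alpha>
      using hfp_ar_cases[OF that[unfolded hfp_psh_simps]] ps_comp[OF Pob[OF X] h] ps_comp[OF Par[OF X] h]
      by (auto simp: hfp_psh_simps hfp_mor_simps)
qed

lemma hfp_pm: assumes X: "pcat C X" and Y: "pcat C Y" and TX: "z2_action C X TX" and TY: "z2_action C Y TY"
   and F: "presheaf_morphism C X Y F" and E: "equivariant C X TX TY F"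
  shows "presheaf_morphism C (hfp_psh X TX) (hfp_psh Y TY) (hfp_mor F)"
  unfolding presheaf_morphism_def
proof (intro conjI ballI)
  fix U assume U: "U \<in> gobs C"
  show "is_functor (psec (hfp_psh X TX) U) (psec (hfp_psh Y TY) U) (mob (hfp_mor F) U) (mar (hfp_mor F) U)"
    unfolding hfp_psh_simps hfp_mor_simps
    apply (rule hfp_fun[OF Xcat[OF X U] Xcat[OF Y U] pm_fun[OF F U] z2_fun[OF TX U]])
    using E U z2_inv_ob[OF TX U] unfolding equivariant_def by blast+
next
  fix f assume f: "f \<in> garrs C"
  have fh: "f \<in> ghom C (gdom C f) (gcod C f)" using f by (simp add: ghom_def)
  show "mob (hfp_mor F) (gdom C f) (prob (hfp_psh X TX) f a) = prob (hfp_psh Y TY) f (mob (hfp_mor F) (gcod C f) a)" if "a \<in> gobs (psec (hfp_psh X TX) (gcod C f))" for a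
      using hfp_ob_cases[OF that[unfolded hfp_psh_simps]] pm_nat_ob[OF F fh] pm_nat_ar[OF F fh]
      by (auto simp: hfp_psh_simps hfp_mor_simps)
  show "mar (hfp_mor F) (gdom C f) (prar (hfp_psh X TX) f \<alpha>) = prar (hfp_psh Y TY) f (mar (hfp_mor F) (gcod C f) \<alpha>)" if "\<alpha> \<in> garrs (psec (hfp_psh X TX) (gcod C f))" for \<alpha>
      using hfp_ar_cases[OF that[unfolded hfp_psh_simps]] pm_nat_ob[OF F fh] pm_nat_ar[OF F fh]
      by (auto simp: hfp_psh_simps hfp_mor_simps)
qed

end


context fixes G :: "('a,'b) gcat" assumes G: "category G"
begin
lemma cs_arr: "f \<in> garrs G \<Longrightarrow> g \<in> garrs G \<Longrightarrow> gcod G f = gdom G g \<Longrightarrow> gcomp G g f \<in> garrs G"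
  using G unfolding category_def ghom_def by auto
lemma cs_dom: "f \<in> garrs G \<Longrightarrow> g \<in> garrs G \<Longrightarrow> gcod G f = gdom G g \<Longrightarrow> gdom G (gcomp G g f) = gdom G f"
  using G unfolding category_def ghom_def by auto
lemma cs_cod: "f \<in> garrs G \<Longrightarrow> g \<in> garrs G \<Longrightarrow> gcod G f = gdom G g \<Longrightarrow> gcod G (gcomp G g f) = gcod G g"
  using G unfolding category_def ghom_def by auto
lemma cs_assoc: "f \<in> garrs G \<Longrightarrow> g \<in> garrs G \<Longrightarrow> h \<in> garrs G \<Longrightarrow> gcod G f = gdom G g \<Longrightarrow> gcod G g = gdom G h \<Longrightarrow>
    gcomp G (gcomp G h g) f = gcomp G h (gcomp G g f)"
  using G unfolding category_def by auto
lemma cs_idl: "f \<in> garrs G \<Longrightarrow> gcod G f = b \<Longrightarrow> gcomp G (gide G b) f = f"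
  using G unfolding category_def by auto
lemma cs_idr: "f \<in> garrs G \<Longrightarrow> gdom G f = a \<Longrightarrow> gcomp G f (gide G a) = f"
  using G unfolding category_def by auto
lemma cs_id_arr: "a \<in> gobs G \<Longrightarrow> gide G a \<in> garrs G"
  using G unfolding category_def ghom_def by auto
lemma cs_id_dom: "a \<in> gobs G \<Longrightarrow> gdom G (gide G a) = a"
  using G unfolding category_def ghom_def by auto
lemma cs_id_cod: "a \<in> gobs G \<Longrightarrow> gcod G (gide G a) = a"
  using G unfolding category_def ghom_def by auto
lemmas cs = cs_arr cs_dom cs_cod cs_assoc cs_idl cs_idr cs_id_arr cs_id_dom cs_id_cod

lemma cancel_l: "gcomp G g f = gide G a \<Longrightarrow> f \<in> garrs G \<Longrightarrow> g \<in> garrs G \<Longrightarrow> gcod G f = gdom G g \<Longrightarrow>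
   h \<in> garrs G \<Longrightarrow> gcod G h = a \<Longrightarrow> gcomp G g (gcomp G f h) = h"
proof -
  assume a: "gcomp G g f = gide G a" "f \<in> garrs G" "g \<in> garrs G" "gcod G f = gdom G g" "h \<in> garrs G" "gcod G h = a"
  have "a \<in> gobs G" using G a(5) a(6) unfolding category_def by auto
  then have "gdom G f = a" using cs_dom[OF a(2,3,4)] a(1) cs_id_dom by simp
  then have "gcomp G g (gcomp G f h) = gcomp G (gcomp G g f) h" using cs_assoc[OF a(5,2,3)] a(4,6) by simp
  then show ?thesis using a(1) cs_idl[OF a(5,6)] by simp
qed
end

lemma stage_alg:
  assumes G: "category G" and T: "is_functor G G t ta" and tt: "\<And>x. x \<in> gobs G \<Longrightarrow> t (t x) = x"
    and tta: "\<And>\<alpha>. \<alpha> \<in> garrs G \<Longrightarrow> ta (ta \<alpha>) = \<alpha>"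
    and q: "(b,\<psi>) \<in> hfp_obs G t ta" and e: "e \<in> ghom G c b" "e' \<in> ghom G b c"
    and ee: "gcomp G e' e = gide G c" "gcomp G e e' = gide G b"
  defines "\<gamma> \<equiv> gcomp G (ta e') (gcomp G \<psi> e)"
  shows "\<gamma> \<in> ghom G c (t c)" "gcomp G (ta \<gamma>) \<gamma> = gide G c" "gcomp G \<gamma> (ta \<gamma>) = gide G (t c)"
    "gcomp G \<psi> e = gcomp G (ta e) \<gamma>" "gcomp G \<gamma> e' = gcomp G (ta e') \<psi>"
proof -
  have b: "b \<in> gobs G" "\<psi> \<in> ghom G b (t b)" "gcomp G (ta \<psi>) \<psi> = gide G b" "gcomp G \<psi> (ta \<psi>) = gide G (t b)"
    using q by (auto simp: hfp_obs_iff)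
  have c: "c \<in> gobs G" using c_dom[OF G e(1)] .
  have tp: "ta \<psi> \<in> ghom G (t b) b" using fun_ar[OF T b(2)] tt[OF b(1)] by simp
  have te: "ta e \<in> ghom G (t c) (t b)" "ta e' \<in> ghom G (t b) (t c)" using fun_ar[OF T] e by blast+
  have tee: "gcomp G (ta e) (ta e') = gide G (t b)" "gcomp G (ta e') (ta e) = gide G (t c)"
    using fun_comp[OF T e(2) e(1)] fun_comp[OF T e(1) e(2)] ee fun_id[OF T] b(1) c by simp_all
  note H = e b(2) tp te
  have A: "f \<in> garrs G" "gdom G f = x" "gcod G f = y" if "f \<in> ghom G x y" for f x y using that by (auto simp: ghom_def)
  note HA = A[OF e(1)] A[OF e(2)] A[OF b(2)] A[OF tp] A[OF te(1)] A[OF te(2)]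
  show g: "\<gamma> \<in> ghom G c (t c)" unfolding \<gamma>_def using c_comp[OF G c_comp[OF G e(1) b(2)] te(2)] .
  have tg: "ta \<gamma> = gcomp G e' (gcomp G (ta \<psi>) (ta e))"
    unfolding \<gamma>_def using fun_comp[OF T c_comp[OF G e(1) b(2)] te(2)] fun_comp[OF T e(1) b(2)] tta HA by simp
  note cs' = cs[OF G]
  have ar: "gcomp G \<psi> e \<in> ghom G c (t b)" using c_comp[OF G e(1) b(2)] .
  note AR = A[OF ar]
  have s1: "gcomp G (ta e) (gcomp G (ta e') (gcomp G \<psi> e)) = gcomp G \<psi> e"
    using cancel_l[OF G tee(1)] HA AR by simp
  have s2: "gcomp G (ta \<psi>) (gcomp G \<psi> e) = e"
    using cancel_l[OF G b(3)] HA by simp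
  have "gcomp G (ta \<gamma>) \<gamma> = gcomp G (gcomp G e' (gcomp G (ta \<psi>) (ta e))) (gcomp G (ta e') (gcomp G \<psi> e))"
    by (simp only: tg, simp only: \<gamma>_def)
  also have "\<dots> = gcomp G e' (gcomp G (ta \<psi>) (gcomp G (ta e) (gcomp G (ta e') (gcomp G \<psi> e))))"
    using HA AR cs_assoc[OF G] cs_arr[OF G] cs_dom[OF G] cs_cod[OF G] by simp
  finally have "gcomp G (ta \<gamma>) \<gamma> = gcomp G e' (gcomp G (ta \<psi>) (gcomp G (ta e) (gcomp G (ta e') (gcomp G \<psi> e))))" .
  then show "gcomp G (ta \<gamma>) \<gamma> = gide G c" using s1 s2 ee(1) by simp
  have ar2: "gcomp G (ta \<psi>) (ta e) \<in> ghom G (t c) b" using c_comp[OF G te(1) tp] .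
  note AR2 = A[OF ar2]
  have s3: "gcomp G e (gcomp G e' (gcomp G (ta \<psi>) (ta e))) = gcomp G (ta \<psi>) (ta e)"
    using cancel_l[OF G ee(2)] HA AR2 by simp
  have s4: "gcomp G \<psi> (gcomp G (ta \<psi>) (ta e)) = ta e"
    using cancel_l[OF G b(4)] HA by simp
  have "gcomp G \<gamma> (ta \<gamma>) = gcomp G (gcomp G (ta e') (gcomp G \<psi> e)) (gcomp G e' (gcomp G (ta \<psi>) (ta e)))"
    by (simp only: tg, simp only: \<gamma>_def)
  also have "\<dots> = gcomp G (ta e') (gcomp G \<psi> (gcomp G e (gcomp G e' (gcomp G (ta \<psi>) (ta e)))))"
    using HA AR2 cs_assoc[OF G] cs_arr[OF G] cs_dom[OF G] cs_cod[OF G] by simp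
  finally show "gcomp G \<gamma> (ta \<gamma>) = gide G (t c)" using s3 s4 tee(2) by simp
  show "gcomp G \<psi> e = gcomp G (ta e) \<gamma>" using s1 unfolding \<gamma>_def by simp
  have "gcomp G \<gamma> e' = gcomp G (ta e') (gcomp G \<psi> (gcomp G e e'))"
    unfolding \<gamma>_def using HA cs_assoc[OF G] cs_arr[OF G] cs_dom[OF G] cs_cod[OF G] by simp
  then show "gcomp G \<gamma> e' = gcomp G (ta e') \<psi>" using ee(2) cs_idr[OF G] HA by simp
qed


context flatpt begin

context fixes X :: "('o,'m,'a,'b) pgrpd" and Y :: "('o,'m,'c,'d) pgrpd" and F :: "('o,'a,'b,'c,'d) pmor"
  and TX :: "('o,'a,'b) z2act" and TY :: "('o,'c,'d) z2act"
  assumes X: "pcat C X" and Y: "pcat C Y" and F: "presheaf_morphism C X Y F"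
  and TX: "z2_action C X TX" and TY: "z2_action C Y TY" and E: "equivariant C X TX TY F"
begin

lemma rbX_ob: "rf W z k U x \<Longrightarrow> a \<in> gobs (psec X U) \<Longrightarrow> prob X k (aob TX U a) = aob TX W (prob X k a)"
  using z2_res_ob[OF TX, of k a] rf_el[of W z k U x] by (auto simp: ghom_def)
lemma rbX_ar: "rf W z k U x \<Longrightarrow> a \<in> garrs (psec X U) \<Longrightarrow> prar X k (aar TX U a) = aar TX W (prar X k a)"
  using z2_res_ar[OF TX, of k a] rf_el[of W z k U x] by (auto simp: ghom_def)
lemma rbY_ob: "rf W z k U x \<Longrightarrow> a \<in> gobs (psec Y U) \<Longrightarrow> prob Y k (aob TY U a) = aob TY W (prob Y k a)"
  using z2_res_ob[OF TY, of k a] rf_el[of W z k U x] by (auto simp: ghom_def)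
lemma rbY_ar: "rf W z k U x \<Longrightarrow> a \<in> garrs (psec Y U) \<Longrightarrow> prar Y k (aar TY U a) = aar TY W (prar Y k a)"
  using z2_res_ar[OF TY, of k a] rf_el[of W z k U x] by (auto simp: ghom_def)
lemma eqv_ob: "U \<in> gobs C \<Longrightarrow> a \<in> gobs (psec X U) \<Longrightarrow> mob F U (aob TX U a) = aob TY U (mob F U a)"
  using E unfolding equivariant_def by blast
lemma eqv_ar: "U \<in> gobs C \<Longrightarrow> a \<in> garrs (psec X U) \<Longrightarrow> mar F U (aar TX U a) = aar TY U (mar F U a)"
  using E unfolding equivariant_def by blast

abbreviation "HX \<equiv> hfp_psh X TX"
abbreviation "HY \<equiv> hfp_psh Y TY"
abbreviation "HF \<equiv> hfp_mor F"

lemma HXp: "pcat C HX" using hfp_pcat[OF X TX] .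
lemma HYp: "pcat C HY" using hfp_pcat[OF Y TY] .

lemma hfp_LF: assumes L: "LF X F" shows "LF HX HF"
  unfolding LF_def
proof (intro allI impI, elim conjE)
  fix U x p p' A B assume U: "U \<in> gobs C" "x \<in> sob u U" and AB: "A \<in> ghom (psec HX U) p p'" "B \<in> ghom (psec HX U) p p'"
    and e: "mar HF U A = mar HF U B"
  obtain a \<phi> \<alpha> a' \<phi>' where A: "A = ((a,\<phi>),\<alpha>,(a',\<phi>'))" by (cases A) auto
  obtain b \<chi> \<beta> b' \<chi>' where B: "B = ((b,\<chi>),\<beta>,(b',\<chi>'))" by (cases B) auto
  have h: "\<alpha> \<in> ghom (psec X U) a a'" "\<beta> \<in> ghom (psec X U) a a'" "b = a" "\<chi> = \<phi>" "b' = a'" "\<chi>' = \<phi>'"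
    using AB unfolding A B hfp_psh_simps hfp_hom_iff by auto
  have "mar F U \<alpha> = mar F U \<beta>" using e unfolding A B hfp_mor_simps by simp
  then obtain W z k where k: "rf W z k U x" "prar X k \<alpha> = prar X k \<beta>" using L unfolding LF_def using U h by blast
  have "prar HX k A = prar HX k B" unfolding A B hfp_psh_simps using h k(2) by simp
  then show "\<exists>W z k. rf W z k U x \<and> prar HX k A = prar HX k B" using k(1) by blast
qed


lemma hfp_ob_dest: "p \<in> gobs (psec (hfp_psh Z T) U) \<Longrightarrow> \<exists>a \<phi>. p = (a,\<phi>) \<and> (a,\<phi>) \<in> hfp_obs (psec Z U) (aob T U) (aar T U)"
  unfolding hfp_psh_simps hfp_simps by (cases p) auto

lemma hfp_LFull: assumes L: "LFull X Y F" and L2: "LF X F" shows "LFull HX HY HF"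
  unfolding LFull_def
proof (intro allI impI, elim conjE)
  fix U x p p' \<Gamma> assume U: "U \<in> gobs C" "x \<in> sob u U" and pp: "p \<in> gobs (psec HX U)" "p' \<in> gobs (psec HX U)"
    and G: "\<Gamma> \<in> ghom (psec HY U) (mob HF U p) (mob HF U p')"
  obtain a \<phi> where p: "p = (a,\<phi>)" "(a,\<phi>) \<in> hfp_obs (psec X U) (aob TX U) (aar TX U)" using hfp_ob_dest[OF pp(1)] by blast
  obtain a' \<phi>' where p': "p' = (a',\<phi>')" "(a',\<phi>') \<in> hfp_obs (psec X U) (aob TX U) (aar TX U)" using hfp_ob_dest[OF pp(2)] by blast
  have o: "a \<in> gobs (psec X U)" "\<phi> \<in> ghom (psec X U) a (aob TX U a)" "a' \<in> gobs (psec X U)" "\<phi>' \<in> ghom (psec X U) a' (aob TX U a')"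
    using p(2) p'(2) by (auto simp: hfp_obs_iff)
  have oa: "\<phi> \<in> garrs (psec X U)" "\<phi>' \<in> garrs (psec X U)" using o by (auto simp: ghom_def)
  obtain c \<chi> \<gamma> c' \<chi>' where Gx: "\<Gamma> = ((c,\<chi>),\<gamma>,(c',\<chi>'))" by (cases \<Gamma>) auto
  have g: "\<gamma> \<in> ghom (psec Y U) (mob F U a) (mob F U a')" "c = mob F U a" "\<chi> = mar F U \<phi>" "c' = mob F U a'" "\<chi>' = mar F U \<phi>'"
    "gcomp (psec Y U) (mar F U \<phi>') \<gamma> = gcomp (psec Y U) (aar TY U \<gamma>) (mar F U \<phi>)"
    using G unfolding Gx p p' hfp_psh_simps hfp_mor_simps hfp_hom_iff by auto
  have ga: "\<gamma> \<in> garrs (psec Y U)" using g(1) by (simp add: ghom_def)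
  obtain W1 z1 k1 \<alpha> where k1: "rf W1 z1 k1 U x" "\<alpha> \<in> ghom (psec X W1) (prob X k1 a) (prob X k1 a')" "mar F W1 \<alpha> = prar Y k1 \<gamma>"
    using L unfolding LFull_def using U o(1,3) g(1) by blast
  have W1: "W1 \<in> gobs C" "z1 \<in> sob u W1" using rf_el k1(1) by blast+
  have cW1: "category (psec X W1)" using Xcat[OF X W1(1)] .
  define \<phi>1 where "\<phi>1 = prar X k1 \<phi>"
  define \<phi>1' where "\<phi>1' = prar X k1 \<phi>'"
  have f1: "\<phi>1 \<in> ghom (psec X W1) (prob X k1 a) (aob TX W1 (prob X k1 a))"
    "\<phi>1' \<in> ghom (psec X W1) (prob X k1 a') (aob TX W1 (prob X k1 a'))"
    unfolding \<phi>1_def \<phi>1'_def using res_hom[OF X k1(1) o(2)] res_hom[OF X k1(1) o(4)] rbX_ob[OF k1(1)] o by auto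
  have ab: "aar TX W1 \<alpha> \<in> ghom (psec X W1) (aob TX W1 (prob X k1 a)) (aob TX W1 (prob X k1 a'))"
    using fun_ar[OF z2_fun[OF TX W1(1)] k1(2)] .
  define \<xi>1 where "\<xi>1 = gcomp (psec X W1) \<phi>1' \<alpha>"
  define \<xi>2 where "\<xi>2 = gcomp (psec X W1) (aar TX W1 \<alpha>) \<phi>1"
  have x1: "\<xi>1 \<in> ghom (psec X W1) (prob X k1 a) (aob TX W1 (prob X k1 a'))" unfolding \<xi>1_def using c_comp[OF cW1 k1(2) f1(2)] .
  have x2: "\<xi>2 \<in> ghom (psec X W1) (prob X k1 a) (aob TX W1 (prob X k1 a'))" unfolding \<xi>2_def using c_comp[OF cW1 f1(1) ab] .
  note Fu = pm_fun[OF F W1(1)]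
  have Fp: "mar F U \<phi> \<in> ghom (psec Y U) (mob F U a) (aob TY U (mob F U a))"
     "mar F U \<phi>' \<in> ghom (psec Y U) (mob F U a') (aob TY U (mob F U a'))"
    using fun_ar[OF pm_fun[OF F U(1)] o(2)] fun_ar[OF pm_fun[OF F U(1)] o(4)] eqv_ob[OF U(1)] o by auto
  have gb: "aar TY U \<gamma> \<in> ghom (psec Y U) (aob TY U (mob F U a)) (aob TY U (mob F U a'))"
    using fun_ar[OF z2_fun[OF TY U(1)] g(1)] .
  have "mar F W1 \<xi>1 = gcomp (psec Y W1) (mar F W1 \<phi>1') (mar F W1 \<alpha>)" unfolding \<xi>1_def using fun_comp[OF Fu k1(2) f1(2)] .
  also have "\<dots> = gcomp (psec Y W1) (prar Y k1 (mar F U \<phi>')) (prar Y k1 \<gamma>)"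
    unfolding \<phi>1'_def using pm_nat_ar[OF F _ oa(2)] rf_el[OF k1(1)] k1(3) by simp
  also have "\<dots> = prar Y k1 (gcomp (psec Y U) (mar F U \<phi>') \<gamma>)" using res_comp[OF Y k1(1) g(1) Fp(2)] by simp
  also have "\<dots> = prar Y k1 (gcomp (psec Y U) (aar TY U \<gamma>) (mar F U \<phi>))" using g(6) by simp
  also have "\<dots> = gcomp (psec Y W1) (prar Y k1 (aar TY U \<gamma>)) (prar Y k1 (mar F U \<phi>))" using res_comp[OF Y k1(1) Fp(1) gb] .
  also have "\<dots> = gcomp (psec Y W1) (aar TY W1 (mar F W1 \<alpha>)) (mar F W1 \<phi>1)"
    unfolding \<phi>1_def using rbY_ar[OF k1(1) ga] k1(3) pm_nat_ar[OF F _ oa(1)] rf_el[OF k1(1)] by simp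
  also have "\<dots> = mar F W1 \<xi>2" unfolding \<xi>2_def using fun_comp[OF Fu f1(1) ab] eqv_ar[OF W1(1)] k1(2) by (simp add: ghom_def)
  finally have "mar F W1 \<xi>1 = mar F W1 \<xi>2" .
  then obtain W2 z2 k2 where k2: "rf W2 z2 k2 W1 z1" "prar X k2 \<xi>1 = prar X k2 \<xi>2"
    using L2 unfolding LF_def using W1 x1 x2 by blast
  have W2: "W2 \<in> gobs C" "z2 \<in> sob u W2" using rf_el k2(1) by blast+
  define K where "K = gcomp C k1 k2"
  have rK: "rf W2 z2 K U x" unfolding K_def using rf_trans k1(1) k2(1) by blast
  have Ka: "prob X K b = prob X k2 (prob X k1 b)" if "b \<in> gobs (psec X U)" for b
    unfolding K_def using prob_comp[OF X k1(1) k2(1) that] .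
  have Kr: "prar X K b = prar X k2 (prar X k1 b)" if "b \<in> garrs (psec X U)" for b
    unfolding K_def using prar_comp[OF X k1(1) k2(1) that] .
  have KrY: "prar Y K b = prar Y k2 (prar Y k1 b)" if "b \<in> garrs (psec Y U)" for b
    unfolding K_def using prar_comp[OF Y k1(1) k2(1) that] .
  define \<alpha>2 where "\<alpha>2 = prar X k2 \<alpha>"
  have a2: "\<alpha>2 \<in> ghom (psec X W2) (prob X K a) (prob X K a')" unfolding \<alpha>2_def using res_hom[OF X k2(1) k1(2)] Ka o by simp
  have cond: "gcomp (psec X W2) (prar X K \<phi>') \<alpha>2 = gcomp (psec X W2) (aar TX W2 \<alpha>2) (prar X K \<phi>)"
  proof -
    have "gcomp (psec X W2) (prar X K \<phi>') \<alpha>2 = prar X k2 \<xi>1"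
      unfolding \<xi>1_def \<alpha>2_def \<phi>1'_def using res_comp[OF X k2(1) k1(2) f1(2)] Kr oa \<phi>1'_def by simp
    also have "\<dots> = prar X k2 \<xi>2" by (rule k2(2))
    also have "\<dots> = gcomp (psec X W2) (aar TX W2 \<alpha>2) (prar X K \<phi>)"
      unfolding \<xi>2_def \<alpha>2_def using res_comp[OF X k2(1) f1(1) ab] Kr oa \<phi>1_def rbX_ar[OF k2(1)] k1(2)
      by (simp add: ghom_def)
    finally show ?thesis .
  qed
  have po: "prob HX K p \<in> gobs (psec HX W2)" "prob HX K p' \<in> gobs (psec HX W2)"
    using res_ob[OF HXp rK] pp by blast+
  define A where "A = ((prob X K a, prar X K \<phi>), \<alpha>2, (prob X K a', prar X K \<phi>'))"
  have "A \<in> ghom (psec HX W2) (prob HX K p) (prob HX K p')"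
    using po a2 cond unfolding A_def p p' hfp_psh_simps hfp_simps hfp_hom_iff by simp
  moreover have "mar HF W2 A = prar HY K \<Gamma>"
  proof -
    have "mar F W2 \<alpha>2 = prar Y K \<gamma>"
      unfolding \<alpha>2_def using pm_nat_ar[OF F _ ghomD[OF k1(2), THEN conjunct1]] rf_el[OF k2(1)] k1(3) KrY[OF ga] by simp
    moreover have "mar F W2 (prar X K b) = prar Y K (mar F U b)" if "b \<in> garrs (psec X U)" for b
      using pm_nat_ar[OF F _ that] rf_el[OF rK] by blast
    moreover have "mob F W2 (prob X K b) = prob Y K (mob F U b)" if "b \<in> gobs (psec X U)" for b
      using pm_nat_ob[OF F _ that] rf_el[OF rK] by blast
    ultimately show ?thesis unfolding A_def Gx hfp_psh_simps hfp_mor_simps using g o oa by simp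
  qed
  moreover have "prob HX K p = (prob X K a, prar X K \<phi>)" "prob HX K p' = (prob X K a', prar X K \<phi>')"
    unfolding p p' hfp_psh_simps by simp_all
  ultimately show "\<exists>W z k \<alpha>. rf W z k U x \<and> \<alpha> \<in> ghom (psec HX W) (prob HX k p) (prob HX k p') \<and> mar HF W \<alpha> = prar HY k \<Gamma>"
    using rK by blast
qed


lemma hfp_LESi: assumes L1: "LES X Y F" and L2: "LFull X Y F" and L3: "LF X F"
  and GY: "\<And>U. U \<in> gobs C \<Longrightarrow> groupoid (psec Y U)"
  shows "LESi HX HY HF"
  unfolding LESi_def
proof (intro allI impI, elim conjE)
  fix U x q assume U: "U \<in> gobs C" "x \<in> sob u U" and qq: "q \<in> gobs (psec HY U)"
  obtain b \<psi> where q: "q = (b,\<psi>)" "(b,\<psi>) \<in> hfp_obs (psec Y U) (aob TY U) (aar TY U)" using hfp_ob_dest[OF qq] by blast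
  have bo: "b \<in> gobs (psec Y U)" "\<psi> \<in> garrs (psec Y U)" using hfp_obs_arr[OF q(2)] by blast+
  obtain W1 z1 k1 a e where k1: "rf W1 z1 k1 U x" "a \<in> gobs (psec X W1)" "e \<in> ghom (psec Y W1) (mob F W1 a) (prob Y k1 b)"
    using L1 unfolding LES_def using U bo(1) by blast
  have W1: "W1 \<in> gobs C" "z1 \<in> sob u W1" using rf_el k1(1) by blast+
  have cY1: "category (psec Y W1)" using Xcat[OF Y W1(1)] .
  have q1: "(prob Y k1 b, prar Y k1 \<psi>) \<in> hfp_obs (psec Y W1) (aob TY W1) (aar TY W1)"
    using res_ob[OF HYp k1(1) qq] unfolding q hfp_psh_simps hfp_simps by simp
  have eiso: "is_iso (psec Y W1) e" using GY[OF W1(1)] k1(3) unfolding groupoid_def ghom_def by blast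
  define e' where "e' = ginv (psec Y W1) e"
  note ei = ginv[OF cY1 k1(3) eiso, folded e'_def]
  define \<gamma> where "\<gamma> = gcomp (psec Y W1) (aar TY W1 e') (gcomp (psec Y W1) (prar Y k1 \<psi>) e)"
  have tt: "\<And>x. x \<in> gobs (psec Y W1) \<Longrightarrow> aob TY W1 (aob TY W1 x) = x" using z2_inv_ob[OF TY W1(1)] .
  have tta: "\<And>x. x \<in> garrs (psec Y W1) \<Longrightarrow> aar TY W1 (aar TY W1 x) = x" using z2_inv_ar[OF TY W1(1)] .
  note SA = stage_alg[OF cY1 z2_fun[OF TY W1(1)] tt tta q1 k1(3) ei(1) ei(2) ei(3), folded \<gamma>_def]
  have Fa: "mob F W1 a \<in> gobs (psec Y W1)" using Fob[OF X Y F W1(1) k1(2)] .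
  have ab: "aob TX W1 a \<in> gobs (psec X W1)" using fun_ob[OF z2_fun[OF TX W1(1)] k1(2)] .
  have g: "\<gamma> \<in> ghom (psec Y W1) (mob F W1 a) (mob F W1 (aob TX W1 a))" using SA(1) eqv_ob[OF W1(1) k1(2)] by simp
  obtain W2 z2 k2 \<phi> where k2: "rf W2 z2 k2 W1 z1" "\<phi> \<in> ghom (psec X W2) (prob X k2 a) (prob X k2 (aob TX W1 a))"
     "mar F W2 \<phi> = prar Y k2 \<gamma>"
    using L2 unfolding LFull_def using W1 k1(2) ab g by blast
  have W2: "W2 \<in> gobs C" "z2 \<in> sob u W2" using rf_el k2(1) by blast+
  have cX2: "category (psec X W2)" using Xcat[OF X W2(1)] .
  have cY2: "category (psec Y W2)" using Xcat[OF Y W2(1)] .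
  define a2 where "a2 = prob X k2 a"
  have a2: "a2 \<in> gobs (psec X W2)" unfolding a2_def using res_ob[OF X k2(1) k1(2)] .
  have aa2: "aob TX W2 a2 \<in> gobs (psec X W2)" using fun_ob[OF z2_fun[OF TX W2(1)] a2] .
  have ph: "\<phi> \<in> ghom (psec X W2) a2 (aob TX W2 a2)" using k2(2) rbX_ob[OF k2(1) k1(2)] unfolding a2_def by simp
  have phb: "aar TX W2 \<phi> \<in> ghom (psec X W2) (aob TX W2 a2) a2"
    using fun_ar[OF z2_fun[OF TX W2(1)] ph] z2_inv_ob[OF TX W2(1) a2] by simp
  have gar: "\<gamma> \<in> garrs (psec Y W1)" using g by (simp add: ghom_def)
  have Fa2: "mob F W2 a2 = prob Y k2 (mob F W1 a)" unfolding a2_def using pm_nat_ob[OF F _ k1(2)] rf_el[OF k2(1)] by blast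
  have Fph: "mar F W2 (aar TX W2 \<phi>) = prar Y k2 (aar TY W1 \<gamma>)"
    using eqv_ar[OF W2(1)] ph k2(3) rbY_ar[OF k2(1) gar] by (simp add: ghom_def)
  note Fu2 = pm_fun[OF F W2(1)]
  define \<theta>1 where "\<theta>1 = gcomp (psec X W2) (aar TX W2 \<phi>) \<phi>"
  define \<theta>2 where "\<theta>2 = gcomp (psec X W2) \<phi> (aar TX W2 \<phi>)"
  have t1: "\<theta>1 \<in> ghom (psec X W2) a2 a2" unfolding \<theta>1_def using c_comp[OF cX2 ph phb] .
  have t2: "\<theta>2 \<in> ghom (psec X W2) (aob TX W2 a2) (aob TX W2 a2)" unfolding \<theta>2_def using c_comp[OF cX2 phb ph] .
  have gb: "aar TY W1 \<gamma> \<in> ghom (psec Y W1) (aob TY W1 (mob F W1 a)) (mob F W1 a)"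
    using fun_ar[OF z2_fun[OF TY W1(1)] SA(1)] z2_inv_ob[OF TY W1(1) Fa] by simp
  have "mar F W2 \<theta>1 = prar Y k2 (gcomp (psec Y W1) (aar TY W1 \<gamma>) \<gamma>)"
    unfolding \<theta>1_def using fun_comp[OF Fu2 ph phb] Fph k2(3) res_comp[OF Y k2(1) SA(1) gb] by simp
  also have "\<dots> = mar F W2 (gide (psec X W2) a2)"
    using SA(2) res_id[OF Y k2(1) Fa] fun_id[OF Fu2 a2] Fa2 by simp
  finally have "mar F W2 \<theta>1 = mar F W2 (gide (psec X W2) a2)" .
  then obtain W3 z3 k3 where k3: "rf W3 z3 k3 W2 z2" "prar X k3 \<theta>1 = prar X k3 (gide (psec X W2) a2)"
    using L3 unfolding LF_def using W2 t1 c_id[OF cX2 a2] by blast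
  have W3: "W3 \<in> gobs C" "z3 \<in> sob u W3" using rf_el k3(1) by blast+
  have "mar F W2 \<theta>2 = prar Y k2 (gcomp (psec Y W1) \<gamma> (aar TY W1 \<gamma>))"
    unfolding \<theta>2_def using fun_comp[OF Fu2 phb ph] Fph k2(3) res_comp[OF Y k2(1) gb SA(1)] by simp
  also have "\<dots> = mar F W2 (gide (psec X W2) (aob TX W2 a2))"
    using SA(3) res_id[OF Y k2(1) fun_ob[OF z2_fun[OF TY W1(1)] Fa]] fun_id[OF Fu2 aa2] Fa2
      rbY_ob[OF k2(1) Fa] eqv_ob[OF W2(1) a2] by simp
  finally have "mar F W2 \<theta>2 = mar F W2 (gide (psec X W2) (aob TX W2 a2))" .
  then have "mar F W3 (prar X k3 \<theta>2) = mar F W3 (prar X k3 (gide (psec X W2) (aob TX W2 a2)))"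
    using pm_nat_ar[OF F _ ghomD[OF t2, THEN conjunct1]] pm_nat_ar[OF F _ ghomD[OF c_id[OF cX2 aa2], THEN conjunct1]]
      rf_el[OF k3(1)] by simp
  then obtain W4 z4 k4 where k4: "rf W4 z4 k4 W3 z3"
    "prar X k4 (prar X k3 \<theta>2) = prar X k4 (prar X k3 (gide (psec X W2) (aob TX W2 a2)))"
    using L3 unfolding LF_def using W3 res_hom[OF X k3(1) t2] res_hom[OF X k3(1) c_id[OF cX2 aa2]] by blast
  have W4: "W4 \<in> gobs C" "z4 \<in> sob u W4" using rf_el k4(1) by blast+
  define S where "S = gcomp C k3 k4"
  have rS: "rf W4 z4 S W2 z2" unfolding S_def using rf_trans k3(1) k4(1) by blast
  define R where "R = gcomp C k2 S"
  have rR: "rf W4 z4 R W1 z1" unfolding R_def using rf_trans k2(1) rS by blast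
  define K where "K = gcomp C k1 R"
  have rK: "rf W4 z4 K U x" unfolding K_def using rf_trans k1(1) rR by blast
  have Sr: "prar X S t = prar X k4 (prar X k3 t)" if "t \<in> garrs (psec X W2)" for t
    unfolding S_def using prar_comp[OF X k3(1) k4(1) that] .
  define a4 where "a4 = prob X S a2"
  define \<phi>4 where "\<phi>4 = prar X S \<phi>"
  have a4: "a4 \<in> gobs (psec X W4)" unfolding a4_def using res_ob[OF X rS a2] .
  have p4h: "\<phi>4 \<in> ghom (psec X W4) a4 (aob TX W4 a4)"
    unfolding \<phi>4_def a4_def using res_hom[OF X rS ph] rbX_ob[OF rS a2] by simp
  have p4a: "gcomp (psec X W4) (aar TX W4 \<phi>4) \<phi>4 = gide (psec X W4) a4"
  proof -
    have "gcomp (psec X W4) (aar TX W4 \<phi>4) \<phi>4 = prar X S \<theta>1"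
      unfolding \<phi>4_def \<theta>1_def using res_comp[OF X rS ph phb] rbX_ar[OF rS] ph by (simp add: ghom_def)
    also have "\<dots> = prar X S (gide (psec X W2) a2)" using Sr t1 c_id[OF cX2 a2] k3(2) by (simp add: ghom_def)
    also have "\<dots> = gide (psec X W4) a4" unfolding a4_def using res_id[OF X rS a2] .
    finally show ?thesis .
  qed
  have p4b: "gcomp (psec X W4) \<phi>4 (aar TX W4 \<phi>4) = gide (psec X W4) (aob TX W4 a4)"
  proof -
    have "gcomp (psec X W4) \<phi>4 (aar TX W4 \<phi>4) = prar X S \<theta>2"
      unfolding \<phi>4_def \<theta>2_def using res_comp[OF X rS phb ph] rbX_ar[OF rS] ph by (simp add: ghom_def)
    also have "\<dots> = prar X S (gide (psec X W2) (aob TX W2 a2))" using Sr t2 c_id[OF cX2 aa2] k4(2) by (simp add: ghom_def)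
    also have "\<dots> = gide (psec X W4) (aob TX W4 a4)" unfolding a4_def using res_id[OF X rS aa2] rbX_ob[OF rS a2] by simp
    finally show ?thesis .
  qed
  have P4: "(a4,\<phi>4) \<in> hfp_obs (psec X W4) (aob TX W4) (aar TX W4)" using a4 p4h p4a p4b by (simp add: hfp_obs_iff)
  define b4 where "b4 = prob Y K b"
  define \<psi>4 where "\<psi>4 = prar Y K \<psi>"
  define e4 where "e4 = prar Y R e"
  define e4' where "e4' = prar Y R e'"
  have Kb: "prob Y K b = prob Y R (prob Y k1 b)" unfolding K_def using prob_comp[OF Y k1(1) rR bo(1)] .
  have Kp: "prar Y K \<psi> = prar Y R (prar Y k1 \<psi>)" unfolding K_def using prar_comp[OF Y k1(1) rR bo(2)] .
  have FaR: "mob F W4 a4 = prob Y R (mob F W1 a)"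
    unfolding a4_def R_def using pm_nat_ob[OF F _ a2] rf_el[OF rS] Fa2 prob_comp[OF Y k2(1) rS Fa] by simp
  have Fp4: "mar F W4 \<phi>4 = prar Y R \<gamma>"
    unfolding \<phi>4_def R_def using pm_nat_ar[OF F _ ghomD[OF ph, THEN conjunct1]] rf_el[OF rS] k2(3) prar_comp[OF Y k2(1) rS gar] by simp
  have psh: "prar Y k1 \<psi> \<in> ghom (psec Y W1) (prob Y k1 b) (aob TY W1 (prob Y k1 b))" using q1 by (simp add: hfp_obs_iff)
  have eh: "e4 \<in> ghom (psec Y W4) (mob F W4 a4) b4" unfolding e4_def b4_def using res_hom[OF Y rR k1(3)] FaR Kb by simp
  have eh': "e4' \<in> ghom (psec Y W4) b4 (mob F W4 a4)" unfolding e4'_def b4_def using res_hom[OF Y rR ei(1)] FaR Kb by simp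
  have earr: "e \<in> garrs (psec Y W1)" "e' \<in> garrs (psec Y W1)" using k1(3) ei(1) by (auto simp: ghom_def)
  have ebh: "aar TY W1 e \<in> ghom (psec Y W1) (aob TY W1 (mob F W1 a)) (aob TY W1 (prob Y k1 b))"
    using fun_ar[OF z2_fun[OF TY W1(1)] k1(3)] .
  have ebh': "aar TY W1 e' \<in> ghom (psec Y W1) (aob TY W1 (prob Y k1 b)) (aob TY W1 (mob F W1 a))"
    using fun_ar[OF z2_fun[OF TY W1(1)] ei(1)] .
  have c1: "gcomp (psec Y W4) \<psi>4 e4 = gcomp (psec Y W4) (aar TY W4 e4) (mar F W4 \<phi>4)"
  proof -
    have "gcomp (psec Y W4) \<psi>4 e4 = prar Y R (gcomp (psec Y W1) (prar Y k1 \<psi>) e)"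
      unfolding \<psi>4_def e4_def using res_comp[OF Y rR k1(3) psh] Kp by simp
    also have "\<dots> = prar Y R (gcomp (psec Y W1) (aar TY W1 e) \<gamma>)" using SA(4) by simp
    also have "\<dots> = gcomp (psec Y W4) (aar TY W4 e4) (mar F W4 \<phi>4)"
      unfolding e4_def using res_comp[OF Y rR SA(1) ebh] rbY_ar[OF rR earr(1)] Fp4 by simp
    finally show ?thesis .
  qed
  have c2: "gcomp (psec Y W4) (mar F W4 \<phi>4) e4' = gcomp (psec Y W4) (aar TY W4 e4') \<psi>4"
  proof -
    have "gcomp (psec Y W4) (mar F W4 \<phi>4) e4' = prar Y R (gcomp (psec Y W1) \<gamma> e')"
      unfolding e4'_def using res_comp[OF Y rR ei(1) SA(1)] Fp4 by simp
    also have "\<dots> = prar Y R (gcomp (psec Y W1) (aar TY W1 e') (prar Y k1 \<psi>))" using SA(5) by simp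
    also have "\<dots> = gcomp (psec Y W4) (aar TY W4 e4') \<psi>4"
      unfolding e4'_def \<psi>4_def using res_comp[OF Y rR psh ebh'] rbY_ar[OF rR earr(2)] Kp by simp
    finally show ?thesis .
  qed
  have i1: "gcomp (psec Y W4) e4' e4 = gide (psec Y W4) (mob F W4 a4)"
    unfolding e4_def e4'_def using res_comp[OF Y rR k1(3) ei(1)] ei(2) res_id[OF Y rR Fa] FaR by simp
  have i2: "gcomp (psec Y W4) e4 e4' = gide (psec Y W4) b4"
    unfolding e4_def e4'_def b4_def using res_comp[OF Y rR ei(1) k1(3)] ei(3) res_id[OF Y rR res_ob[OF Y k1(1) bo(1)]] Kb by simp
  have Q4: "(b4,\<psi>4) \<in> hfp_obs (psec Y W4) (aob TY W4) (aar TY W4)"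
    using res_ob[OF HYp rK qq] unfolding q b4_def \<psi>4_def hfp_psh_simps hfp_simps by simp
  have FP4: "(mob F W4 a4, mar F W4 \<phi>4) \<in> hfp_obs (psec Y W4) (aob TY W4) (aar TY W4)"
    using fun_ob[OF pm_fun[OF hfp_pm[OF X Y TX TY F E] W4(1)]] P4 unfolding hfp_psh_simps hfp_mor_simps hfp_simps by auto
  define EE where "EE = ((mob F W4 a4, mar F W4 \<phi>4), e4, (b4,\<psi>4))"
  define EE' where "EE' = ((b4,\<psi>4), e4', (mob F W4 a4, mar F W4 \<phi>4))"
  have EEh: "EE \<in> ghom (psec HY W4) (mob HF W4 (a4,\<phi>4)) (prob HY K q)"
    unfolding EE_def q hfp_psh_simps hfp_mor_simps hfp_hom_iff using FP4 Q4 eh c1 b4_def \<psi>4_def by simp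
  have EEh': "EE' \<in> ghom (psec HY W4) (prob HY K q) (mob HF W4 (a4,\<phi>4))"
    unfolding EE'_def q hfp_psh_simps hfp_mor_simps hfp_hom_iff using FP4 Q4 eh' c2 b4_def \<psi>4_def by simp
  have "is_iso (psec HY W4) EE"
    apply (rule isoI[OF EEh EEh'])
    unfolding EE_def EE'_def q hfp_psh_simps hfp_mor_simps hfp_simps using i1 i2 b4_def \<psi>4_def by simp_all
  moreover have "(a4,\<phi>4) \<in> gobs (psec HX W4)" using P4 unfolding hfp_psh_simps hfp_simps .
  ultimately show "\<exists>W z k p e. rf W z k U x \<and> p \<in> gobs (psec HX W) \<and> e \<in> ghom (psec HY W) (mob HF W p) (prob HY k q) \<and>
        is_iso (psec HY W) e"
    using rK EEh by blast
qed

end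
end


theorem mainTheorem8:
  fixes C :: "('o,'m) gcat" and J :: "'o \<Rightarrow> 'm set set"
    and X :: "('o,'m,'a,'b) pgrpd" and Y :: "('o,'m,'c,'d) pgrpd"
    and TX :: "('o,'a,'b) z2act" and TY :: "('o,'c,'d) z2act"
    and F :: "('o,'a,'b,'c,'d) pmor"
  assumes "site C J"
    and "enough_points C J TYPE('x) TYPE('v)"
    and "presheaf_of_groupoids C X" and "presheaf_of_groupoids C Y"
    and "z2_action C X TX" and "z2_action C Y TY"
    and "presheaf_morphism C X Y F" and "equivariant C X TX TY F"
    and "local_weq C J TYPE('x) X Y F"
  shows "local_weq C J TYPE('x) (hfp_psh X TX) (hfp_psh Y TY) (hfp_mor F)"
  unfolding local_weq_def
proof (intro allI impI)
  fix u :: "('o,'m,'x) setfunctor" assume pt: "site_point C J u"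
  have cC: "category C" using assms(1) unfolding site_def by blast
  have fl: "flat C u" using pt unfolding site_point_def by blast
  interpret flatpt C u using cC fl by unfold_locales
  have Xp: "pcat C X" and Yp: "pcat C Y" using pg_pcat assms(3,4) by blast+
  have w: "grpd_weq (stalk C u X) (stalk C u Y) (stalk_mob C u Y F) (stalk_mar C u Y F)"
    using assms(9) pt unfolding local_weq_def by blast
  note ff = weq_ff_es[OF stalk_cat[OF Xp] stalk_cat[OF Yp] w]
  have L1: "LF X F" using g2l_faith[OF Xp Yp assms(7) ff(1)] .
  have L2: "LFull X Y F" using g2l_full[OF Xp Yp assms(7) ff(2)] .
  have L3: "LES X Y F" using g2l_es[OF Xp Yp assms(7) ff(3)] .
  have GY: "\<And>U. U \<in> gobs C \<Longrightarrow> groupoid (psec Y U)" using assms(4) unfolding presheaf_of_groupoids_def by blast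
  note hyp = Xp Yp assms(7) assms(5) assms(6) assms(8)
  have H1: "LF (hfp_psh X TX) (hfp_mor F)" using hfp_LF[OF hyp L1] .
  have H2: "LFull (hfp_psh X TX) (hfp_psh Y TY) (hfp_mor F)" using hfp_LFull[OF hyp L2 L1] .
  have H3: "LESi (hfp_psh X TX) (hfp_psh Y TY) (hfp_mor F)" using hfp_LESi[OF hyp L3 L2 L1 GY] .
  have HXp: "pcat C (hfp_psh X TX)" using hfp_pcat[OF Xp assms(5)] .
  have HYp: "pcat C (hfp_psh Y TY)" using hfp_pcat[OF Yp assms(6)] .
  have HF: "presheaf_morphism C (hfp_psh X TX) (hfp_psh Y TY) (hfp_mor F)"
    using hfp_pm[OF Xp Yp assms(5,6,7,8)] .
  show "grpd_weq (stalk C u (hfp_psh X TX)) (stalk C u (hfp_psh Y TY))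
          (stalk_mob C u (hfp_psh Y TY) (hfp_mor F)) (stalk_mar C u (hfp_psh Y TY) (hfp_mor F))"
    by (rule ff_es_weq[OF stalk_cat[OF HXp] stalk_cat[OF HYp] stalk_fun[OF HXp HYp HF]
          l2g_faith[OF HXp HYp HF H1] l2g_full[OF HXp HYp HF H2] l2g_es[OF HXp HYp HF H3]])
qed

end
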